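(* Suppose $\mathcal{A}$ is linearly independent. Let $F\subseteq I$ be a homogeneous Gröbner basis of $I$ with respect to a weight vector $\omega_1$ on $\mathbb{K}[x]$, and let $G\subseteq J$ be a homogeneous Gröbner basis of $J$ with respect to a weight vector $\omega_2$ on $\mathbb{K}[y]$. Then $\mathrm{Lift}(F)\cup\mathrm{Lift}(G)\cup\mathrm{Quad}_B$ is a pseudo-Gröbner basis of $I\times_{\mathcal{A}}J$ with respect to the weight vector $\phi_B^*(\omega_1,\omega_2)$.
   Context: Setup: $\mathbb{K}$ a field, $r\ge1$, $s,t\in\mathbb{Z}_{>0}^r$; $\mathbb{K}[x]=\mathbb{K}[x^i_j: i\in[r],j\in[s_i]]$, $\mathbb{K}[y]=\mathbb{K}[y^i_k:i\in[r],k\in[t_i]]$ multigraded by $\deg x^i_j=\deg y^i_k=\mathbf{a}^i\in\mathbb{Z}^d$, $\mathcal{A}=\{\mathbf{a}^1,\dots,\mathbf{a}^r\}$, with some $\omega\in\mathbb{Q}^d$ satisfying $\omega^T\mathbf{a}^i=1$ for all $i$. $I\subseteq\mathbb{K}[x]$, $J\subseteq\mathbb{K}[y]$ are homogeneous ideals for this multigrading. $\mathbb{K}[z]=\mathbb{K}[z^i_{jk}:i\in[r],j\in[s_i],k\in[t_i]]$; the toric fiber product $I\times_{\mathcal{A}}J$ is the kernel of $\mathbb{K}[z]\to\mathbb{K}[x]/I\otimes_{\mathbb{K}}\mathbb{K}[y]/J$, $z^i_{jk}\mapsto x^i_j\otimes y^i_k$. $\phi_B:\mathbb{K}[z]\to\mathbb{K}[x,y]$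 is the monomial map $z^i_{jk}\mapsto x^i_jy^i_k$ with exponent matrix $B$, and for a weight vector $\nu$ on $\mathbb{K}[x,y]$ the pullback weight is $\phi_B^*\nu=\nu^TB$ (the weight of $z^i_{jk}$ is $\nu(x^i_j)+\nu(y^i_k)$); $(\omega_1,\omega_2)$ is the concatenated weight on $\mathbb{K}[x,y]$. $\mathrm{Quad}_B=\{z^i_{j_1k_2}z^i_{j_2k_1}-z^i_{j_1k_1}z^i_{j_2k_2}: i\in[r],1\le j_1<j_2\le s_i,1\le k_1<k_2\le t_i\}$. Weights: for a weight vector $\nu$, $\mathrm{in}_\nu(f)$ is the sum of the terms of $f$ of maximal $\nu$-weight and $\mathrm{in}_\nu(I)=\langle\mathrm{in}_\nu(f):f\in I\rangle$. A finite set $G\subseteq I$ is a pseudo-Gröbner basis of $I$ with respect to $\nu$ if $\langle\mathrm{in}_\nu(g):g\in G\rangle=\mathrm{in}_\nu(I)$, and a Gröbner basis with respect to $\nu$ if additionally this ideal is a monomial ideal. Lifts (for $\mathcal{A}$ linearly independent): a homogeneous $f\in I$ of degree $d$ can be written (after reordering the factors of each monomial) as $f=\sum_{u=1}^v c_u\,x^{i_1}_{j^u_1}x^{i_2}_{j^u_2}\cdots x^{i_d}_{j^u_d}$ with the same sequence of upper indices $i_1,\dots,i_d$ for every term. For $k=(k_1,\dots,k_d)\in T_f:=\prod_{l=1}^d[t_{i_l}]$ put $f_k=\sum_u c_u\,z^{i_1}_{j^u_1k_1}\cdots z^{i_d}_{j^u_dk_d}$, and $\mathrm{Lift}(F)=\{f_k: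 f\in F,\ k\in T_f\}$. Analogously, for homogeneous $g=\sum_u c_u\,y^{i_1}_{k^u_1}\cdots y^{i_d}_{k^u_d}\in J$ and $j\in\prod_l[s_{i_l}]$, $g_j=\sum_u c_u\,z^{i_1}_{j_1k^u_1}\cdots z^{i_d}_{j_dk^u_d}$, and $\mathrm{Lift}(G)=\{g_j\}$. *)

theory Defs
  imports Complex_Main "HOL-Library.Poly_Mapping"
begin

text \<open>A polynomial in variables of type 'v with coefficients in 'k is a finitely
supported map from monomials (finitely supported exponent vectors 'v =>0 nat)
to coefficients.\<close>

type_synonym ('v, 'k) mpoly = "('v \<Rightarrow>\<^sub>0 nat) \<Rightarrow>\<^sub>0 'k"

definition Var :: "'v \<Rightarrow> ('v, 'k::{zero,one}) mpoly" where
  "Var v = Poly_Mapping.single (Poly_Mapping.single v 1) 1"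

definition mono :: "('v \<Rightarrow>\<^sub>0 nat) \<Rightarrow> ('v, 'k::{zero,one}) mpoly" where
  "mono m = Poly_Mapping.single m 1"

definition polys_in :: "'v set \<Rightarrow> ('v, 'k::zero) mpoly set" where
  "polys_in V = {p :: ('v, 'k) mpoly. \<forall>m \<in> Poly_Mapping.keys p. Poly_Mapping.keys m \<subseteq> V}"

definition is_ideal :: "'a::comm_ring_1 set \<Rightarrow> 'a set \<Rightarrow> bool" where
  "is_ideal R I \<longleftrightarrow> I \<subseteq> R \<and> 0 \<in> I \<and> (\<forall>a\<in>I. \<forall>b\<in>I. a + b \<in> I)
      \<and> (\<forall>a\<in>R. \<forall>b\<in>I. a * b \<in> I)"

definition ideal_gen :: "'a::comm_ring_1 set \<Rightarrow> 'a set \<Rightarrow> 'a set" where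
  "ideal_gen R S = \<Inter>{J. is_ideal R J \<and> S \<subseteq> J}"

definition monomial_ideal :: "('v, 'k::comm_ring_1) mpoly set \<Rightarrow> ('v, 'k) mpoly set \<Rightarrow> bool" where
  "monomial_ideal R J \<longleftrightarrow> (\<exists>M. mono ` M \<subseteq> R \<and> J = ideal_gen R (mono ` M))"

definition pfilter :: "(('v \<Rightarrow>\<^sub>0 nat) \<Rightarrow> bool) \<Rightarrow> ('v, 'k::comm_monoid_add) mpoly \<Rightarrow> ('v, 'k) mpoly" where
  "pfilter P f = (\<Sum>m\<in>{m \<in> Poly_Mapping.keys f. P m}. Poly_Mapping.single m (Poly_Mapping.lookup f m))"

definition subst :: "('v \<Rightarrow> ('w, 'k::comm_ring_1) mpoly) \<Rightarrow> ('v, 'k) mpoly \<Rightarrow> ('w, 'k) mpoly" where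
  "subst \<sigma> p = (\<Sum>m\<in>Poly_Mapping.keys p. Poly_Mapping.single 0 (Poly_Mapping.lookup p m) * (\<Prod>v\<in>Poly_Mapping.keys m. \<sigma> v ^ Poly_Mapping.lookup m v))"

definition mweight :: "('v \<Rightarrow> real) \<Rightarrow> ('v \<Rightarrow>\<^sub>0 nat) \<Rightarrow> real" where
  "mweight \<nu> m = (\<Sum>v\<in>Poly_Mapping.keys m. real (Poly_Mapping.lookup m v) * \<nu> v)"

definition init :: "('v \<Rightarrow> real) \<Rightarrow> ('v, 'k::comm_monoid_add) mpoly \<Rightarrow> ('v, 'k) mpoly" where
  "init \<nu> f = pfilter (\<lambda>m. mweight \<nu> m = Max (mweight \<nu> ` Poly_Mapping.keys f)) f"

definition init_ideal :: "('v, 'k::comm_ring_1) mpoly set \<Rightarrow> ('v \<Rightarrow> real) \<Rightarrow> ('v, 'k) mpoly set \<Rightarrow> ('v, 'k) mpoly set" where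
  "init_ideal R \<nu> I = ideal_gen R (init \<nu> ` I)"

definition pseudo_groebner :: "('v, 'k::comm_ring_1) mpoly set \<Rightarrow> ('v \<Rightarrow> real) \<Rightarrow> ('v, 'k) mpoly set \<Rightarrow> ('v, 'k) mpoly set \<Rightarrow> bool" where
  "pseudo_groebner R \<nu> I G \<longleftrightarrow> finite G \<and> G \<subseteq> I \<and> ideal_gen R (init \<nu> ` G) = init_ideal R \<nu> I"

definition groebner :: "('v, 'k::comm_ring_1) mpoly set \<Rightarrow> ('v \<Rightarrow> real) \<Rightarrow> ('v, 'k) mpoly set \<Rightarrow> ('v, 'k) mpoly set \<Rightarrow> bool" where
  "groebner R \<nu> I G \<longleftrightarrow> pseudo_groebner R \<nu> I G \<and> monomial_ideal R (init_ideal R \<nu> I)"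

text \<open>Indices are 1-based: x-variables (i,j) with i in [r], j in [s i];
y-variables (i,k) with i in [r], k in [t i]; z-variables (i,j,k).\<close>

definition xvars :: "nat \<Rightarrow> (nat \<Rightarrow> nat) \<Rightarrow> (nat \<times> nat) set" where
  "xvars r s = {(i, j). 1 \<le> i \<and> i \<le> r \<and> 1 \<le> j \<and> j \<le> s i}"

definition zvars :: "nat \<Rightarrow> (nat \<Rightarrow> nat) \<Rightarrow> (nat \<Rightarrow> nat) \<Rightarrow> (nat \<times> nat \<times> nat) set" where
  "zvars r s t = {(i, j, k). 1 \<le> i \<and> i \<le> r \<and> 1 \<le> j \<and> j \<le> s i \<and> 1 \<le> k \<and> k \<le> t i}"

definition mdeg :: "(nat \<Rightarrow> 'd \<Rightarrow> int) \<Rightarrow> (nat \<times> nat \<Rightarrow>\<^sub>0 nat) \<Rightarrow> 'd \<Rightarrow> int" where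
  "mdeg a m = (\<lambda>c. \<Sum>v\<in>Poly_Mapping.keys m. int (Poly_Mapping.lookup m v) * a (fst v) c)"

definition homogeneous :: "(nat \<Rightarrow> 'd \<Rightarrow> int) \<Rightarrow> (nat \<times> nat, 'k::zero) mpoly \<Rightarrow> bool" where
  "homogeneous a f \<longleftrightarrow> (\<forall>m1\<in>Poly_Mapping.keys f. \<forall>m2\<in>Poly_Mapping.keys f. mdeg a m1 = mdeg a m2)"

definition homogeneous_ideal :: "(nat \<Rightarrow> 'd \<Rightarrow> int) \<Rightarrow> (nat \<times> nat, 'k::comm_monoid_add) mpoly set \<Rightarrow> bool" where
  "homogeneous_ideal a I \<longleftrightarrow> (\<forall>f\<in>I. \<forall>D. pfilter (\<lambda>m. mdeg a m = D) f \<in> I)"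

definition lin_indep :: "nat \<Rightarrow> (nat \<Rightarrow> 'd \<Rightarrow> int) \<Rightarrow> bool" where
  "lin_indep r a \<longleftrightarrow> (\<forall>cf::nat \<Rightarrow> rat. (\<forall>c. (\<Sum>i=1..r. cf i * of_int (a i c)) = 0)
      \<longrightarrow> (\<forall>i\<in>{1..r}. cf i = 0))"

text \<open>K[x]/I (x) K[y]/J is identified with K[x,y]/(I K[x,y] + J K[x,y]),
the x-variables being Inl (i,j) and the y-variables Inr (i,k); the map
z(i,j,k) |-> x(i,j) (x) y(i,k) is then phi_B followed by the quotient map.\<close>
definition phiB :: "(nat \<times> nat \<times> nat, 'k::comm_ring_1) mpoly \<Rightarrow> ((nat \<times> nat) + (nat \<times> nat), 'k) mpoly" where
  "phiB = subst (\<lambda>(i, j, k). Var (Inl (i, j)) * Var (Inr (i, k)))"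

definition toric_fiber_product ::
  "nat \<Rightarrow> (nat \<Rightarrow> nat) \<Rightarrow> (nat \<Rightarrow> nat) \<Rightarrow> (nat \<times> nat, 'k::comm_ring_1) mpoly set
     \<Rightarrow> (nat \<times> nat, 'k) mpoly set \<Rightarrow> (nat \<times> nat \<times> nat, 'k) mpoly set" where
  "toric_fiber_product r s t I J =
     {f \<in> polys_in (zvars r s t).
        phiB f \<in> ideal_gen (polys_in (Inl ` xvars r s \<union> Inr ` xvars r t))
                   (subst (\<lambda>v. Var (Inl v)) ` I \<union> subst (\<lambda>v. Var (Inr v)) ` J)}"

definition pullback_weight :: "(nat \<times> nat \<Rightarrow> real) \<Rightarrow> (nat \<times> nat \<Rightarrow> real) \<Rightarrow> nat \<times> nat \<times> nat \<Rightarrow> real" where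
  "pullback_weight w1 w2 = (\<lambda>(i, j, k). w1 (i, j) + w2 (i, k))"

definition QuadB :: "nat \<Rightarrow> (nat \<Rightarrow> nat) \<Rightarrow> (nat \<Rightarrow> nat) \<Rightarrow> (nat \<times> nat \<times> nat, 'k::comm_ring_1) mpoly set" where
  "QuadB r s t = {Var (i, j1, k2) * Var (i, j2, k1) - Var (i, j1, k1) * Var (i, j2, k2) | i j1 j2 k1 k2.
      1 \<le> i \<and> i \<le> r \<and> 1 \<le> j1 \<and> j1 < j2 \<and> j2 \<le> s i \<and> 1 \<le> k1 \<and> k1 < k2 \<and> k2 \<le> t i}"

text \<open>A representation of a homogeneous f: a sequence of upper indices is = [i_1,...,i_d]
(common to all terms) and for every monomial m of f a sequence js m = [j_1,...,j_d] of lower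
indices such that m = x^{i_1}_{j_1} ... x^{i_d}_{j_d}.\<close>
definition valid_rep :: "(nat \<times> nat, 'k::zero) mpoly \<Rightarrow> nat list \<Rightarrow> ((nat \<times> nat \<Rightarrow>\<^sub>0 nat) \<Rightarrow> nat list) \<Rightarrow> bool" where
  "valid_rep f is js \<longleftrightarrow> (\<forall>m\<in>Poly_Mapping.keys f. length (js m) = length is \<and>
      m = (\<Sum>l<length is. Poly_Mapping.single (is ! l, js m ! l) 1))"

definition index_tuples :: "(nat \<Rightarrow> nat) \<Rightarrow> nat list \<Rightarrow> nat list set" where
  "index_tuples t is = {k. length k = length is \<and> (\<forall>l<length is. 1 \<le> k ! l \<and> k ! l \<le> t (is ! l))}"

definition lift_x :: "(nat \<times> nat, 'k::comm_ring_1) mpoly \<Rightarrow> nat list \<Rightarrow> ((nat \<times> nat \<Rightarrow>\<^sub>0 nat) \<Rightarrow> nat list)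
     \<Rightarrow> nat list \<Rightarrow> (nat \<times> nat \<times> nat, 'k) mpoly" where
  "lift_x f is js k = (\<Sum>m\<in>Poly_Mapping.keys f. Poly_Mapping.single
      (\<Sum>l<length is. Poly_Mapping.single (is ! l, js m ! l, k ! l) 1) (Poly_Mapping.lookup f m))"

definition lift_y :: "(nat \<times> nat, 'k::comm_ring_1) mpoly \<Rightarrow> nat list \<Rightarrow> ((nat \<times> nat \<Rightarrow>\<^sub>0 nat) \<Rightarrow> nat list)
     \<Rightarrow> nat list \<Rightarrow> (nat \<times> nat \<times> nat, 'k) mpoly" where
  "lift_y g is ks j = (\<Sum>m\<in>Poly_Mapping.keys g. Poly_Mapping.single
      (\<Sum>l<length is. Poly_Mapping.single (is ! l, j ! l, ks m ! l) 1) (Poly_Mapping.lookup g m))"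

text \<open>Lift(F) with respect to a chosen representation rep f = (is, js) of every f in F.\<close>
definition LiftX :: "(nat \<Rightarrow> nat) \<Rightarrow> (nat \<times> nat, 'k::comm_ring_1) mpoly set
     \<Rightarrow> ((nat \<times> nat, 'k) mpoly \<Rightarrow> nat list \<times> ((nat \<times> nat \<Rightarrow>\<^sub>0 nat) \<Rightarrow> nat list))
     \<Rightarrow> (nat \<times> nat \<times> nat, 'k) mpoly set" where
  "LiftX t F rep = {lift_x f (fst (rep f)) (snd (rep f)) k | f k. f \<in> F \<and> k \<in> index_tuples t (fst (rep f))}"

definition LiftY :: "(nat \<Rightarrow> nat) \<Rightarrow> (nat \<times> nat, 'k::comm_ring_1) mpoly set
     \<Rightarrow> ((nat \<times> nat, 'k) mpoly \<Rightarrow> nat list \<times> ((nat \<times> nat \<Rightarrow>\<^sub>0 nat) \<Rightarrow> nat list))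
     \<Rightarrow> (nat \<times> nat \<times> nat, 'k) mpoly set" where
  "LiftY s G rep = {lift_y g (fst (rep g)) (snd (rep g)) j | g j. g \<in> G \<and> j \<in> index_tuples s (fst (rep g))}"

end

theory Submission
  imports Defs
begin


section \<open>Basic polynomial algebra\<close>

abbreviation (input) lookup where "lookup \<equiv> Poly_Mapping.lookup"
abbreviation (input) keys where "keys \<equiv> Poly_Mapping.keys"
abbreviation (input) single where "single \<equiv> Poly_Mapping.single"

lemma lookup_sum_single_gen:
  "lookup (\<Sum>m\<in>A. single m (c m)) x = (if finite A \<and> x \<in> A then c x else 0)"
  by (cases "finite A") (auto simp: lookup_sum lookup_single when_def)

lemma sum_single_superset:
  assumes "finite A" "keys p \<subseteq> A"
  shows "(\<Sum>m\<in>A. single m (lookup p m)) = p"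
proof (rule poly_mapping_eqI)
  fix x show "lookup (\<Sum>m\<in>A. single m (lookup p m)) x = lookup p x"
    using assms by (auto simp: lookup_sum_single_gen in_keys_iff)
qed

lemma poly_sum_single: "p = (\<Sum>m\<in>keys p. single m (lookup p m))"
  by (simp add: sum_single_superset)

definition lin :: "('a \<Rightarrow> 'b::comm_ring_1) \<Rightarrow> ('a \<Rightarrow>\<^sub>0 'b) \<Rightarrow> 'b" where
  "lin \<phi> p = (\<Sum>m\<in>keys p. lookup p m * \<phi> m)"

lemma lin_superset:
  assumes "finite A" "keys p \<subseteq> A"
  shows "lin \<phi> p = (\<Sum>m\<in>A. lookup p m * \<phi> m)"
  unfolding lin_def using assms
  by (intro sum.mono_neutral_left) (auto simp: in_keys_iff)

lemma lin_add: "lin \<phi> (p + q) = lin \<phi> p + lin \<phi> q"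
proof -
  let ?A = "keys p \<union> keys q"
  have "lin \<phi> (p + q) = (\<Sum>m\<in>?A. lookup (p+q) m * \<phi> m)"
    by (rule lin_superset) (auto dest: subsetD[OF keys_add])
  also have "\<dots> = (\<Sum>m\<in>?A. lookup p m * \<phi> m) + (\<Sum>m\<in>?A. lookup q m * \<phi> m)"
    by (simp add: lookup_add distrib_right sum.distrib)
  also have "\<dots> = lin \<phi> p + lin \<phi> q"
    using lin_superset[of "keys p \<union> keys q" p \<phi>] lin_superset[of "keys p \<union> keys q" q \<phi>] by simp
  finally show ?thesis .
qed

lemma lin_zero[simp]: "lin \<phi> 0 = 0" by (simp add: lin_def)

lemma lin_uminus: "lin \<phi> (- p) = - lin \<phi> p"
  by (simp add: lin_def sum_negf)

lemma lin_minus: "lin \<phi> (p - q) = lin \<phi> p - lin \<phi> q"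
  using lin_add[of \<phi> p "-q"] by (simp add: lin_uminus)

lemma lin_single[simp]: "lin \<phi> (single m c) = c * \<phi> m"
  by (simp add: lin_def)

lemma lin_sum: "lin \<phi> (\<Sum>i\<in>A. f i) = (\<Sum>i\<in>A. lin \<phi> (f i))"
  by (induction A rule: infinite_finite_induct) (auto simp: lin_add)

lemma lookup_scal: "lookup (single 0 c * p) m = c * lookup p m"
  by (simp add: map.rep_eq when_def flip: mult_map_scale_conv_mult)

lemma keys_scal: "keys (single 0 c * p) \<subseteq> keys p"
  by (auto simp: in_keys_iff lookup_scal)

lemma lin_scal: "lin \<phi> (single 0 c * p) = c * lin \<phi> p"
  by (simp add: lin_superset[OF _ keys_scal] lookup_scal sum_distrib_left mult.assoc)
     (simp add: lin_def sum_distrib_left)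

lemma single_mult_expand:
  "single a c * p = (\<Sum>m\<in>keys p. single (a + m) (c * lookup p m))"
proof -
  have e: "(\<Sum>m\<in>keys p. single m (lookup p m)) = p" by (simp add: sum_single_superset)
  have "single a c * p = single a c * (\<Sum>m\<in>keys p. single m (lookup p m))" by (simp add: e)
  also have "\<dots> = (\<Sum>m\<in>keys p. single (a + m) (c * lookup p m))"
    by (simp add: sum_distrib_left mult_single)
  finally show ?thesis .
qed

lemma mult_expand: "r * p = (\<Sum>a\<in>keys r. single a (lookup r a) * p)"
proof -
  have e: "(\<Sum>m\<in>keys r. single m (lookup r m)) = r" by (simp add: sum_single_superset)
  have "r * p = (\<Sum>m\<in>keys r. single m (lookup r m)) * p" by (simp add: e)
  also have "\<dots> = (\<Sum>a\<in>keys r. single a (lookup r a) * p)"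
    by (simp add: sum_distrib_right)
  finally show ?thesis .
qed

lemma lookup_single_mult:
  fixes a m :: "'m::cancel_comm_monoid_add"
  shows "lookup (single a c * p) (a + m) = c * lookup p m"
proof -
  have "lookup (single a c * p) (a + m) = (\<Sum>m'\<in>keys p. lookup (single (a + m') (c * lookup p m')) (a + m))"
    by (simp add: single_mult_expand lookup_sum)
  also have "\<dots> = (\<Sum>m'\<in>keys p. if m' = m then c * lookup p m else 0)"
    by (intro sum.cong) (auto simp: lookup_single when_def)
  also have "\<dots> = c * lookup p m"
    by (simp add: sum.delta in_keys_iff)
  finally show ?thesis .
qed

lemma keys_single_mult:
  "keys (single a c * p) \<subseteq> (\<lambda>m. a + m) ` keys p"
proof -
  have "keys (single a c * p) \<subseteq> {x + y |x y. x \<in> keys (single a c) \<and> y \<in> keys p}"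
    by (rule keys_mult)
  also have "\<dots> \<subseteq> (\<lambda>m. a + m) ` keys p" by (cases "c = 0") auto
  finally show ?thesis .
qed

lemma lookup_single_mult_notin:
  fixes a :: "'m::cancel_comm_monoid_add"
  assumes "\<And>m. x \<noteq> a + m"
  shows "lookup (single a c * p) x = 0"
proof -
  have "x \<notin> keys (single a c * p)" using keys_single_mult[of a c p] assms by auto
  thus ?thesis by (simp add: in_keys_iff)
qed

lemma keys_single_mult_eq:
  fixes a :: "'m::cancel_comm_monoid_add" and c :: "'k::field"
  assumes "c \<noteq> 0"
  shows "keys (single a c * p) = (\<lambda>m. a + m) ` keys p"
proof
  show "keys (single a c * p) \<subseteq> (\<lambda>m. a + m) ` keys p" by (rule keys_single_mult)
  show "(\<lambda>m. a + m) ` keys p \<subseteq> keys (single a c * p)"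
    using assms by (auto simp: in_keys_iff lookup_single_mult)
qed

lemma mono_mult: "(mono a :: ('v, 'k::comm_ring_1) mpoly) * mono b = mono (a + b)"
  by (simp add: mono_def mult_single)

lemma lookup_pfilter: "lookup (pfilter P f) m = (if P m then lookup f m else 0)"
  unfolding pfilter_def lookup_sum_single_gen by (auto simp: in_keys_iff)

lemma keys_pfilter: "keys (pfilter P f) = {m \<in> keys f. P m}"
  by (auto simp: in_keys_iff lookup_pfilter split: if_splits)

lemma pfilter_add: "pfilter P (f + g) = pfilter P f + pfilter P g"
  by (rule poly_mapping_eqI) (simp add: lookup_pfilter lookup_add)

lemma pfilter_uminus: "pfilter P (- f) = - pfilter P f"
  by (rule poly_mapping_eqI) (simp add: lookup_pfilter)

lemma pfilter_minus: "pfilter P (f - g) = pfilter P f - pfilter P g"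
  by (rule poly_mapping_eqI) (simp add: lookup_pfilter lookup_minus)

lemma pfilter_zero[simp]: "pfilter P 0 = 0"
  by (rule poly_mapping_eqI) (simp add: lookup_pfilter)

lemma pfilter_sum: "pfilter P (\<Sum>i\<in>A. f i) = (\<Sum>i\<in>A. pfilter P (f i))"
  by (induction A rule: infinite_finite_induct) (auto simp: pfilter_add)

lemma pfilter_all: "(\<And>m. m \<in> keys f \<Longrightarrow> P m) \<Longrightarrow> pfilter P f = f"
  by (rule poly_mapping_eqI) (auto simp: lookup_pfilter in_keys_iff)

lemma pfilter_none: "(\<And>m. m \<in> keys f \<Longrightarrow> \<not> P m) \<Longrightarrow> pfilter P f = 0"
  by (rule poly_mapping_eqI) (auto simp: lookup_pfilter in_keys_iff)

lemma pfilter_single: "pfilter P (single m c) = (if P m then single m c else 0)"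
  by (rule poly_mapping_eqI) (auto simp: lookup_pfilter lookup_single when_def)

lemma polys_in_iff: "p \<in> polys_in V \<longleftrightarrow> (\<forall>m\<in>keys p. keys m \<subseteq> V)"
  by (simp add: polys_in_def)

lemma polys_in_zero[simp]: "0 \<in> polys_in V"
  by (simp add: polys_in_def)

lemma polys_in_add: "p \<in> polys_in V \<Longrightarrow> q \<in> polys_in V \<Longrightarrow> p + q \<in> polys_in V"
proof -
  assume "p \<in> polys_in V" "q \<in> polys_in V"
  then show ?thesis unfolding polys_in_def using keys_add[of p q] by blast
qed

lemma polys_in_uminus: "p \<in> polys_in V \<Longrightarrow> - p \<in> polys_in V"
proof -
  have "keys (- p) = keys p" by (auto simp: in_keys_iff)
  then show "p \<in> polys_in V \<Longrightarrow> - p \<in> polys_in V" unfolding polys_in_def by simp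
qed

lemma polys_in_minus: "p \<in> polys_in V \<Longrightarrow> q \<in> polys_in V \<Longrightarrow> p - q \<in> polys_in V"
proof -
  assume "p \<in> polys_in V" "q \<in> polys_in V"
  moreover have "keys (p - q) \<subseteq> keys p \<union> keys q" by (auto simp: in_keys_iff lookup_minus)
  ultimately show ?thesis unfolding polys_in_def by blast
qed

lemma polys_in_mult: "p \<in> polys_in V \<Longrightarrow> q \<in> polys_in V \<Longrightarrow> p * q \<in> polys_in V"
  unfolding polys_in_def
proof safe
  fix m v assume p: "\<forall>m\<in>keys p. keys m \<subseteq> V" and q: "\<forall>m\<in>keys q. keys m \<subseteq> V"
    and m: "m \<in> keys (p * q)" and v: "v \<in> keys m"
  from m keys_mult obtain a b where "m = a + b" "a \<in> keys p" "b \<in> keys q" by blast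
  with v p q show "v \<in> V" using keys_add[of a b] by (meson UnE subsetD)
qed

lemma polys_in_single: "keys m \<subseteq> V \<Longrightarrow> single m c \<in> polys_in V"
  unfolding polys_in_def by auto

lemma polys_in_mono: "keys m \<subseteq> V \<Longrightarrow> mono m \<in> polys_in V"
  unfolding mono_def by (rule polys_in_single)

lemma polys_in_const: "single 0 c \<in> polys_in V"
  by (rule polys_in_single) simp

lemma polys_in_sum: "(\<And>i. i \<in> A \<Longrightarrow> f i \<in> polys_in V) \<Longrightarrow> (\<Sum>i\<in>A. f i) \<in> polys_in V"
  by (induction A rule: infinite_finite_induct) (auto intro: polys_in_add)

lemma polys_in_pfilter: "p \<in> polys_in V \<Longrightarrow> pfilter P p \<in> polys_in V"
  by (auto simp: polys_in_def keys_pfilter)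

lemma is_ideal_R: "is_ideal (polys_in V) (polys_in V)"
  unfolding is_ideal_def by (auto intro: polys_in_add polys_in_mult)

lemma ideal_gen_base: "S \<subseteq> ideal_gen R S"
  unfolding ideal_gen_def by auto

lemma ideal_gen_least: "is_ideal R K \<Longrightarrow> S \<subseteq> K \<Longrightarrow> ideal_gen R S \<subseteq> K"
  unfolding ideal_gen_def by auto

lemma ideal_gen_mono: "S \<subseteq> S' \<Longrightarrow> ideal_gen R S \<subseteq> ideal_gen R S'"
  unfolding ideal_gen_def by auto

lemma ideal_gen_is_ideal:
  assumes "S \<subseteq> polys_in V"
  shows "is_ideal (polys_in V) (ideal_gen (polys_in V) S)"
proof -
  let ?F = "{J. is_ideal (polys_in V) J \<and> S \<subseteq> J}"
  have R: "polys_in V \<in> ?F" using assms is_ideal_R by auto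
  have "is_ideal (polys_in V) (\<Inter> ?F)" unfolding is_ideal_def[of _ "\<Inter> ?F"]
  proof (intro conjI)
    show "\<Inter> ?F \<subseteq> polys_in V" using R by auto
    show "0 \<in> \<Inter> ?F" by (auto simp: is_ideal_def)
    show "\<forall>a\<in>\<Inter> ?F. \<forall>b\<in>\<Inter> ?F. a + b \<in> \<Inter> ?F" by (auto simp: is_ideal_def)
    show "\<forall>a\<in>polys_in V. \<forall>b\<in>\<Inter> ?F. a * b \<in> \<Inter> ?F" by (auto simp: is_ideal_def)
  qed
  then show ?thesis unfolding ideal_gen_def .
qed

context
  fixes V and K :: "('v, 'k::comm_ring_1) mpoly set"
  assumes K: "is_ideal (polys_in V) K"
begin

lemma ideal_sub: "K \<subseteq> polys_in V" using K by (simp add: is_ideal_def)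
lemma ideal_zero: "0 \<in> K" using K by (simp add: is_ideal_def)
lemma ideal_add: "a \<in> K \<Longrightarrow> b \<in> K \<Longrightarrow> a + b \<in> K" using K by (simp add: is_ideal_def)
lemma ideal_mult: "a \<in> polys_in V \<Longrightarrow> b \<in> K \<Longrightarrow> a * b \<in> K" using K by (simp add: is_ideal_def)
lemma ideal_mult_right: "a \<in> K \<Longrightarrow> b \<in> polys_in V \<Longrightarrow> a * b \<in> K"
  using ideal_mult[of b a] by (simp add: mult.commute)
lemma ideal_scal: "b \<in> K \<Longrightarrow> single 0 c * b \<in> K" by (rule ideal_mult[OF polys_in_const])
lemma ideal_uminus: "b \<in> K \<Longrightarrow> - b \<in> K"
  using ideal_scal[of b "-1"] by (simp add: single_uminus)
lemma ideal_minus: "a \<in> K \<Longrightarrow> b \<in> K \<Longrightarrow> a - b \<in> K"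
  using ideal_add[of a "-b"] ideal_uminus[of b] by simp
lemma ideal_sum: "(\<And>i. i \<in> A \<Longrightarrow> f i \<in> K) \<Longrightarrow> (\<Sum>i\<in>A. f i) \<in> K"
  by (induction A rule: infinite_finite_induct) (auto intro: ideal_add ideal_zero)
lemma ideal_mono_mult: "keys m \<subseteq> V \<Longrightarrow> b \<in> K \<Longrightarrow> single m c * b \<in> K"
  by (rule ideal_mult[OF polys_in_single])

end

lemma mweight_superset:
  assumes "finite A" "keys m \<subseteq> A"
  shows "mweight \<nu> m = (\<Sum>v\<in>A. real (lookup m v) * \<nu> v)"
  unfolding mweight_def using assms by (intro sum.mono_neutral_left) (auto simp: in_keys_iff)

lemma mweight_add: "mweight \<nu> (a + b) = mweight \<nu> a + mweight \<nu> b"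
proof -
  let ?A = "keys a \<union> keys b"
  have "mweight \<nu> (a + b) = (\<Sum>v\<in>?A. real (lookup (a+b) v) * \<nu> v)"
    by (rule mweight_superset) (auto dest: subsetD[OF keys_add])
  also have "\<dots> = (\<Sum>v\<in>?A. real (lookup a v) * \<nu> v) + (\<Sum>v\<in>?A. real (lookup b v) * \<nu> v)"
    by (simp add: lookup_add distrib_right sum.distrib)
  also have "\<dots> = mweight \<nu> a + mweight \<nu> b"
    using mweight_superset[of ?A a \<nu>] mweight_superset[of ?A b \<nu>] by simp
  finally show ?thesis .
qed

lemma mweight_zero[simp]: "mweight \<nu> 0 = 0" by (simp add: mweight_def)

lemma mweight_single[simp]: "mweight \<nu> (single v n) = real n * \<nu> v"
  by (simp add: mweight_def)

lemma mweight_sum: "mweight \<nu> (\<Sum>i\<in>A. f i) = (\<Sum>i\<in>A. mweight \<nu> (f i))"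
  by (induction A rule: infinite_finite_induct) (auto simp: mweight_add)

definition maxw :: "('v \<Rightarrow> real) \<Rightarrow> ('v, 'k::zero) mpoly \<Rightarrow> real" where
  "maxw \<nu> f = Max (mweight \<nu> ` keys f)"

lemma init_eq: "init \<nu> f = pfilter (\<lambda>m. mweight \<nu> m = maxw \<nu> f) f"
  by (simp add: init_def maxw_def)

lemma maxw_ge: "m \<in> keys f \<Longrightarrow> mweight \<nu> m \<le> maxw \<nu> f"
  unfolding maxw_def by simp

lemma maxw_attained: "f \<noteq> 0 \<Longrightarrow> \<exists>m\<in>keys f. mweight \<nu> m = maxw \<nu> f"
  unfolding maxw_def
  by (metis (no_types, lifting) Max_in finite_imageI finite_keys image_iff image_is_empty keys_eq_empty)

lemma maxw_eqI: "m \<in> keys f \<Longrightarrow> (\<And>m'. m' \<in> keys f \<Longrightarrow> mweight \<nu> m' \<le> mweight \<nu> m) \<Longrightarrow> maxw \<nu> f = mweight \<nu> m"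
  unfolding maxw_def by (intro Max_eqI) auto

lemma lookup_init: "lookup (init \<nu> f) m = (if mweight \<nu> m = maxw \<nu> f then lookup f m else 0)"
  by (simp add: init_eq lookup_pfilter)

lemma keys_init: "keys (init \<nu> f) = {m \<in> keys f. mweight \<nu> m = maxw \<nu> f}"
  by (simp add: init_eq keys_pfilter)

lemma init_zero[simp]: "init \<nu> 0 = 0"
  by (simp add: init_eq)

lemma init_nonzero: "f \<noteq> 0 \<Longrightarrow> init \<nu> f \<noteq> 0"
  using maxw_attained[of f \<nu>] keys_init[of \<nu> f] by (metis (mono_tags, lifting) empty_iff keys_eq_empty mem_Collect_eq)

lemma init_in_polys: "f \<in> polys_in V \<Longrightarrow> init \<nu> f \<in> polys_in V"
  by (simp add: init_eq polys_in_pfilter)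



section \<open>Monomial ideals\<close>

lemma keys_le_add: "keys (d :: 'v \<Rightarrow>\<^sub>0 nat) \<subseteq> keys (m0 + d)"
  by (auto simp: in_keys_iff lookup_add)

lemma keys_le_add': "keys (m0 :: 'v \<Rightarrow>\<^sub>0 nat) \<subseteq> keys (m0 + d)"
  by (auto simp: in_keys_iff lookup_add)

lemma keys_mono[simp]: "keys (mono m :: ('v, 'k::zero_neq_one) mpoly) = {m}"
  by (simp add: mono_def)

lemma lookup_mono: "lookup (mono m :: ('v, 'k::zero_neq_one) mpoly) x = (if x = m then 1 else 0)"
  by (simp add: mono_def lookup_single when_def)

lemma ideal_gen_sub_R:
  assumes "S \<subseteq> polys_in V"
  shows "ideal_gen (polys_in V) S \<subseteq> polys_in V"
  using ideal_gen_is_ideal[OF assms] by (simp add: is_ideal_def)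

lemma monideal_keys:
  fixes M :: "('v \<Rightarrow>\<^sub>0 nat) set"
  assumes MR: "(mono ` M :: ('v, 'k::comm_ring_1) mpoly set) \<subseteq> polys_in V"
    and p: "p \<in> ideal_gen (polys_in V) (mono ` M :: ('v, 'k) mpoly set)" and m: "m \<in> keys p"
  shows "\<exists>m0\<in>M. \<exists>d. m = m0 + d"
proof -
  define D where "D = {p :: ('v, 'k) mpoly. p \<in> polys_in V \<and> (\<forall>m\<in>keys p. \<exists>m0\<in>M. \<exists>d. m = m0 + d)}"
  have Di: "p \<in> D \<longleftrightarrow> p \<in> polys_in V \<and> (\<forall>m\<in>keys p. \<exists>m0\<in>M. \<exists>d. m = m0 + d)" for p
    unfolding D_def by simp
  have "is_ideal (polys_in V) D" unfolding is_ideal_def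
  proof (intro conjI)
    show "D \<subseteq> polys_in V" using Di by blast
    show "0 \<in> D" by (simp add: Di)
    show "\<forall>a\<in>D. \<forall>b\<in>D. a + b \<in> D"
    proof (intro ballI)
      fix a b :: "('v, 'k) mpoly" assume a: "a \<in> D" and b: "b \<in> D"
      have aV: "a \<in> polys_in V" and aM: "\<forall>m\<in>keys a. \<exists>m0\<in>M. \<exists>d. m = m0 + d" using a Di by auto
      have bV: "b \<in> polys_in V" and bM: "\<forall>m\<in>keys b. \<exists>m0\<in>M. \<exists>d. m = m0 + d" using b Di by auto
      have "a + b \<in> polys_in V" using aV bV by (rule polys_in_add)
      moreover have "\<forall>m\<in>keys (a + b). \<exists>m0\<in>M. \<exists>d. m = m0 + d"
      proof
        fix m assume "m \<in> keys (a + b)"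
        then have "m \<in> keys a \<or> m \<in> keys b" using keys_add[of a b] by blast
        then show "\<exists>m0\<in>M. \<exists>d. m = m0 + d" using aM bM by blast
      qed
      ultimately show "a + b \<in> D" using Di by blast
    qed
    show "\<forall>a\<in>polys_in V. \<forall>b\<in>D. a * b \<in> D"
    proof (intro ballI)
      fix a b :: "('v, 'k) mpoly" assume a: "a \<in> polys_in V" and b: "b \<in> D"
      have bV: "b \<in> polys_in V" and bM: "\<forall>m\<in>keys b. \<exists>m0\<in>M. \<exists>d. m = m0 + d" using b Di by auto
      have "\<exists>m0\<in>M. \<exists>d. m = m0 + d" if "m \<in> keys (a * b)" for m
      proof -
        from that keys_mult[of a b] obtain x y where "m = x + y" "x \<in> keys a" "y \<in> keys b" by blast
        moreover from bM \<open>y \<in> keys b\<close> obtain m0 d where "m0 \<in> M" "y = m0 + d" by blast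
        ultimately have "m = m0 + (d + x)" by (simp add: ac_simps)
        with \<open>m0 \<in> M\<close> show ?thesis by blast
      qed
      moreover have "a * b \<in> polys_in V" using a bV by (rule polys_in_mult)
      ultimately show "a * b \<in> D" using Di by blast
    qed
  qed
  moreover have "mono ` M \<subseteq> D"
  proof
    fix x assume "x \<in> (mono ` M :: ('v, 'k) mpoly set)"
    then obtain m0 where "m0 \<in> M" "x = mono m0" by auto
    moreover have "\<forall>m\<in>keys x. \<exists>m0\<in>M. \<exists>d. m = m0 + d"
    proof
      fix m assume "m \<in> keys x"
      then have "m = m0 + 0" using \<open>x = mono m0\<close> by simp
      then show "\<exists>m0\<in>M. \<exists>d. m = m0 + d" using \<open>m0 \<in> M\<close> by blast
    qed
    moreover have "x \<in> polys_in V" using MR \<open>x \<in> mono ` M\<close> by blast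
    ultimately show "x \<in> D" using Di by blast
  qed
  ultimately have "ideal_gen (polys_in V) (mono ` M) \<subseteq> D" by (rule ideal_gen_least)
  with p have "p \<in> D" by blast
  with m Di show ?thesis by blast
qed

lemma mono_in_monideal:
  fixes M :: "('v \<Rightarrow>\<^sub>0 nat) set"
  assumes MR: "(mono ` M :: ('v, 'k::comm_ring_1) mpoly set) \<subseteq> polys_in V"
    and m0: "m0 \<in> M" and mV: "keys m \<subseteq> V" and md: "m = m0 + d"
  shows "(mono m :: ('v, 'k) mpoly) \<in> ideal_gen (polys_in V) (mono ` M)"
proof -
  have I: "is_ideal (polys_in V) (ideal_gen (polys_in V) (mono ` M :: ('v, 'k) mpoly set))"
    by (rule ideal_gen_is_ideal[OF MR])
  have "keys d \<subseteq> V" using mV md keys_le_add[of d m0] by blast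
  then have "mono d \<in> (polys_in V :: ('v, 'k) mpoly set)" by (rule polys_in_mono)
  moreover have "(mono m0 :: ('v, 'k) mpoly) \<in> ideal_gen (polys_in V) (mono ` M)"
    using m0 ideal_gen_base by blast
  ultimately have "mono d * (mono m0 :: ('v, 'k) mpoly) \<in> ideal_gen (polys_in V) (mono ` M)"
    by (rule ideal_mult[OF I])
  then show ?thesis by (simp add: mono_mult md add.commute)
qed

lemma monomial_ideal_keys:
  fixes K :: "('v, 'k::comm_ring_1) mpoly set"
  assumes MI: "monomial_ideal (polys_in V) K" and p: "p \<in> K" and m: "m \<in> keys p"
  shows "mono m \<in> K"
proof -
  from MI obtain M where MK: "(mono ` M :: ('v, 'k) mpoly set) \<subseteq> polys_in V \<and> K = ideal_gen (polys_in V) (mono ` M)"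
    unfolding monomial_ideal_def by iprover
  note MR = conjunct1[OF MK] and K = conjunct2[OF MK]
  have p': "p \<in> ideal_gen (polys_in V) (mono ` M)" using p K by simp
  from monideal_keys[OF MR p' m] obtain m0 d where m0: "m0 \<in> M" and md: "m = m0 + d" by blast
  have "p \<in> polys_in V" using ideal_gen_sub_R[OF MR] p' by blast
  then have "keys m \<subseteq> V" using m by (simp add: polys_in_def)
  from mono_in_monideal[OF MR m0 this md] show ?thesis using K by simp
qed

section \<open>Initial ideals\<close>

definition wcomp :: "('v \<Rightarrow> real) \<Rightarrow> real \<Rightarrow> ('v, 'k::comm_monoid_add) mpoly \<Rightarrow> ('v, 'k) mpoly" where
  "wcomp \<nu> w p = pfilter (\<lambda>m. mweight \<nu> m = w) p"

lemma keys_wcomp: "keys (wcomp \<nu> w p) = {m \<in> keys p. mweight \<nu> m = w}"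
  by (simp add: wcomp_def keys_pfilter)

lemma lookup_wcomp: "lookup (wcomp \<nu> w p) m = (if mweight \<nu> m = w then lookup p m else 0)"
  by (simp add: wcomp_def lookup_pfilter)

lemma wcomp_add: "wcomp \<nu> w (p + q) = wcomp \<nu> w p + wcomp \<nu> w q"
  by (simp add: wcomp_def pfilter_add)

lemma wcomp_sum: "wcomp \<nu> w (\<Sum>i\<in>A. f i) = (\<Sum>i\<in>A. wcomp \<nu> w (f i))"
  by (simp add: wcomp_def pfilter_sum)

lemma wcomp_init: "wcomp \<nu> w (init \<nu> f) = (if w = maxw \<nu> f then init \<nu> f else 0)"
proof (cases "w = maxw \<nu> f")
  case True
  then show ?thesis unfolding wcomp_def by (simp, intro pfilter_all) (simp add: keys_init)
next
  case False
  then show ?thesis unfolding wcomp_def by (simp, intro pfilter_none) (auto simp add: keys_init)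
qed

lemma init_single_mult:
  fixes c :: "'k::field"
  assumes c: "c \<noteq> 0"
  shows "single a c * init \<nu> f = init \<nu> (single a c * f)"
proof (cases "f = 0")
  case True then show ?thesis by simp
next
  case False
  then obtain m0 where m0: "m0 \<in> keys f" "mweight \<nu> m0 = maxw \<nu> f" using maxw_attained by blast
  have mx: "maxw \<nu> (single a c * f) = mweight \<nu> a + maxw \<nu> f"
  proof -
    have "maxw \<nu> (single a c * f) = mweight \<nu> (a + m0)"
    proof (rule maxw_eqI)
      show "a + m0 \<in> keys (single a c * f)" using m0 c by (simp add: keys_single_mult_eq)
      fix m' assume "m' \<in> keys (single a c * f)"
      then obtain m where "m \<in> keys f" "m' = a + m" using keys_single_mult_eq[OF c] by blast
      then show "mweight \<nu> m' \<le> mweight \<nu> (a + m0)" using maxw_ge[of m f \<nu>] m0 by (simp add: mweight_add)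
    qed
    then show ?thesis using m0 by (simp add: mweight_add)
  qed
  show ?thesis
  proof (rule poly_mapping_eqI)
    fix x
    show "lookup (single a c * init \<nu> f) x = lookup (init \<nu> (single a c * f)) x"
    proof (cases "\<exists>m. x = a + m")
      case True
      then obtain m where x: "x = a + m" by blast
      show ?thesis unfolding x lookup_single_mult lookup_init mx by (simp add: mweight_add lookup_single_mult)
    next
      case False
      then show ?thesis by (simp add: lookup_init lookup_single_mult_notin)
    qed
  qed
qed

lemma wcomp_single_mult:
  "wcomp \<nu> w (single a c * p) = single a c * wcomp \<nu> (w - mweight \<nu> a) p"
proof (rule poly_mapping_eqI)
  fix x
  show "lookup (wcomp \<nu> w (single a c * p)) x = lookup (single a c * wcomp \<nu> (w - mweight \<nu> a) p) x"
  proof (cases "\<exists>m. x = a + m")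
    case True
    then obtain m where x: "x = a + m" by blast
    show ?thesis unfolding x lookup_wcomp lookup_single_mult by (auto simp: mweight_add)
  next
    case False
    then show ?thesis by (simp add: lookup_wcomp lookup_single_mult_notin)
  qed
qed

locale side =
  fixes V :: "'v set" and I :: "('v, 'k::field) mpoly set" and \<omega> :: "'v \<Rightarrow> real"
    and deg :: "('v \<Rightarrow>\<^sub>0 nat) \<Rightarrow> 'D"
  assumes I: "is_ideal (polys_in V) I"
    and monI: "monomial_ideal (polys_in V) (init_ideal (polys_in V) \<omega> I)"
    and homI: "\<And>f D. f \<in> I \<Longrightarrow> pfilter (\<lambda>m. deg m = D) f \<in> I"
    and fin_deg: "\<And>D. finite {m. keys m \<subseteq> V \<and> deg m = D}"
begin

abbreviation "inI \<equiv> init_ideal (polys_in V) \<omega> I"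
abbreviation "wt \<equiv> mweight \<omega>"

lemma I_sub: "I \<subseteq> polys_in V" using I by (simp add: is_ideal_def)

lemma inits_sub: "init \<omega> ` I \<subseteq> polys_in V"
  using I_sub init_in_polys by blast

lemma inI_ideal: "is_ideal (polys_in V) inI"
  unfolding init_ideal_def by (rule ideal_gen_is_ideal[OF inits_sub])

lemma inI_sub: "inI \<subseteq> polys_in V"
  using inI_ideal by (simp add: is_ideal_def)

lemma init_in_inI: "f \<in> I \<Longrightarrow> init \<omega> f \<in> inI"
  unfolding init_ideal_def using ideal_gen_base by blast

definition std :: "('v \<Rightarrow>\<^sub>0 nat) \<Rightarrow> bool" where
  "std m \<longleftrightarrow> (mono m :: ('v, 'k) mpoly) \<notin> inI"

lemma claimS:
  assumes p: "p \<in> I" and st: "\<And>m. m \<in> keys p \<Longrightarrow> std m"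
  shows "p = 0"
proof (rule ccontr)
  assume "p \<noteq> 0"
  then obtain m where m: "m \<in> keys p" "wt m = maxw \<omega> p" using maxw_attained by blast
  then have "m \<in> keys (init \<omega> p)" by (simp add: keys_init)
  moreover have "init \<omega> p \<in> inI" using p by (rule init_in_inI)
  ultimately have "mono m \<in> inI" using monomial_ideal_keys[OF monI] by blast
  with st[OF m(1)] show False by (simp add: std_def)
qed

lemma init_add_same:
  assumes f: "f \<in> I" and g: "g \<in> I"
    and A: "\<And>m. m \<in> keys (init \<omega> f) \<Longrightarrow> wt m = w"
    and B: "\<And>m. m \<in> keys (init \<omega> g) \<Longrightarrow> wt m = w"
  shows "init \<omega> f + init \<omega> g \<in> init \<omega> ` I"
proof -
  have fg: "f + g \<in> I" using f g ideal_add[OF I] by blast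
  have z: "0 \<in> I" by (rule ideal_zero[OF I])
  show ?thesis
  proof (cases "f = 0 \<or> g = 0 \<or> init \<omega> f + init \<omega> g = 0")
    case True
    then show ?thesis using f g z by (auto intro: image_eqI[where x = 0])
  next
    case False
    then have f0: "f \<noteq> 0" and g0: "g \<noteq> 0" and s0: "init \<omega> f + init \<omega> g \<noteq> 0" by auto
    have mf: "maxw \<omega> f = w"
      using maxw_attained[OF f0] A keys_init by (metis (mono_tags, lifting) mem_Collect_eq)
    have mg: "maxw \<omega> g = w"
      using maxw_attained[OF g0] B keys_init by (metis (mono_tags, lifting) mem_Collect_eq)
    have le: "wt m \<le> w" if "m \<in> keys (f + g)" for m
      using that keys_add[of f g] maxw_ge[of m f \<omega>] maxw_ge[of m g \<omega>] mf mg by auto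
    have lk: "lookup (init \<omega> f + init \<omega> g) m = (if wt m = w then lookup (f + g) m else 0)" for m
      by (simp add: lookup_add lookup_init mf mg)
    from s0 obtain m where m: "m \<in> keys (init \<omega> f + init \<omega> g)" by (metis keys_eq_empty ex_in_conv)
    then have mw: "wt m = w" and mk: "m \<in> keys (f + g)" using lk[of m] by (auto simp: in_keys_iff split: if_splits)
    have "maxw \<omega> (f + g) = w"
      using maxw_eqI[OF mk, of \<omega>] le mw by auto
    then have "init \<omega> (f + g) = init \<omega> f + init \<omega> g"
      by (intro poly_mapping_eqI) (simp add: lk lookup_init)
    then show ?thesis using fg by (metis image_eqI)
  qed
qed

lemma init_sum_same:
  assumes "finite A" "\<And>i. i \<in> A \<Longrightarrow> h i \<in> init \<omega> ` I"
    and "\<And>i m. i \<in> A \<Longrightarrow> m \<in> keys (h i) \<Longrightarrow> wt m = w"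
  shows "(\<Sum>i\<in>A. h i) \<in> init \<omega> ` I \<and> (\<forall>m\<in>keys (\<Sum>i\<in>A. h i). wt m = w)"
  using assms
proof (induction A rule: finite_induct)
  case empty
  then show ?case using ideal_zero[OF I] by (auto intro: image_eqI[where x = 0])
next
  case (insert x F)
  then have IH: "(\<Sum>i\<in>F. h i) \<in> init \<omega> ` I" "\<forall>m\<in>keys (\<Sum>i\<in>F. h i). wt m = w" by auto
  from IH(1) obtain g where g: "g \<in> I" "(\<Sum>i\<in>F. h i) = init \<omega> g" by blast
  from insert.prems(1) obtain f where f: "f \<in> I" "h x = init \<omega> f" by blast
  have "init \<omega> f + init \<omega> g \<in> init \<omega> ` I"
  proof (rule init_add_same[OF f(1) g(1)])
    fix m assume "m \<in> keys (init \<omega> f)"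
    then show "wt m = w" using insert.prems(2)[of x m] f(2) by simp
  next
    fix m assume "m \<in> keys (init \<omega> g)"
    then show "wt m = w" using IH(2) g(2) by simp
  qed
  moreover have "\<forall>m\<in>keys (h x + (\<Sum>i\<in>F. h i)). wt m = w"
    using keys_add[of "h x" "(\<Sum>i\<in>F. h i)"] insert.prems(2) IH(2) by blast
  ultimately show ?case using insert f g by simp
qed

definition Tset :: "('v, 'k) mpoly set" where
  "Tset = {p \<in> polys_in V. \<forall>w. wcomp \<omega> w p \<in> init \<omega> ` I}"

lemma Tset_iff: "p \<in> Tset \<longleftrightarrow> p \<in> polys_in V \<and> (\<forall>w. wcomp \<omega> w p \<in> init \<omega> ` I)"
  unfolding Tset_def by simp

lemma zero_inits: "0 \<in> init \<omega> ` I"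
proof -
  have "init \<omega> 0 \<in> init \<omega> ` I" using ideal_zero[OF I] by (rule imageI)
  then show ?thesis by simp
qed

lemma Tset_ideal: "is_ideal (polys_in V) Tset"
  unfolding is_ideal_def
proof (intro conjI)
  show "Tset \<subseteq> polys_in V" using Tset_iff by blast
  have "wcomp \<omega> w (0 :: ('v, 'k) mpoly) = 0" for w by (simp add: wcomp_def)
  then show "0 \<in> Tset" using zero_inits by (simp add: Tset_iff)
  show "\<forall>a\<in>Tset. \<forall>b\<in>Tset. a + b \<in> Tset"
  proof (intro ballI)
    fix a b assume a: "a \<in> Tset" and b: "b \<in> Tset"
    have "wcomp \<omega> w (a + b) \<in> init \<omega> ` I" for w
    proof -
      from a obtain f where f: "f \<in> I" "wcomp \<omega> w a = init \<omega> f" unfolding Tset_iff by blast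
      from b obtain g where g: "g \<in> I" "wcomp \<omega> w b = init \<omega> g" unfolding Tset_iff by blast
      have "init \<omega> f + init \<omega> g \<in> init \<omega> ` I"
      proof (rule init_add_same[OF f(1) g(1), of w])
        fix m assume "m \<in> keys (init \<omega> f)"
        then show "wt m = w" using f(2)[symmetric] by (simp add: keys_wcomp)
      next
        fix m assume "m \<in> keys (init \<omega> g)"
        then show "wt m = w" using g(2)[symmetric] by (simp add: keys_wcomp)
      qed
      then show ?thesis using f(2) g(2) by (simp add: wcomp_add)
    qed
    moreover have "a + b \<in> polys_in V" using a b by (intro polys_in_add) (simp_all add: Tset_iff)
    ultimately show "a + b \<in> Tset" by (simp add: Tset_iff)
  qed
  show "\<forall>a\<in>polys_in V. \<forall>b\<in>Tset. a * b \<in> Tset"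
  proof (intro ballI)
    fix a b :: "('v, 'k) mpoly" assume a: "a \<in> polys_in V" and b: "b \<in> Tset"
    have "wcomp \<omega> w (a * b) \<in> init \<omega> ` I" for w
    proof -
      have e: "wcomp \<omega> w (a * b) = (\<Sum>x\<in>keys a. wcomp \<omega> w (single x (lookup a x) * b))"
        using mult_expand[of a b] by (simp add: wcomp_sum)
      have "(\<Sum>x\<in>keys a. wcomp \<omega> w (single x (lookup a x) * b)) \<in> init \<omega> ` I"
      proof (rule init_sum_same[THEN conjunct1])
        fix x assume x: "x \<in> keys a"
        from b obtain f where f: "f \<in> I" "wcomp \<omega> (w - wt x) b = init \<omega> f" unfolding Tset_iff by blast
        have ax: "lookup a x \<noteq> 0" using x by (simp add: in_keys_iff)
        have "wcomp \<omega> w (single x (lookup a x) * b) = single x (lookup a x) * init \<omega> f"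
          by (simp add: wcomp_single_mult f(2))
        also have "\<dots> = init \<omega> (single x (lookup a x) * f)"
          by (rule init_single_mult[OF ax])
        finally have eq: "wcomp \<omega> w (single x (lookup a x) * b) = init \<omega> (single x (lookup a x) * f)" .
        have "keys x \<subseteq> V" using a x by (simp add: polys_in_def)
        then have "single x (lookup a x) * f \<in> I"
          using f(1) by (rule ideal_mono_mult[OF I])
        then show "wcomp \<omega> w (single x (lookup a x) * b) \<in> init \<omega> ` I" unfolding eq by (rule imageI)
      next
        fix x m assume "m \<in> keys (wcomp \<omega> w (single x (lookup a x) * b))"
        then show "wt m = w" by (simp add: keys_wcomp)
      qed simp
      then show ?thesis using e by simp
    qed
    moreover have "a * b \<in> polys_in V" using a b by (intro polys_in_mult) (simp_all add: Tset_iff)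
    ultimately show "a * b \<in> Tset" by (simp add: Tset_iff)
  qed
qed

lemma inits_in_Tset: "init \<omega> ` I \<subseteq> Tset"
proof
  fix p assume "p \<in> init \<omega> ` I"
  then obtain f where f: "f \<in> I" "p = init \<omega> f" by blast
  have "wcomp \<omega> w p \<in> init \<omega> ` I" for w
    using f zero_inits by (simp add: wcomp_init)
  moreover have "p \<in> polys_in V" using f inits_sub by blast
  ultimately show "p \<in> Tset" by (simp add: Tset_def)
qed

lemma inI_sub_Tset: "inI \<subseteq> Tset"
  unfolding init_ideal_def by (rule ideal_gen_least[OF Tset_ideal inits_in_Tset])

lemma mono_inI_init:
  assumes "mono m \<in> inI"
  shows "\<exists>f\<in>I. init \<omega> f = mono m"
proof -
  have "mono m \<in> Tset" using assms inI_sub_Tset by blast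
  then have "wcomp \<omega> (wt m) (mono m) \<in> init \<omega> ` I" by (simp add: Tset_iff)
  moreover have "wcomp \<omega> (wt m) (mono m :: ('v, 'k) mpoly) = mono m"
    unfolding wcomp_def by (rule pfilter_all) (simp add: keys_mono)
  ultimately show ?thesis by auto
qed

end



lemma lin_shift: "lin \<phi> (single c d * f) = d * lin (\<lambda>m. \<phi> (c + m)) f"
proof -
  have "lin \<phi> (single c d * f) = lin \<phi> (\<Sum>m\<in>keys f. single (c + m) (d * lookup f m))"
    by (simp add: single_mult_expand)
  also have "\<dots> = (\<Sum>m\<in>keys f. d * lookup f m * \<phi> (c + m))"
    by (simp add: lin_sum)
  also have "\<dots> = d * lin (\<lambda>m. \<phi> (c + m)) f"
    by (simp add: lin_def sum_distrib_left mult.assoc)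
  finally show ?thesis .
qed

lemma scal_mono: "single 0 c * (mono m :: ('v, 'k::comm_ring_1) mpoly) = single m c"
  by (simp add: mono_def mult_single)

lemma poly_sum_scal_mono: "(\<Sum>m\<in>keys p. single 0 (lookup p m) * (mono m :: ('v, 'k::comm_ring_1) mpoly)) = p"
  by (simp add: scal_mono flip: poly_sum_single)

context side
begin

definition nf_rel :: "('v \<Rightarrow>\<^sub>0 nat) \<Rightarrow> ('v, 'k) mpoly \<Rightarrow> bool" where
  "nf_rel m q \<longleftrightarrow> (\<forall>m'\<in>keys q. std m') \<and> mono m - q \<in> I \<and> (std m \<longrightarrow> q = mono m)
      \<and> (\<not> std m \<longrightarrow> (\<forall>m'\<in>keys q. wt m' < wt m))"

lemma nf_rel_wt: "nf_rel m q \<Longrightarrow> m' \<in> keys q \<Longrightarrow> wt m' \<le> wt m"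
  unfolding nf_rel_def by (cases "std m") (auto simp: less_imp_le)

lemma nf_rel_std: "std m \<Longrightarrow> nf_rel m (mono m)"
  unfolding nf_rel_def using ideal_zero[OF I] by simp

lemma nf_ex_aux: "keys m \<subseteq> V \<Longrightarrow> \<exists>q. nf_rel m q"
proof (induction "card {m' \<in> {x. keys x \<subseteq> V \<and> deg x = deg (m :: 'v \<Rightarrow>\<^sub>0 nat)}. wt m' < wt m}" arbitrary: m rule: less_induct)
  case (less m)
  show ?case
  proof (cases "std m")
    case True then show ?thesis using nf_rel_std by blast
  next
    case nstd: False
    then have "mono m \<in> inI" by (simp add: std_def)
    then obtain f where f: "f \<in> I" "init \<omega> f = mono m" using mono_inI_init by blast
    define D where "D = deg m"
    define fD where "fD = pfilter (\<lambda>m'. deg m' = D) f"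
    have fD: "fD \<in> I" unfolding fD_def using f(1) by (rule homI)
    have lkf: "lookup (init \<omega> f) x = (if x = m then 1 else 0)" for x using f(2) by (simp add: lookup_mono)
    have wm: "wt m = maxw \<omega> f" and fm: "lookup f m = 1"
      using lkf[of m] by (auto simp: lookup_init split: if_splits)
    have small: "wt m' < wt m" if "m' \<in> keys f" "m' \<noteq> m" for m'
    proof -
      have "wt m' \<le> wt m" using maxw_ge[OF that(1)] wm by simp
      moreover have "wt m' \<noteq> wt m"
      proof
        assume "wt m' = wt m"
        then have "lookup (init \<omega> f) m' = lookup f m'" using wm by (simp add: lookup_init)
        then show False using lkf[of m'] that by (simp add: in_keys_iff)
      qed
      ultimately show ?thesis by simp
    qed
    define q0 where "q0 = mono m - fD"
    have q0keys: "m' \<in> keys fD \<and> m' \<noteq> m" if "m' \<in> keys q0" for m'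
    proof -
      have "lookup q0 m = 0" unfolding q0_def fD_def
        by (simp add: lookup_minus lookup_mono lookup_pfilter D_def fm)
      then have "m' \<noteq> m" using that by (auto simp: in_keys_iff)
      moreover then have "m' \<in> keys fD" using that unfolding q0_def
        by (auto simp: in_keys_iff lookup_minus lookup_mono)
      ultimately show ?thesis by simp
    qed
    have q0prop: "wt m' < wt m \<and> keys m' \<subseteq> V \<and> deg m' = D" if "m' \<in> keys q0" for m'
    proof -
      from q0keys[OF that] have k: "m' \<in> keys fD" "m' \<noteq> m" by auto
      then have "m' \<in> keys f" "deg m' = D" unfolding fD_def by (auto simp: keys_pfilter)
      moreover have "keys m' \<subseteq> V" using fD I_sub k(1) by (auto simp: polys_in_def)
      ultimately show ?thesis using small k(2) by simp
    qed
    have "\<forall>m'\<in>keys q0. \<exists>q. nf_rel m' q"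
    proof
      fix m' assume m': "m' \<in> keys q0"
      note P = q0prop[OF m']
      let ?S = "{m. keys m \<subseteq> V \<and> deg m = deg m}"
      have fin: "finite {x \<in> {ma. keys ma \<subseteq> V \<and> deg ma = deg m}. wt x < wt m}"
        using fin_deg[of "deg m"] by (rule rev_finite_subset) auto
      have "{x \<in> {ma. keys ma \<subseteq> V \<and> deg ma = deg m'}. wt x < wt m'}
          \<subset> {x \<in> {ma. keys ma \<subseteq> V \<and> deg ma = deg m}. wt x < wt m}"
        using P D_def by auto
      then have "card {x \<in> {ma. keys ma \<subseteq> V \<and> deg ma = deg m'}. wt x < wt m'}
          < card {x \<in> {ma. keys ma \<subseteq> V \<and> deg ma = deg m}. wt x < wt m}"
        by (rule psubset_card_mono[OF fin])
      then show "\<exists>q. nf_rel m' q" using less.hyps P by blast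
    qed
    then obtain Q where Q: "\<forall>m'\<in>keys q0. nf_rel m' (Q m')" by (metis bchoice)
    define q where "q = (\<Sum>m'\<in>keys q0. single 0 (lookup q0 m') * Q m')"
    have qkeys: "\<exists>m'\<in>keys q0. x \<in> keys (Q m')" if "x \<in> keys q" for x
    proof -
      have "x \<in> (\<Union>m'\<in>keys q0. keys (single 0 (lookup q0 m') * Q m'))"
        using that keys_sum[of "\<lambda>m'. single 0 (lookup q0 m') * Q m'" "keys q0"] unfolding q_def by blast
      then obtain m' where "m' \<in> keys q0" "x \<in> keys (single 0 (lookup q0 m') * Q m')" by blast
      then show ?thesis using keys_scal[of "lookup q0 m'" "Q m'"] by blast
    qed
    have "nf_rel m q" unfolding nf_rel_def
    proof (intro conjI impI)
      show "\<forall>m'\<in>keys q. std m'"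
        using qkeys Q by (force simp: nf_rel_def)
      show "\<forall>m'\<in>keys q. wt m' < wt m"
      proof
        fix x assume "x \<in> keys q"
        then obtain m' where m': "m' \<in> keys q0" "x \<in> keys (Q m')" using qkeys by blast
        then have "wt x \<le> wt m'" using Q nf_rel_wt by blast
        also have "\<dots> < wt m" using q0prop[OF m'(1)] by simp
        finally show "wt x < wt m" .
      qed
      show "std m \<Longrightarrow> q = mono m" using nstd by simp
      have "q0 - q = (\<Sum>m'\<in>keys q0. single 0 (lookup q0 m') * (mono m' - Q m'))"
      proof -
        have "q0 - q = (\<Sum>m'\<in>keys q0. single 0 (lookup q0 m') * mono m') - q"
          by (simp add: poly_sum_scal_mono)
        also have "\<dots> = (\<Sum>m'\<in>keys q0. single 0 (lookup q0 m') * (mono m' - Q m'))"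
          by (simp add: q_def right_diff_distrib sum_subtractf)
        finally show ?thesis .
      qed
      also have "\<dots> \<in> I"
      proof (rule ideal_sum[OF I])
        fix m' assume "m' \<in> keys q0"
        then have "mono m' - Q m' \<in> I" using Q by (simp add: nf_rel_def)
        then show "single 0 (lookup q0 m') * (mono m' - Q m') \<in> I" by (rule ideal_scal[OF I])
      qed
      finally have "q0 - q \<in> I" .
      then have "fD + (q0 - q) \<in> I" using fD by (intro ideal_add[OF I])
      moreover have "fD + (q0 - q) = mono m - q" by (simp add: q0_def)
      ultimately show "mono m - q \<in> I" by simp
    qed
    then show ?thesis by blast
  qed
qed

lemma nf_ex: "\<exists>q. nf_rel m q"
proof (cases "std m")
  case True then show ?thesis using nf_rel_std by blast
next
  case False
  then have "mono m \<in> inI" by (simp add: std_def)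
  then have "(mono m :: ('v, 'k) mpoly) \<in> polys_in V" using inI_sub by blast
  then have "keys m \<subseteq> V" by (simp add: polys_in_def)
  then show ?thesis by (rule nf_ex_aux)
qed

definition NF :: "('v \<Rightarrow>\<^sub>0 nat) \<Rightarrow> ('v, 'k) mpoly" where
  "NF m = (SOME q. nf_rel m q)"

lemma NF: "nf_rel m (NF m)"
  unfolding NF_def using nf_ex by (rule someI_ex)

lemma NF_std: "std u \<Longrightarrow> NF u = mono u"
  using NF[of u] by (simp add: nf_rel_def)

lemma NF_key:
  assumes u: "u \<in> keys (NF m)"
  shows "std u \<and> wt u \<le> wt m \<and> (wt u = wt m \<longrightarrow> u = m)"
proof -
  have r: "nf_rel m (NF m)" by (rule NF)
  have su: "std u" using r u unfolding nf_rel_def by blast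
  show ?thesis
  proof (cases "std m")
    case True
    then have "NF m = mono m" using r unfolding nf_rel_def by blast
    then have "u = m" using u by simp
    then show ?thesis using su by simp
  next
    case False
    then have "wt u < wt m" using r u unfolding nf_rel_def by blast
    then show ?thesis using su by simp
  qed
qed

lemma NF_ann: "f \<in> I \<Longrightarrow> lin (\<lambda>m. lookup (NF m) u) f = 0"
proof -
  assume f: "f \<in> I"
  define q where "q = (\<Sum>m\<in>keys f. single 0 (lookup f m) * NF m)"
  have "f - q = (\<Sum>m\<in>keys f. single 0 (lookup f m) * (mono m - NF m))"
  proof -
    have "f - q = (\<Sum>m\<in>keys f. single 0 (lookup f m) * mono m) - q"
      by (simp add: poly_sum_scal_mono)
    also have "\<dots> = (\<Sum>m\<in>keys f. single 0 (lookup f m) * (mono m - NF m))"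
      by (simp add: q_def right_diff_distrib sum_subtractf)
    finally show ?thesis .
  qed
  also have "\<dots> \<in> I"
  proof (rule ideal_sum[OF I])
    fix m assume "m \<in> keys f"
    have "mono m - NF m \<in> I" using NF[of m] by (simp add: nf_rel_def)
    then show "single 0 (lookup f m) * (mono m - NF m) \<in> I" by (rule ideal_scal[OF I])
  qed
  finally have "f - q \<in> I" .
  have qI: "q \<in> I" using ideal_minus[OF I f \<open>f - q \<in> I\<close>] by simp
  have "q = 0"
  proof (rule claimS[OF qI])
    fix x assume "x \<in> keys q"
    have "x \<in> (\<Union>m\<in>keys f. keys (single 0 (lookup f m) * NF m))"
      using \<open>x \<in> keys q\<close> keys_sum[of "\<lambda>m. single 0 (lookup f m) * NF m" "keys f"] unfolding q_def by blast
    then obtain m where "x \<in> keys (single 0 (lookup f m) * NF m)" by blast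
    then have "x \<in> keys (NF m)" using keys_scal[of "lookup f m" "NF m"] by blast
    then show "std x" using NF_key by blast
  qed
  then have "lookup q u = 0" by simp
  moreover have "lookup q u = lin (\<lambda>m. lookup (NF m) u) f"
    by (simp add: q_def lookup_sum lookup_scal lin_def)
  ultimately show ?thesis by simp
qed

lemma ann_shift:
  assumes "keys c \<subseteq> V" and "\<forall>f\<in>I. lin \<phi> f = 0"
  shows "\<forall>f\<in>I. lin (\<lambda>m. \<phi> (c + m)) f = 0"
proof
  fix f assume "f \<in> I"
  then have "single c 1 * f \<in> I" using assms(1) by (intro ideal_mono_mult[OF I])
  then have "lin \<phi> (single c 1 * f) = 0" using assms(2) by blast
  then show "lin (\<lambda>m. \<phi> (c + m)) f = 0" by (simp add: lin_shift)
qed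

end



section \<open>Pushforward of monomials\<close>

definition pm_image :: "('a \<Rightarrow> 'b) \<Rightarrow> ('a \<Rightarrow>\<^sub>0 nat) \<Rightarrow> ('b \<Rightarrow>\<^sub>0 nat)" where
  "pm_image f u = (\<Sum>v\<in>keys u. single (f v) (lookup u v))"

lemma pm_image_superset:
  assumes "finite A" "keys u \<subseteq> A"
  shows "pm_image f u = (\<Sum>v\<in>A. single (f v) (lookup u v))"
  unfolding pm_image_def using assms by (intro sum.mono_neutral_left) (auto simp: in_keys_iff)

lemma pm_image_add: "pm_image f (a + b) = pm_image f a + pm_image f b"
proof -
  let ?A = "keys a \<union> keys b"
  have "pm_image f (a + b) = (\<Sum>v\<in>?A. single (f v) (lookup (a + b) v))"
    by (rule pm_image_superset) (auto dest: subsetD[OF keys_add])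
  also have "\<dots> = (\<Sum>v\<in>?A. single (f v) (lookup a v)) + (\<Sum>v\<in>?A. single (f v) (lookup b v))"
    by (simp add: lookup_add single_add sum.distrib)
  also have "\<dots> = pm_image f a + pm_image f b"
    using pm_image_superset[of ?A a f] pm_image_superset[of ?A b f] by simp
  finally show ?thesis .
qed

lemma pm_image_zero[simp]: "pm_image f 0 = 0" by (simp add: pm_image_def)

lemma pm_image_single[simp]: "pm_image f (single v n) = single (f v) n"
  by (simp add: pm_image_def)

lemma pm_image_sum: "pm_image f (\<Sum>i\<in>A. g i) = (\<Sum>i\<in>A. pm_image f (g i))"
  by (induction A rule: infinite_finite_induct) (auto simp: pm_image_add)

lemma pm_image_comp: "pm_image g (pm_image f u) = pm_image (g \<circ> f) u"
  by (simp add: pm_image_def[of f] pm_image_sum) (simp add: pm_image_def)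

lemma lookup_pm_image: "lookup (pm_image f u) w = (\<Sum>v\<in>{v \<in> keys u. f v = w}. lookup u v)"
proof -
  have "lookup (pm_image f u) w = (\<Sum>v\<in>keys u. if f v = w then lookup u v else 0)"
    by (simp add: pm_image_def lookup_sum lookup_single when_def eq_commute)
  also have "\<dots> = (\<Sum>v\<in>{v \<in> keys u. f v = w}. lookup u v)"
    by (simp add: sum.inter_filter)
  finally show ?thesis .
qed

lemma lookup_pm_image_inj: "inj f \<Longrightarrow> lookup (pm_image f u) (f v) = lookup u v"
proof -
  assume "inj f"
  then have "{x \<in> keys u. f x = f v} = (if v \<in> keys u then {v} else {})" by (auto dest: injD)
  then show ?thesis by (auto simp: lookup_pm_image in_keys_iff)
qed

lemma lookup_pm_image_notin: "w \<notin> range f \<Longrightarrow> lookup (pm_image f u) w = 0"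
proof -
  assume "w \<notin> range f"
  then have e: "{v \<in> keys u. f v = w} = {}" by auto
  show ?thesis using lookup_pm_image[of f u w] unfolding e by simp
qed

lemma keys_pm_image: "keys (pm_image f u) \<subseteq> f ` keys u"
proof
  fix w assume "w \<in> keys (pm_image f u)"
  then have "(\<Sum>v\<in>{v \<in> keys u. f v = w}. lookup u v) \<noteq> 0" by (simp add: lookup_pm_image in_keys_iff)
  then obtain v where "v \<in> {v \<in> keys u. f v = w}" by (meson sum.not_neutral_contains_not_neutral)
  then have "v \<in> keys u" "f v = w" by auto
  then show "w \<in> f ` keys u" by blast
qed

lemma mweight_pm_image: "mweight \<nu> (pm_image f u) = mweight (\<nu> \<circ> f) u"
  by (simp add: pm_image_def mweight_sum mweight_def[of "\<nu> \<circ> f"])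

section \<open>Substitution by monomials\<close>

definition npow :: "nat \<Rightarrow> ('a \<Rightarrow>\<^sub>0 nat) \<Rightarrow> ('a \<Rightarrow>\<^sub>0 nat)" where
  "npow n a = (\<Sum>i<n. a)"

lemma mono_power: "(mono a :: ('v, 'k::comm_ring_1) mpoly) ^ n = mono (npow n a)"
proof (induction n)
  case 0
  then show ?case by (simp add: npow_def mono_def)
next
  case (Suc n)
  then show ?case by (simp add: mono_mult npow_def add.commute)
qed

lemma mono_prod: "(\<Prod>v\<in>A. (mono (g v) :: ('v, 'k::comm_ring_1) mpoly)) = mono (\<Sum>v\<in>A. g v)"
  by (induction A rule: infinite_finite_induct) (simp_all add: Defs.mono_def mult_single)

lemma subst_monos:
  fixes \<sigma> :: "'v \<Rightarrow> ('w, 'k::comm_ring_1) mpoly"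
  assumes "\<And>v. \<sigma> v = mono (\<tau> v)"
  shows "subst \<sigma> p = (\<Sum>m\<in>keys p. single (\<Sum>v\<in>keys m. npow (lookup m v) (\<tau> v)) (lookup p m))"
  unfolding subst_def assms mono_power mono_prod by (simp add: scal_mono)

lemma npow_single: "npow n (single a 1) = single a n"
  by (induction n) (simp_all add: npow_def flip: single_add)

lemma npow_single': "npow n (single a (Suc 0)) = single a n"
  using npow_single[of n a] by simp

lemma npow_single_sum: "npow n (single a 1 + single b 1) = single a n + single b n"
  using npow_single[of n a] npow_single[of n b] by (simp add: npow_def sum.distrib)

lemma npow_single_sum': "npow n (single a (Suc 0) + single b (Suc 0)) = single a n + single b n"
  using npow_single_sum[of n a b] by simp

lemma Var_mono: "Var v = mono (single v 1)"
  by (simp add: Var_def mono_def)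

lemma subst_one:
  fixes p :: "('v, 'k::comm_ring_1) mpoly"
  shows "subst (\<lambda>v. Var (g v)) p = (\<Sum>m\<in>keys p. single (pm_image g m) (lookup p m))"
  by (simp add: subst_monos[where \<tau> = "\<lambda>v. single (g v) 1"] Var_mono npow_single npow_single' pm_image_def)

lemma subst_two:
  fixes p :: "('v, 'k::comm_ring_1) mpoly"
  shows "subst (\<lambda>v. Var (g1 v) * Var (g2 v)) p
     = (\<Sum>m\<in>keys p. single (pm_image g1 m + pm_image g2 m) (lookup p m))"
  by (simp add: subst_monos[where \<tau> = "\<lambda>v. single (g1 v) 1 + single (g2 v) 1"] Var_mono mono_mult
      npow_single_sum npow_single_sum' pm_image_def sum.distrib)



definition xpart :: "('a + 'b \<Rightarrow>\<^sub>0 nat) \<Rightarrow> ('a \<Rightarrow>\<^sub>0 nat)" where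
  "xpart m = Poly_Mapping.map_key Inl m"
definition ypart :: "('a + 'b \<Rightarrow>\<^sub>0 nat) \<Rightarrow> ('b \<Rightarrow>\<^sub>0 nat)" where
  "ypart m = Poly_Mapping.map_key Inr m"

lemma lookup_xpart: "lookup (xpart m) v = lookup m (Inl v)"
  unfolding xpart_def by (simp add: map_key.rep_eq)
lemma lookup_ypart: "lookup (ypart m) v = lookup m (Inr v)"
  unfolding ypart_def by (simp add: map_key.rep_eq)

lemma lookup_Inr_Inl[simp]: "lookup (pm_image Inr u) (Inl k) = 0"
  by (rule lookup_pm_image_notin) auto
lemma lookup_Inl_Inr[simp]: "lookup (pm_image Inl u) (Inr k) = 0"
  by (rule lookup_pm_image_notin) auto
lemma lookup_Inl_Inl[simp]: "lookup (pm_image Inl u) (Inl k) = lookup u k"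
  by (rule lookup_pm_image_inj) simp
lemma lookup_Inr_Inr[simp]: "lookup (pm_image Inr u) (Inr k) = lookup u k"
  by (rule lookup_pm_image_inj) simp

lemma xpart_add: "xpart (a + b) = xpart a + xpart b"
  by (rule poly_mapping_eqI) (simp add: lookup_xpart lookup_add)
lemma ypart_add: "ypart (a + b) = ypart a + ypart b"
  by (rule poly_mapping_eqI) (simp add: lookup_ypart lookup_add)

lemma xpart_Inl[simp]: "xpart (pm_image Inl u) = u"
  by (rule poly_mapping_eqI) (simp add: lookup_xpart lookup_pm_image_inj)
lemma ypart_Inr[simp]: "ypart (pm_image Inr u) = u"
  by (rule poly_mapping_eqI) (simp add: lookup_ypart lookup_pm_image_inj)
lemma xpart_Inr[simp]: "xpart (pm_image Inr u) = 0"
  by (rule poly_mapping_eqI) (simp add: lookup_xpart lookup_pm_image_notin)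
lemma ypart_Inl[simp]: "ypart (pm_image Inl u) = 0"
  by (rule poly_mapping_eqI) (simp add: lookup_ypart lookup_pm_image_notin)
lemma xpart_zero[simp]: "xpart 0 = 0"
  by (rule poly_mapping_eqI) (simp add: lookup_xpart)
lemma ypart_zero[simp]: "ypart 0 = 0"
  by (rule poly_mapping_eqI) (simp add: lookup_ypart)

lemma split_mon: "m = pm_image Inl (xpart m) + pm_image Inr (ypart m)"
proof (rule poly_mapping_eqI)
  fix x show "lookup m x = lookup (pm_image Inl (xpart m) + pm_image Inr (ypart m)) x"
    by (cases x) (simp_all add: lookup_add lookup_pm_image_inj lookup_pm_image_notin lookup_xpart lookup_ypart)
qed

lemma mon_eqI: "xpart m = xpart m' \<Longrightarrow> ypart m = ypart m' \<Longrightarrow> m = m'"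
  by (metis split_mon)

lemma keys_xpart: "keys (xpart m) = Inl -` keys m"
  by (auto simp: in_keys_iff lookup_xpart)
lemma keys_ypart: "keys (ypart m) = Inr -` keys m"
  by (auto simp: in_keys_iff lookup_ypart)

lemma mweight_split:
  "mweight (case_sum \<omega>1 \<omega>2) m = mweight \<omega>1 (xpart m) + mweight \<omega>2 (ypart m)"
proof -
  have "mweight (case_sum \<omega>1 \<omega>2) m = mweight (case_sum \<omega>1 \<omega>2) (pm_image Inl (xpart m) + pm_image Inr (ypart m))"
    by (subst split_mon) (rule refl)
  also have "\<dots> = mweight \<omega>1 (xpart m) + mweight \<omega>2 (ypart m)"
    by (simp add: mweight_add mweight_pm_image comp_def)
  finally show ?thesis .
qed

locale two = X: side V1 I \<omega>1 deg1 + Y: side V2 J \<omega>2 deg2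
  for V1 :: "'a set" and I :: "('a, 'k::field) mpoly set" and \<omega>1 deg1
    and V2 :: "'b set" and J :: "('b, 'k) mpoly set" and \<omega>2 deg2
begin

abbreviation "Rxy \<equiv> (polys_in (Inl ` V1 \<union> Inr ` V2) :: ('a + 'b, 'k) mpoly set)"
abbreviation "gens \<equiv> subst (\<lambda>v. Var (Inl v)) ` I \<union> subst (\<lambda>v. Var (Inr v)) ` J"

definition Lam :: "(('a \<Rightarrow>\<^sub>0 nat) \<Rightarrow> 'k) \<Rightarrow> (('b \<Rightarrow>\<^sub>0 nat) \<Rightarrow> 'k) \<Rightarrow> ('a + 'b, 'k) mpoly \<Rightarrow> 'k" where
  "Lam la lb p = lin (\<lambda>m. la (xpart m) * lb (ypart m)) p"

definition T2 :: "('a + 'b, 'k) mpoly set" where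
  "T2 = {p \<in> Rxy. \<forall>la lb. (\<forall>f\<in>I. lin la f = 0) \<longrightarrow> (\<forall>g\<in>J. lin lb g = 0) \<longrightarrow> Lam la lb p = 0}"

lemma T2_iff: "p \<in> T2 \<longleftrightarrow> p \<in> Rxy \<and> (\<forall>la lb. (\<forall>f\<in>I. lin la f = 0) \<longrightarrow> (\<forall>g\<in>J. lin lb g = 0) \<longrightarrow> Lam la lb p = 0)"
  unfolding T2_def by simp

lemma Lam_add: "Lam la lb (p + q) = Lam la lb p + Lam la lb q"
  by (simp add: Lam_def lin_add)

lemma Lam_single_mult:
  "Lam la lb (single x c * b) = c * Lam (\<lambda>u. la (xpart x + u)) (\<lambda>w. lb (ypart x + w)) b"
  by (simp add: Lam_def lin_shift xpart_add ypart_add)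

lemma T2_ideal: "is_ideal Rxy T2"
  unfolding is_ideal_def
proof (intro conjI)
  show "T2 \<subseteq> Rxy" using T2_iff by blast
  show "0 \<in> T2" by (simp add: T2_iff Lam_def)
  show "\<forall>a\<in>T2. \<forall>b\<in>T2. a + b \<in> T2"
  proof (intro ballI)
    fix a b assume a: "a \<in> T2" and b: "b \<in> T2"
    have "a + b \<in> Rxy" using a b by (intro polys_in_add) (simp_all add: T2_iff)
    then show "a + b \<in> T2" using a b by (simp add: T2_iff Lam_add)
  qed
  show "\<forall>a\<in>Rxy. \<forall>b\<in>T2. a * b \<in> T2"
  proof (intro ballI)
    fix a b assume a: "a \<in> Rxy" and b: "b \<in> T2"
    have ab: "a * b \<in> Rxy" using a b by (intro polys_in_mult) (simp_all add: T2_iff)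
    have "Lam la lb (a * b) = 0" if l1: "\<forall>f\<in>I. lin la f = 0" and l2: "\<forall>g\<in>J. lin lb g = 0" for la lb
    proof -
      have "Lam la lb (a * b) = (\<Sum>x\<in>keys a. Lam la lb (single x (lookup a x) * b))"
        by (subst mult_expand) (simp add: Lam_def lin_sum)
      also have "\<dots> = 0"
      proof (rule sum.neutral, rule ballI)
        fix x assume x: "x \<in> keys a"
        then have kx: "keys x \<subseteq> Inl ` V1 \<union> Inr ` V2" using a by (simp add: polys_in_def)
        have k1: "keys (xpart x) \<subseteq> V1" using kx by (auto simp: keys_xpart)
        have k2: "keys (ypart x) \<subseteq> V2" using kx by (auto simp: keys_ypart)
        have "Lam (\<lambda>u. la (xpart x + u)) (\<lambda>w. lb (ypart x + w)) b = 0"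
          using b X.ann_shift[OF k1 l1] Y.ann_shift[OF k2 l2] by (simp add: T2_iff)
        then show "Lam la lb (single x (lookup a x) * b) = 0" by (simp add: Lam_single_mult)
      qed
      finally show ?thesis .
    qed
    then show "a * b \<in> T2" using ab by (simp add: T2_iff)
  qed
qed

lemma gens_sub_T2: "gens \<subseteq> T2"
proof
  fix p assume "p \<in> gens"
  then consider (x) f where "f \<in> I" "p = subst (\<lambda>v. Var (Inl v)) f"
    | (y) g where "g \<in> J" "p = subst (\<lambda>v. Var (Inr v)) g" by blast
  then show "p \<in> T2"
  proof cases
    case x
    have pe: "p = (\<Sum>m\<in>keys f. single (pm_image Inl m) (lookup f m))"
      using x(2) by (simp add: subst_one)
    have "p \<in> Rxy" unfolding pe
    proof (rule polys_in_sum, rule polys_in_single)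
      fix m assume "m \<in> keys f"
      then have "keys m \<subseteq> V1" using x(1) X.I_sub by (auto simp: polys_in_def)
      then show "keys (pm_image Inl m) \<subseteq> Inl ` V1 \<union> Inr ` V2" using keys_pm_image[of Inl m] by blast
    qed
    moreover have "Lam la lb p = 0" if "\<forall>f\<in>I. lin la f = 0" for la lb
    proof -
      have "Lam la lb p = (\<Sum>m\<in>keys f. lookup f m * (la m * lb 0))"
        unfolding pe by (simp add: Lam_def lin_sum)
      also have "\<dots> = lin la f * lb 0" by (simp add: lin_def sum_distrib_right mult.assoc)
      finally show ?thesis using that x(1) by simp
    qed
    ultimately show ?thesis by (simp add: T2_iff)
  next
    case y
    have pe: "p = (\<Sum>m\<in>keys g. single (pm_image Inr m) (lookup g m))"
      using y(2) by (simp add: subst_one)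
    have "p \<in> Rxy" unfolding pe
    proof (rule polys_in_sum, rule polys_in_single)
      fix m assume "m \<in> keys g"
      then have "keys m \<subseteq> V2" using y(1) Y.I_sub by (auto simp: polys_in_def)
      then show "keys (pm_image Inr m) \<subseteq> Inl ` V1 \<union> Inr ` V2" using keys_pm_image[of Inr m] by blast
    qed
    moreover have "Lam la lb p = 0" if "\<forall>g\<in>J. lin lb g = 0" for la lb
    proof -
      have "Lam la lb p = (\<Sum>m\<in>keys g. lookup g m * (la 0 * lb m))"
        unfolding pe by (simp add: Lam_def lin_sum)
      also have "\<dots> = la 0 * lin lb g" by (simp add: lin_def sum_distrib_left mult_ac)
      finally show ?thesis using that y(1) by simp
    qed
    ultimately show ?thesis by (simp add: T2_iff)
  qed
qed

lemma ideal_sub_T2: "ideal_gen Rxy gens \<subseteq> T2"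
  by (rule ideal_gen_least[OF T2_ideal gens_sub_T2])

lemma tensor:
  assumes p: "p \<in> ideal_gen Rxy gens" and P: "P \<in> keys (init (case_sum \<omega>1 \<omega>2) p)"
  shows "\<not> X.std (xpart P) \<or> \<not> Y.std (ypart P)"
proof (rule ccontr)
  assume "\<not> (\<not> X.std (xpart P) \<or> \<not> Y.std (ypart P))"
  then have su: "X.std (xpart P)" and sv: "Y.std (ypart P)" by auto
  let ?u = "xpart P" and ?v = "ypart P"
  let ?w = "mweight (case_sum \<omega>1 \<omega>2)"
  define l1 where "l1 m = lookup (X.NF m) ?u" for m
  define l2 where "l2 m = lookup (Y.NF m) ?v" for m
  have a1: "\<forall>f\<in>I. lin l1 f = 0" unfolding l1_def using X.NF_ann by blast
  have a2: "\<forall>g\<in>J. lin l2 g = 0" unfolding l2_def using Y.NF_ann by blast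
  have "p \<in> T2" using p ideal_sub_T2 by blast
  then have L0: "Lam l1 l2 p = 0" using a1 a2 by (simp add: T2_iff)
  have Pk: "P \<in> keys p" and wP: "?w P = maxw (case_sum \<omega>1 \<omega>2) p" using P by (auto simp: keys_init)
  have other: "lookup p m * (l1 (xpart m) * l2 (ypart m)) = 0" if m: "m \<in> keys p" "m \<noteq> P" for m
  proof (rule ccontr)
    assume "lookup p m * (l1 (xpart m) * l2 (ypart m)) \<noteq> 0"
    then have n1: "?u \<in> keys (X.NF (xpart m))" and n2: "?v \<in> keys (Y.NF (ypart m))"
      by (auto simp: l1_def l2_def in_keys_iff)
    note k1 = X.NF_key[OF n1] and k2 = Y.NF_key[OF n2]
    have "?w m \<le> ?w P" using maxw_ge[OF m(1)] wP by simp
    then have "mweight \<omega>1 (xpart m) + mweight \<omega>2 (ypart m) \<le> mweight \<omega>1 ?u + mweight \<omega>2 ?v"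
      by (simp add: mweight_split)
    then have "mweight \<omega>1 ?u = mweight \<omega>1 (xpart m)" "mweight \<omega>2 ?v = mweight \<omega>2 (ypart m)"
      using k1 k2 by linarith+
    then have "?u = xpart m" "?v = ypart m" using k1 k2 by auto
    then have "m = P" by (intro mon_eqI) simp_all
    with m(2) show False by simp
  qed
  have "Lam l1 l2 p = (\<Sum>m\<in>keys p. lookup p m * (l1 (xpart m) * l2 (ypart m)))"
    by (simp add: Lam_def lin_def)
  also have "\<dots> = lookup p P * (l1 ?u * l2 ?v) + (\<Sum>m\<in>keys p - {P}. lookup p m * (l1 (xpart m) * l2 (ypart m)))"
    by (subst sum.remove[OF finite_keys Pk]) (rule refl)
  also have "(\<Sum>m\<in>keys p - {P}. lookup p m * (l1 (xpart m) * l2 (ypart m))) = 0"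
    by (rule sum.neutral) (use other in blast)
  also have "l1 ?u * l2 ?v = 1"
    using X.NF_std[OF su] Y.NF_std[OF sv] by (simp add: l1_def l2_def lookup_mono)
  finally have "lookup p P = 0" using L0 by simp
  with Pk show False by (simp add: in_keys_iff)
qed

end



section \<open>Monomials over nat\<close>

definition tdeg :: "('a \<Rightarrow>\<^sub>0 nat) \<Rightarrow> nat" where
  "tdeg u = (\<Sum>v\<in>keys u. lookup u v)"

lemma tdeg_superset: "finite A \<Longrightarrow> keys u \<subseteq> A \<Longrightarrow> tdeg u = (\<Sum>v\<in>A. lookup u v)"
  unfolding tdeg_def by (intro sum.mono_neutral_left) (auto simp: in_keys_iff)

lemma tdeg_add: "tdeg (a + b) = tdeg a + tdeg b"
proof -
  let ?A = "keys a \<union> keys b"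
  have "tdeg (a + b) = (\<Sum>v\<in>?A. lookup (a + b) v)"
    by (rule tdeg_superset) (auto dest: subsetD[OF keys_add])
  also have "\<dots> = (\<Sum>v\<in>?A. lookup a v) + (\<Sum>v\<in>?A. lookup b v)"
    by (simp add: lookup_add sum.distrib)
  also have "\<dots> = tdeg a + tdeg b"
    using tdeg_superset[of ?A a] tdeg_superset[of ?A b] by simp
  finally show ?thesis .
qed

lemma tdeg_single[simp]: "tdeg (single v n) = n"
  by (simp add: tdeg_def)

lemma tdeg_zero[simp]: "tdeg 0 = 0"
  by (simp add: tdeg_def)

lemma tdeg_eq_0: "tdeg u = 0 \<longleftrightarrow> u = 0"
proof
  assume "tdeg u = 0"
  then have "\<forall>v\<in>keys u. lookup u v = 0" unfolding tdeg_def by simp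
  then show "u = 0" by (metis in_keys_iff keys_eq_empty ex_in_conv)
qed simp

lemma tdeg_sum: "tdeg (\<Sum>i\<in>A. f i) = (\<Sum>i\<in>A. tdeg (f i))"
  by (induction A rule: infinite_finite_induct) (auto simp: tdeg_add)

lemma tdeg_pm_image: "tdeg (pm_image f u) = tdeg u"
  by (simp add: pm_image_def tdeg_sum tdeg_def[of u])

lemma remove_one:
  assumes "e \<in> keys (Z :: 'a \<Rightarrow>\<^sub>0 nat)"
  shows "Z = single e 1 + (Z - single e 1)"
proof (rule poly_mapping_eqI)
  fix x
  show "lookup Z x = lookup (single e 1 + (Z - single e 1)) x"
    using assms by (cases "x = e") (auto simp: lookup_add lookup_minus lookup_single in_keys_iff)
qed

lemma fiber:
  assumes "x \<in> keys (pm_image f Z)"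
  shows "\<exists>e\<in>keys Z. f e = x"
proof -
  have "(\<Sum>v\<in>{v \<in> keys Z. f v = x}. lookup Z v) \<noteq> 0"
    using assms by (simp add: lookup_pm_image in_keys_iff)
  then obtain v where "v \<in> {v \<in> keys Z. f v = x}" by (meson sum.not_neutral_contains_not_neutral)
  then show ?thesis by blast
qed

lemma in_keys_pm_image: "e \<in> keys Z \<Longrightarrow> f e \<in> keys (pm_image f Z)"
proof -
  assume e: "e \<in> keys Z"
  have "Z = single e 1 + (Z - single e 1)" by (rule remove_one[OF e])
  then have "pm_image f Z = single (f e) 1 + pm_image f (Z - single e 1)"
    by (metis pm_image_add pm_image_single)
  then have "lookup (pm_image f Z) (f e) \<noteq> 0" by (simp add: lookup_add)
  then show ?thesis by (simp add: in_keys_iff)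
qed

lemma keys_add_nat: "keys ((a :: 'a \<Rightarrow>\<^sub>0 nat) + b) = keys a \<union> keys b"
  by (auto simp: in_keys_iff lookup_add)

lemma pm_image_split:
  "pm_image f Z = a + b \<Longrightarrow> \<exists>Z1 Z2. Z = Z1 + Z2 \<and> pm_image f Z1 = a \<and> pm_image f Z2 = b"
proof (induction "tdeg a" arbitrary: a Z rule: less_induct)
  case less
  show ?case
  proof (cases "a = 0")
    case True
    then show ?thesis using less.prems by (intro exI[of _ 0] exI[of _ Z]) simp
  next
    case False
    then obtain x where x: "x \<in> keys a" by (metis keys_eq_empty ex_in_conv)
    then have "x \<in> keys (pm_image f Z)" using less.prems by (simp add: keys_add_nat)
    then obtain e where e: "e \<in> keys Z" "f e = x" using fiber[of x f Z] by blast
    define a' where "a' = a - single x 1"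
    define Z' where "Z' = Z - single e 1"
    have a: "a = single x 1 + a'" unfolding a'_def by (rule remove_one[OF x])
    have Z: "Z = single e 1 + Z'" unfolding Z'_def by (rule remove_one[OF e(1)])
    have "pm_image f Z = single x 1 + pm_image f Z'"
      by (subst Z) (simp add: pm_image_add e(2))
    moreover have "a + b = single x 1 + (a' + b)"
      by (subst a) (simp add: add.assoc)
    ultimately have "single x 1 + pm_image f Z' = single x 1 + (a' + b)"
      using less.prems by simp
    then have "pm_image f Z' = a' + b" by simp
    moreover have "tdeg a' < tdeg a" using a by (simp add: tdeg_add)
    ultimately obtain Z1 Z2 where "Z' = Z1 + Z2" "pm_image f Z1 = a'" "pm_image f Z2 = b"
      using less.hyps by blast
    then show ?thesis using Z a e(2)
      by (intro exI[of _ "single e 1 + Z1"] exI[of _ Z2]) (simp add: pm_image_add add.assoc)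
  qed
qed

section \<open>The z-variables\<close>

definition px :: "nat \<times> nat \<times> nat \<Rightarrow> nat \<times> nat" where "px v = (fst v, fst (snd v))"
definition py :: "nat \<times> nat \<times> nat \<Rightarrow> nat \<times> nat" where "py v = (fst v, snd (snd v))"
definition cnt :: "(nat \<times> nat \<Rightarrow>\<^sub>0 nat) \<Rightarrow> (nat \<Rightarrow>\<^sub>0 nat)" where "cnt u = pm_image fst u"

lemma px_simp[simp]: "px (i, j, k) = (i, j)" by (simp add: px_def)
lemma py_simp[simp]: "py (i, j, k) = (i, k)" by (simp add: py_def)

lemma cnt_px: "cnt (pm_image px Z) = pm_image fst Z"
  by (simp add: cnt_def pm_image_comp comp_def px_def)
lemma cnt_py: "cnt (pm_image py Z) = pm_image fst Z"
  by (simp add: cnt_def pm_image_comp comp_def py_def)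

lemma cnt_add: "cnt (a + b) = cnt a + cnt b" by (simp add: cnt_def pm_image_add)

lemma Var_Var: "(Var a :: ('v, 'k::comm_ring_1) mpoly) * Var b = mono (single a 1 + single b 1)"
  by (simp add: Var_mono mono_mult)

lemma zvars_iff: "(i, j, k) \<in> zvars r s t \<longleftrightarrow> 1 \<le> i \<and> i \<le> r \<and> 1 \<le> j \<and> j \<le> s i \<and> 1 \<le> k \<and> k \<le> t i"
  by (simp add: zvars_def)

lemma xvars_iff: "(i, j) \<in> xvars r s \<longleftrightarrow> 1 \<le> i \<and> i \<le> r \<and> 1 \<le> j \<and> j \<le> s i"
  by (simp add: xvars_def)

lemma quad_in:
  fixes K :: "(nat \<times> nat \<times> nat, 'k::comm_ring_1) mpoly set"
  assumes K: "is_ideal (polys_in (zvars r s t)) K" and Q: "QuadB r s t \<subseteq> K"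
    and i: "1 \<le> i" "i \<le> r" and j: "1 \<le> j" "j \<le> s i" "1 \<le> j'" "j' \<le> s i" "j \<noteq> j'"
    and k: "1 \<le> k" "k \<le> t i" "1 \<le> k'" "k' \<le> t i" "k \<noteq> k'"
  shows "mono (single (i, j, k') 1 + single (i, j', k) 1) - mono (single (i, j, k) 1 + single (i, j', k') 1) \<in> K"
proof -
  let ?A = "mono (single (i, j, k') 1 + single (i, j', k) 1) :: (nat \<times> nat \<times> nat, 'k) mpoly"
  let ?B = "mono (single (i, j, k) 1 + single (i, j', k') 1) :: (nat \<times> nat \<times> nat, 'k) mpoly"
  have q: "Var (i, j1, k2) * Var (i, j2, k1) - Var (i, j1, k1) * Var (i, j2, k2) \<in> K"
    if "1 \<le> j1" "j1 < j2" "j2 \<le> s i" "1 \<le> k1" "k1 < k2" "k2 \<le> t i" for j1 j2 k1 k2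
    using that i Q unfolding QuadB_def by blast
  consider "j < j'" "k < k'" | "j < j'" "k' < k" | "j' < j" "k < k'" | "j' < j" "k' < k"
    using j(5) k(5) by linarith
  then show ?thesis
  proof cases
    case 1
    then show ?thesis using q[of j j' k k'] j k by (simp add: Var_Var)
  next
    case 2
    then have "?B - ?A \<in> K" using q[of j j' k' k] j k by (simp add: Var_Var add.commute)
    then have "- (?B - ?A) \<in> K" by (rule ideal_uminus[OF K])
    then show ?thesis by simp
  next
    case 3
    then have "?B - ?A \<in> K" using q[of j' j k k'] j k by (simp add: Var_Var add.commute)
    then have "- (?B - ?A) \<in> K" by (rule ideal_uminus[OF K])
    then show ?thesis by simp
  next
    case 4
    then show ?thesis using q[of j' j k' k] j k by (simp add: Var_Var add.commute)
  qed
qed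

lemma quad_connect:
  fixes K :: "(nat \<times> nat \<times> nat, 'k::comm_ring_1) mpoly set"
  assumes K: "is_ideal (polys_in (zvars r s t)) K" and Q: "QuadB r s t \<subseteq> K"
  shows "keys Z1 \<subseteq> zvars r s t \<Longrightarrow> keys Z2 \<subseteq> zvars r s t \<Longrightarrow> pm_image px Z1 = pm_image px Z2
    \<Longrightarrow> pm_image py Z1 = pm_image py Z2 \<Longrightarrow> (mono Z1 :: (nat \<times> nat \<times> nat, 'k) mpoly) - mono Z2 \<in> K"
proof (induction "tdeg Z1" arbitrary: Z1 Z2 rule: less_induct)
  case less
  have step1: "(mono Z1 :: (nat \<times> nat \<times> nat, 'k) mpoly) - mono Z2' \<in> K"
    if e1: "e \<in> keys Z1" and e2: "e \<in> keys Z2'" and kz: "keys Z2' \<subseteq> zvars r s t"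
      and ix: "pm_image px Z2' = pm_image px Z1" and iy: "pm_image py Z2' = pm_image py Z1" for e Z2'
  proof -
    define Z1' where "Z1' = Z1 - single e 1"
    define W where "W = Z2' - single e 1"
    have Z1e: "Z1 = single e 1 + Z1'" unfolding Z1'_def by (rule remove_one[OF e1])
    have Z2e: "Z2' = single e 1 + W" unfolding W_def by (rule remove_one[OF e2])
    have "single (px e) 1 + pm_image px Z1' = single (px e) 1 + pm_image px W"
      using ix by (subst (asm) Z1e, subst (asm) Z2e) (simp add: pm_image_add)
    then have ix': "pm_image px Z1' = pm_image px W" by simp
    have "single (py e) 1 + pm_image py Z1' = single (py e) 1 + pm_image py W"
      using iy by (subst (asm) Z1e, subst (asm) Z2e) (simp add: pm_image_add)
    then have iy': "pm_image py Z1' = pm_image py W" by simp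
    have "tdeg Z1 = 1 + tdeg Z1'" using arg_cong[OF Z1e, of tdeg] by (simp add: tdeg_add)
    then have lt: "tdeg Z1' < tdeg Z1" by simp
    have k1: "keys Z1' \<subseteq> zvars r s t" using less.prems(1) Z1e keys_add_nat[of "single e 1" Z1'] by simp
    have kW: "keys W \<subseteq> zvars r s t" using kz Z2e keys_add_nat[of "single e 1" W] by simp
    have ih: "(mono Z1' :: (nat \<times> nat \<times> nat, 'k) mpoly) - mono W \<in> K"
      using less.hyps[OF lt k1 kW ix' iy'] .
    have em: "(mono (single e 1) :: (nat \<times> nat \<times> nat, 'k) mpoly) \<in> polys_in (zvars r s t)"
      using less.prems(1) e1 by (intro polys_in_mono) auto
    have "(mono Z1 :: (nat \<times> nat \<times> nat, 'k) mpoly) - mono Z2' = mono (single e 1) * (mono Z1' - mono W)"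
      by (simp add: Z1e Z2e right_diff_distrib mono_mult)
    also have "\<dots> \<in> K" by (rule ideal_mult[OF K em ih])
    finally show ?thesis .
  qed
  show ?case
  proof (cases "Z1 = 0")
    case True
    then have "tdeg (pm_image px Z2) = 0" using less.prems(3) by simp
    then have "Z2 = 0" by (simp add: tdeg_pm_image tdeg_eq_0)
    then show ?thesis using True ideal_zero[OF K] by simp
  next
    case False
    then obtain e where e: "e \<in> keys Z1" by (metis keys_eq_empty ex_in_conv)
    obtain i j k where eijk: "e = (i, j, k)" by (cases e) auto
    have ez: "(i, j, k) \<in> zvars r s t" using e less.prems(1) eijk by blast
    show ?thesis
    proof (cases "e \<in> keys Z2")
      case True
      then show ?thesis using step1[OF e True less.prems(2)] less.prems(3,4) by simp
    next
      case False
      have "(i, j) \<in> keys (pm_image px Z2)"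
        using in_keys_pm_image[OF e, of px] less.prems(3) eijk by simp
      then obtain e2 where e2: "e2 \<in> keys Z2" "px e2 = (i, j)" using fiber[of "(i, j)" px Z2] by blast
      then obtain k' where e2k: "e2 = (i, j, k')" by (cases e2) auto
      have "(i, k) \<in> keys (pm_image py Z2)"
        using in_keys_pm_image[OF e, of py] less.prems(4) eijk by simp
      then obtain e3 where e3: "e3 \<in> keys Z2" "py e3 = (i, k)" using fiber[of "(i, k)" py Z2] by blast
      then obtain j' where e3j: "e3 = (i, j', k)" by (cases e3) auto
      have kk: "k' \<noteq> k" using False e2 e2k eijk by auto
      have jj: "j' \<noteq> j" using False e3 e3j eijk by auto
      have e2z: "(i, j, k') \<in> zvars r s t" using e2 e2k less.prems(2) by blast
      have e3z: "(i, j', k) \<in> zvars r s t" using e3 e3j less.prems(2) by blast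
      have e4z: "(i, j', k') \<in> zvars r s t" using e2z e3z by (simp add: zvars_iff)
      define Z2a where "Z2a = Z2 - single e2 1"
      have Z2a: "Z2 = single e2 1 + Z2a" unfolding Z2a_def by (rule remove_one[OF e2(1)])
      have "e3 \<in> keys Z2a"
      proof -
        have "e3 \<noteq> e2" using e2k e3j jj by simp
        then show ?thesis using e3(1) unfolding Z2a_def by (simp add: in_keys_iff lookup_minus lookup_single)
      qed
      define W where "W = Z2a - single e3 1"
      have Wd: "Z2a = single e3 1 + W" unfolding W_def by (rule remove_one[OF \<open>e3 \<in> keys Z2a\<close>])
      have Z2W: "Z2 = (single e2 1 + single e3 1) + W" using Z2a Wd by (simp add: add.assoc)
      define Z3 where "Z3 = (single e 1 + single (i, j', k') 1) + W"
      have kW: "keys W \<subseteq> zvars r s t" using less.prems(2) Z2W keys_add_nat[of "single e2 1 + single e3 1" W] by simp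
      have kZ3: "keys Z3 \<subseteq> zvars r s t"
        unfolding Z3_def using kW ez e4z eijk by (simp add: keys_add_nat)
      have eZ3: "e \<in> keys Z3" unfolding Z3_def by (simp add: keys_add_nat)
      have ix3: "pm_image px Z3 = pm_image px Z1"
        unfolding less.prems(3) Z3_def by (subst Z2W) (simp add: pm_image_add eijk e2k e3j add_ac)
      have iy3: "pm_image py Z3 = pm_image py Z1"
        unfolding less.prems(4) Z3_def by (subst Z2W) (simp add: pm_image_add eijk e2k e3j add_ac)
      have A: "(mono Z1 :: (nat \<times> nat \<times> nat, 'k) mpoly) - mono Z3 \<in> K" by (rule step1[OF e eZ3 kZ3 ix3 iy3])
      have wm: "(mono W :: (nat \<times> nat \<times> nat, 'k) mpoly) \<in> polys_in (zvars r s t)" using kW by (rule polys_in_mono)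
      have qq: "(mono (single (i, j, k') 1 + single (i, j', k) 1) :: (nat \<times> nat \<times> nat, 'k) mpoly)
          - mono (single (i, j, k) 1 + single (i, j', k') 1) \<in> K"
        using quad_in[OF K Q, of i j j' k k'] ez e4z jj kk by (simp add: zvars_iff)
      have "(mono Z2 :: (nat \<times> nat \<times> nat, 'k) mpoly) - mono Z3 = mono W *
          (mono (single (i, j, k') 1 + single (i, j', k) 1) - mono (single (i, j, k) 1 + single (i, j', k') 1))"
        unfolding Z3_def by (subst Z2W) (simp add: e2k e3j eijk right_diff_distrib mono_mult add_ac)
      also have "\<dots> \<in> K" by (rule ideal_mult[OF K wm qq])
      finally have B: "(mono Z2 :: (nat \<times> nat \<times> nat, 'k) mpoly) - mono Z3 \<in> K" .
      have "(mono Z1 :: (nat \<times> nat \<times> nat, 'k) mpoly) - mono Z2 = (mono Z1 - mono Z3) - (mono Z2 - mono Z3)" by simp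
      also have "\<dots> \<in> K" by (rule ideal_minus[OF K A B])
      finally show ?thesis .
    qed
  qed
qed



lemma cnt_single[simp]: "cnt (single (i, j) n) = single i n" by (simp add: cnt_def)

lemma in_keys_cnt: "(i, j) \<in> keys u \<Longrightarrow> i \<in> keys (cnt u)"
  unfolding cnt_def using in_keys_pm_image[of "(i, j)" u fst] by simp

lemma cnt_fiber: "i \<in> keys (cnt w) \<Longrightarrow> \<exists>k. (i, k) \<in> keys w"
proof -
  assume "i \<in> keys (cnt w)"
  then obtain e where "e \<in> keys w" "fst e = i" using fiber[of i fst w] unfolding cnt_def by blast
  then show ?thesis by (metis prod.collapse)
qed

lemma sigma_ex:
  "keys u \<subseteq> xvars r s \<Longrightarrow> keys w \<subseteq> xvars r t \<Longrightarrow> cnt u = cnt w \<Longrightarrow>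
    \<exists>Z. keys Z \<subseteq> zvars r s t \<and> pm_image px Z = u \<and> pm_image py Z = w"
proof (induction "tdeg u" arbitrary: u w rule: less_induct)
  case less
  show ?case
  proof (cases "u = 0")
    case True
    then have "tdeg (cnt w) = 0" using less.prems(3) by (simp add: cnt_def)
    then have "w = 0" by (simp add: cnt_def tdeg_pm_image tdeg_eq_0)
    then show ?thesis using True by (intro exI[of _ 0]) simp
  next
    case False
    then obtain e where e: "e \<in> keys u" by (metis keys_eq_empty ex_in_conv)
    obtain i j where eij: "e = (i, j)" by (cases e) auto
    have "i \<in> keys (cnt w)" using in_keys_cnt[of i j u] e eij less.prems(3) by simp
    then obtain k where k: "(i, k) \<in> keys w" using cnt_fiber by blast
    define u' where "u' = u - single (i, j) 1"
    define w' where "w' = w - single (i, k) 1"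
    have ue: "u = single (i, j) 1 + u'" unfolding u'_def using remove_one[of "(i, j)" u] e eij by simp
    have we: "w = single (i, k) 1 + w'" unfolding w'_def by (rule remove_one[OF k])
    have "single i 1 + cnt u' = single i 1 + cnt w'"
      using less.prems(3) by (subst (asm) ue, subst (asm) we) (simp add: cnt_add)
    then have c': "cnt u' = cnt w'" by simp
    have "tdeg u = 1 + tdeg u'" using arg_cong[OF ue, of tdeg] by (simp add: tdeg_add)
    then have lt: "tdeg u' < tdeg u" by simp
    have ku: "keys u' \<subseteq> xvars r s" using less.prems(1) ue keys_add_nat[of "single (i, j) 1" u'] by simp
    have kw: "keys w' \<subseteq> xvars r t" using less.prems(2) we keys_add_nat[of "single (i, k) 1" w'] by simp
    obtain Z' where Z': "keys Z' \<subseteq> zvars r s t" "pm_image px Z' = u'" "pm_image py Z' = w'"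
      using less.hyps[OF lt ku kw c'] by blast
    have "(i, j) \<in> xvars r s" using less.prems(1) e eij by blast
    moreover have "(i, k) \<in> xvars r t" using less.prems(2) k by blast
    ultimately have "(i, j, k) \<in> zvars r s t" by (simp add: xvars_iff zvars_iff)
    then show ?thesis using Z' ue we
      by (intro exI[of _ "single (i, j, k) 1 + Z'"]) (simp add: keys_add_nat pm_image_add)
  qed
qed

lemma sum_lessThan_Cons:
  "(\<Sum>l<length (i # is). f ((i # is) ! l) l) = f i 0 + (\<Sum>l<length is. f (is ! l) (Suc l))"
  by (simp only: length_Cons sum.lessThan_Suc_shift nth_Cons_0 nth_Cons_Suc)

lemma k_ex:
  "keys w \<subseteq> xvars r t \<Longrightarrow> cnt w = (\<Sum>l<length is. single (is ! l) 1) \<Longrightarrow>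
    \<exists>k. k \<in> index_tuples t is \<and> (\<Sum>l<length is. single (is ! l, k ! l) 1) = w"
proof (induction "is" arbitrary: w)
  case Nil
  then have "w = 0" using tdeg_pm_image[of fst w] by (simp add: cnt_def tdeg_eq_0)
  then show ?case by (intro exI[of _ "[]"]) (simp add: index_tuples_def)
next
  case (Cons i "is")
  have e1: "(\<Sum>l<length (i # is). single ((i # is) ! l) (1::nat)) = single i 1 + (\<Sum>l<length is. single (is ! l) 1)"
    by (simp only: length_Cons sum.lessThan_Suc_shift nth_Cons_0 nth_Cons_Suc)
  have cw: "cnt w = single i 1 + (\<Sum>l<length is. single (is ! l) 1)"
    by (simp only: Cons.prems(2) e1)
  then have "i \<in> keys (cnt w)" by (simp add: keys_add_nat)
  then obtain k0 where k0: "(i, k0) \<in> keys w" using cnt_fiber by blast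
  define w' where "w' = w - single (i, k0) 1"
  have we: "w = single (i, k0) 1 + w'" unfolding w'_def by (rule remove_one[OF k0])
  have "single i 1 + cnt w' = single i 1 + (\<Sum>l<length is. single (is ! l) 1)"
    using cw by (subst (asm) we) (simp add: cnt_add)
  then have c': "cnt w' = (\<Sum>l<length is. single (is ! l) 1)" by simp
  have kw: "keys w' \<subseteq> xvars r t" using Cons.prems(1) we keys_add_nat[of "single (i, k0) 1" w'] by simp
  obtain k' where k': "k' \<in> index_tuples t is" "(\<Sum>l<length is. single (is ! l, k' ! l) 1) = w'"
    using Cons.IH[OF kw c'] by blast
  have r0: "1 \<le> k0" "k0 \<le> t i" using Cons.prems(1) k0 by (auto simp: xvars_iff)
  have "k0 # k' \<in> index_tuples t (i # is)"
    using k'(1) r0 by (auto simp: index_tuples_def less_Suc_eq_0_disj)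
  moreover have "(\<Sum>l<length (i # is). single ((i # is) ! l, (k0 # k') ! l) (1::nat))
      = single (i, k0) 1 + (\<Sum>l<length is. single (is ! l, k' ! l) 1)"
    by (simp only: length_Cons sum.lessThan_Suc_shift nth_Cons_0 nth_Cons_Suc)
  then have "(\<Sum>l<length (i # is). single ((i # is) ! l, (k0 # k') ! l) 1) = single (i, k0) 1 + w'"
    by (simp only: k'(2))
  then have "(\<Sum>l<length (i # is). single ((i # is) ! l, (k0 # k') ! l) 1) = w"
    using we by (simp only:)
  ultimately show ?case by blast
qed

section \<open>Polynomial-valued linear maps\<close>

definition linP :: "(('v \<Rightarrow>\<^sub>0 nat) \<Rightarrow> ('w, 'k::comm_ring_1) mpoly) \<Rightarrow> ('v, 'k) mpoly \<Rightarrow> ('w, 'k) mpoly" where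
  "linP \<phi> p = (\<Sum>m\<in>keys p. single 0 (lookup p m) * \<phi> m)"

lemma linP_superset:
  assumes "finite A" "keys p \<subseteq> A"
  shows "linP \<phi> p = (\<Sum>m\<in>A. single 0 (lookup p m) * \<phi> m)"
  unfolding linP_def using assms by (intro sum.mono_neutral_left) (auto simp: in_keys_iff)

lemma linP_add: "linP \<phi> (p + q) = linP \<phi> p + linP \<phi> q"
proof -
  let ?A = "keys p \<union> keys q"
  have "linP \<phi> (p + q) = (\<Sum>m\<in>?A. single 0 (lookup (p + q) m) * \<phi> m)"
    by (rule linP_superset) (auto dest: subsetD[OF keys_add])
  also have "\<dots> = (\<Sum>m\<in>?A. single 0 (lookup p m) * \<phi> m) + (\<Sum>m\<in>?A. single 0 (lookup q m) * \<phi> m)"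
    by (simp add: lookup_add single_add distrib_right sum.distrib)
  also have "\<dots> = linP \<phi> p + linP \<phi> q"
    using linP_superset[of ?A p \<phi>] linP_superset[of ?A q \<phi>] by simp
  finally show ?thesis .
qed

lemma linP_zero[simp]: "linP \<phi> 0 = 0" by (simp add: linP_def)

lemma linP_single[simp]: "linP \<phi> (single m c) = single 0 c * \<phi> m"
  by (simp add: linP_def)

lemma linP_sum: "linP \<phi> (\<Sum>i\<in>A. f i) = (\<Sum>i\<in>A. linP \<phi> (f i))"
  by (induction A rule: infinite_finite_induct) (auto simp: linP_add)

lemma linP_cong: "(\<And>m. m \<in> keys p \<Longrightarrow> \<phi> m = \<psi> m) \<Longrightarrow> linP \<phi> p = linP \<psi> p"
  unfolding linP_def by (intro sum.cong) auto

lemma linP_fadd: "linP (\<lambda>m. \<phi> m + \<psi> m) p = linP \<phi> p + linP \<psi> p"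
  by (simp add: linP_def distrib_left sum.distrib)

lemma linP_fmult: "linP (\<lambda>m. c * \<phi> m) p = c * linP \<phi> p"
  by (simp add: linP_def sum_distrib_left mult_ac)

lemma single0_mult: "single 0 (a * b) = single 0 a * (single 0 b :: ('w, 'k::comm_ring_1) mpoly)"
  by (simp add: mult_single)

lemma linP_shift: "linP \<phi> (single a c * f) = single 0 c * linP (\<lambda>m. \<phi> (a + m)) f"
proof -
  have "linP \<phi> (single a c * f) = linP \<phi> (\<Sum>m\<in>keys f. single (a + m) (c * lookup f m))"
    by (simp add: single_mult_expand)
  also have "\<dots> = (\<Sum>m\<in>keys f. single 0 (c * lookup f m) * \<phi> (a + m))"
    by (simp add: linP_sum)
  also have "\<dots> = single 0 c * linP (\<lambda>m. \<phi> (a + m)) f"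
    by (simp add: linP_def sum_distrib_left single0_mult mult.assoc)
  finally show ?thesis .
qed

lemma linP_in_ideal:
  assumes K: "is_ideal (polys_in V) K" and "\<And>m. m \<in> keys p \<Longrightarrow> \<phi> m \<in> K"
  shows "linP \<phi> p \<in> K"
  unfolding linP_def using assms by (intro ideal_sum[OF K] ideal_scal[OF K]) auto

section \<open>Initial forms of relabelled polynomials\<close>

lemma init_map:
  fixes f :: "('v, 'k::comm_ring_1) mpoly" and h :: "('v \<Rightarrow>\<^sub>0 nat) \<Rightarrow> ('w \<Rightarrow>\<^sub>0 nat)"
  assumes inj: "inj_on h (keys f)"
    and wt: "\<And>m. m \<in> keys f \<Longrightarrow> mweight \<nu> (h m) = mweight \<omega> m + c"
  shows "init \<nu> (\<Sum>m\<in>keys f. single (h m) (lookup f m)) = (\<Sum>m\<in>keys (init \<omega> f). single (h m) (lookup f m))"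
proof (cases "f = 0")
  case True then show ?thesis by simp
next
  case False
  define F where "F = (\<Sum>m\<in>keys f. single (h m) (lookup f m))"
  have lF: "lookup F (h m) = lookup f m" if "m \<in> keys f" for m
  proof -
    have "lookup F (h m) = (\<Sum>m'\<in>keys f. if m' = m then lookup f m else 0)"
      unfolding F_def lookup_sum
      by (intro sum.cong) (use inj that in \<open>auto simp: lookup_single when_def dest: inj_onD\<close>)
    also have "\<dots> = lookup f m" using that by simp
    finally show ?thesis .
  qed
  have kF: "keys F \<subseteq> h ` keys f"
  proof
    fix x assume "x \<in> keys F"
    then have "x \<in> (\<Union>m\<in>keys f. keys (single (h m) (lookup f m)))"
      using keys_sum[of "\<lambda>m. single (h m) (lookup f m)" "keys f"] unfolding F_def by blast
    then show "x \<in> h ` keys f" by (auto split: if_splits)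
  qed
  obtain m0 where m0: "m0 \<in> keys f" "mweight \<omega> m0 = maxw \<omega> f" using maxw_attained[OF False] by blast
  have mx: "maxw \<nu> F = maxw \<omega> f + c"
  proof -
    have "maxw \<nu> F = mweight \<nu> (h m0)"
    proof (rule maxw_eqI)
      show "h m0 \<in> keys F" using lF[OF m0(1)] m0(1) by (simp add: in_keys_iff)
      fix x assume "x \<in> keys F"
      then obtain m where "m \<in> keys f" "x = h m" using kF by blast
      then show "mweight \<nu> x \<le> mweight \<nu> (h m0)" using wt m0 maxw_ge[of m f \<omega>] by simp
    qed
    then show ?thesis using wt[OF m0(1)] m0(2) by simp
  qed
  have "init \<nu> F = (\<Sum>m\<in>keys f. pfilter (\<lambda>x. mweight \<nu> x = maxw \<nu> F) (single (h m) (lookup f m)))"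
    by (simp add: init_eq F_def pfilter_sum)
  also have "\<dots> = (\<Sum>m\<in>keys f. if mweight \<omega> m = maxw \<omega> f then single (h m) (lookup f m) else 0)"
    by (intro sum.cong) (simp_all add: pfilter_single mx wt)
  also have "\<dots> = (\<Sum>m\<in>{m \<in> keys f. mweight \<omega> m = maxw \<omega> f}. single (h m) (lookup f m))"
    by (simp add: sum.inter_filter)
  also have "\<dots> = (\<Sum>m\<in>keys (init \<omega> f). single (h m) (lookup f m))"
    by (simp add: keys_init)
  finally show ?thesis unfolding F_def .
qed

lemma mweight_fadd: "mweight (\<lambda>v. a v + b v) Z = mweight a Z + mweight b Z"
  by (simp add: mweight_def distrib_left sum.distrib)

lemma mweight_pullback:
  "mweight (pullback_weight \<omega>1 \<omega>2) Z = mweight \<omega>1 (pm_image px Z) + mweight \<omega>2 (pm_image py Z)"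
proof -
  have "pullback_weight \<omega>1 \<omega>2 = (\<lambda>v. (\<omega>1 \<circ> px) v + (\<omega>2 \<circ> py) v)"
    by (auto simp: pullback_weight_def fun_eq_iff px_def py_def)
  then show ?thesis by (simp add: mweight_fadd mweight_pm_image comp_def)
qed



definition bal :: "nat \<Rightarrow> (nat \<Rightarrow> nat) \<Rightarrow> (nat \<Rightarrow> nat) \<Rightarrow> (nat \<times> nat \<Rightarrow>\<^sub>0 nat) \<Rightarrow> (nat \<times> nat \<Rightarrow>\<^sub>0 nat) \<Rightarrow> bool" where
  "bal r s t u w \<longleftrightarrow> keys u \<subseteq> xvars r s \<and> keys w \<subseteq> xvars r t \<and> cnt u = cnt w"

definition sig :: "nat \<Rightarrow> (nat \<Rightarrow> nat) \<Rightarrow> (nat \<Rightarrow> nat) \<Rightarrow> (nat \<times> nat \<Rightarrow>\<^sub>0 nat) \<Rightarrow> (nat \<times> nat \<Rightarrow>\<^sub>0 nat) \<Rightarrow> (nat \<times> nat \<times> nat \<Rightarrow>\<^sub>0 nat)" where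
  "sig r s t u w = (SOME Z. keys Z \<subseteq> zvars r s t \<and> pm_image px Z = u \<and> pm_image py Z = w)"

lemma sig:
  assumes "bal r s t u w"
  shows "keys (sig r s t u w) \<subseteq> zvars r s t \<and> pm_image px (sig r s t u w) = u \<and> pm_image py (sig r s t u w) = w"
proof -
  have "\<exists>Z. keys Z \<subseteq> zvars r s t \<and> pm_image px Z = u \<and> pm_image py Z = w"
    using assms unfolding bal_def by (intro sigma_ex) auto
  then show ?thesis unfolding sig_def by (rule someI_ex)
qed

lemma keys_pm_image_sub: "keys Z \<subseteq> zvars r s t \<Longrightarrow> keys (pm_image px Z) \<subseteq> xvars r s \<and> keys (pm_image py Z) \<subseteq> xvars r t"
  using keys_pm_image[of px Z] keys_pm_image[of py Z] by (force simp: zvars_def xvars_def px_def py_def)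

lemma bal_Z: "keys Z \<subseteq> zvars r s t \<Longrightarrow> bal r s t (pm_image px Z) (pm_image py Z)"
  unfolding bal_def using keys_pm_image_sub[of Z r s t] by (simp add: cnt_px cnt_py)

locale zctx =
  fixes r :: nat and s t :: "nat \<Rightarrow> nat" and K :: "(nat \<times> nat \<times> nat, 'k::field) mpoly set"
  assumes K: "is_ideal (polys_in (zvars r s t)) K" and KQ: "QuadB r s t \<subseteq> K"
begin

abbreviation "Rz \<equiv> (polys_in (zvars r s t) :: (nat \<times> nat \<times> nat, 'k) mpoly set)"

lemma sig_congr:
  assumes "keys Z \<subseteq> zvars r s t"
  shows "(mono (sig r s t (pm_image px Z) (pm_image py Z)) :: (nat \<times> nat \<times> nat, 'k) mpoly) - mono Z \<in> K"
proof -
  note S = sig[OF bal_Z[OF assms]]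
  show ?thesis by (rule quad_connect[OF K KQ]) (use S assms in auto)
qed

lemma sig_congr':
  assumes "keys Z \<subseteq> zvars r s t" "pm_image px Z = u" "pm_image py Z = w"
  shows "(mono (sig r s t u w) :: (nat \<times> nat \<times> nat, 'k) mpoly) - mono Z \<in> K"
  using sig_congr[OF assms(1)] assms(2,3) by simp

definition phx :: "(nat \<times> nat \<Rightarrow>\<^sub>0 nat) \<Rightarrow> (nat \<times> nat \<Rightarrow>\<^sub>0 nat) \<Rightarrow> (nat \<times> nat \<times> nat, 'k) mpoly" where
  "phx w m = (if bal r s t m w then mono (sig r s t m w) else 0)"

definition phy :: "(nat \<times> nat \<Rightarrow>\<^sub>0 nat) \<Rightarrow> (nat \<times> nat \<Rightarrow>\<^sub>0 nat) \<Rightarrow> (nat \<times> nat \<times> nat, 'k) mpoly" where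
  "phy u m = (if bal r s t u m then mono (sig r s t u m) else 0)"

definition Tx :: "(nat \<times> nat, 'k) mpoly set" where
  "Tx = {q \<in> polys_in (xvars r s). \<forall>w. keys w \<subseteq> xvars r t \<longrightarrow> linP (phx w) q \<in> K}"

definition Ty :: "(nat \<times> nat, 'k) mpoly set" where
  "Ty = {q \<in> polys_in (xvars r t). \<forall>u. keys u \<subseteq> xvars r s \<longrightarrow> linP (phy u) q \<in> K}"

lemma Tx_iff: "q \<in> Tx \<longleftrightarrow> q \<in> polys_in (xvars r s) \<and> (\<forall>w. keys w \<subseteq> xvars r t \<longrightarrow> linP (phx w) q \<in> K)"
  unfolding Tx_def by simp

lemma Ty_iff: "q \<in> Ty \<longleftrightarrow> q \<in> polys_in (xvars r t) \<and> (\<forall>u. keys u \<subseteq> xvars r s \<longrightarrow> linP (phy u) q \<in> K)"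
  unfolding Ty_def by simp

lemma mono_Rz: "keys Z \<subseteq> zvars r s t \<Longrightarrow> (mono Z :: (nat \<times> nat \<times> nat, 'k) mpoly) \<in> Rz"
  by (rule polys_in_mono)

lemma Tx_shift:
  assumes x: "keys x \<subseteq> xvars r s" and b: "b \<in> Tx" and w: "keys w \<subseteq> xvars r t"
  shows "linP (\<lambda>m. phx w (x + m)) b \<in> K"
proof (cases "\<exists>m\<in>keys b. bal r s t (x + m) w")
  case False
  then have "linP (\<lambda>m. phx w (x + m)) b = linP (\<lambda>m. 0) b"
    by (intro linP_cong) (auto simp: phx_def)
  also have "\<dots> = 0" by (simp add: linP_def)
  finally show ?thesis using ideal_zero[OF K] by simp
next
  case True
  then obtain m0 where m0: "m0 \<in> keys b" "bal r s t (x + m0) w" by blast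
  note S = sig[OF m0(2)]
  obtain Z1 Z2 where Z12: "sig r s t (x + m0) w = Z1 + Z2" "pm_image px Z1 = x" "pm_image px Z2 = m0"
    using pm_image_split[OF conjunct1[OF conjunct2[OF S]]] by blast
  define w1 where "w1 = pm_image py Z1"
  define w2 where "w2 = pm_image py Z2"
  have ww: "w = w1 + w2" using S Z12 by (simp add: w1_def w2_def pm_image_add)
  have kZ1: "keys Z1 \<subseteq> zvars r s t" using S Z12(1) keys_add_nat[of Z1 Z2] by simp
  have kw2: "keys w2 \<subseteq> xvars r t" using w ww keys_add_nat[of w1 w2] by simp
  have cx: "cnt x = cnt w1" unfolding w1_def using Z12(2) by (metis cnt_px cnt_py)
  have balx: "bal r s t (x + m) w \<longleftrightarrow> bal r s t m w2" for m
  proof -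
    have "keys (x + m) \<subseteq> xvars r s \<longleftrightarrow> keys m \<subseteq> xvars r s" using x by (auto simp: keys_add_nat)
    moreover have "cnt (x + m) = cnt w \<longleftrightarrow> cnt m = cnt w2" using cx ww by (simp add: cnt_add)
    ultimately show ?thesis using w kw2 by (simp add: bal_def)
  qed
  define D where "D m = (if bal r s t m w2 then mono (sig r s t (x + m) w) - mono (Z1 + sig r s t m w2)
      else (0 :: (nat \<times> nat \<times> nat, 'k) mpoly))" for m
  have eq: "phx w (x + m) = mono Z1 * phx w2 m + D m" for m
    by (simp add: phx_def D_def balx mono_mult)
  have DK: "D m \<in> K" for m
  proof (cases "bal r s t m w2")
    case True
    note S2 = sig[OF True]
    have "mono (sig r s t (x + m) w) - mono (Z1 + sig r s t m w2) \<in> K"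
    proof (rule sig_congr')
      show "keys (Z1 + sig r s t m w2) \<subseteq> zvars r s t" using kZ1 S2 by (simp add: keys_add_nat)
      show "pm_image px (Z1 + sig r s t m w2) = x + m" using Z12 S2 by (simp add: pm_image_add)
      show "pm_image py (Z1 + sig r s t m w2) = w" using S2 ww by (simp add: pm_image_add w1_def)
    qed
    then show ?thesis using True by (simp add: D_def)
  next
    case False then show ?thesis using ideal_zero[OF K] by (simp add: D_def)
  qed
  have "linP (\<lambda>m. phx w (x + m)) b = mono Z1 * linP (phx w2) b + linP D b"
    by (simp add: eq linP_fadd linP_fmult)
  also have "\<dots> \<in> K"
  proof (rule ideal_add[OF K])
    have "linP (phx w2) b \<in> K" using b kw2 by (simp add: Tx_iff)
    then show "mono Z1 * linP (phx w2) b \<in> K" by (rule ideal_mult[OF K mono_Rz[OF kZ1]])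
    show "linP D b \<in> K" by (rule linP_in_ideal[OF K DK])
  qed
  finally show ?thesis .
qed

lemma Ty_shift:
  assumes x: "keys x \<subseteq> xvars r t" and b: "b \<in> Ty" and u: "keys u \<subseteq> xvars r s"
  shows "linP (\<lambda>m. phy u (x + m)) b \<in> K"
proof (cases "\<exists>m\<in>keys b. bal r s t u (x + m)")
  case False
  then have "linP (\<lambda>m. phy u (x + m)) b = linP (\<lambda>m. 0) b"
    by (intro linP_cong) (auto simp: phy_def)
  also have "\<dots> = 0" by (simp add: linP_def)
  finally show ?thesis using ideal_zero[OF K] by simp
next
  case True
  then obtain m0 where m0: "m0 \<in> keys b" "bal r s t u (x + m0)" by blast
  note S = sig[OF m0(2)]
  obtain Z1 Z2 where Z12: "sig r s t u (x + m0) = Z1 + Z2" "pm_image py Z1 = x" "pm_image py Z2 = m0"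
    using pm_image_split[OF conjunct2[OF conjunct2[OF S]]] by blast
  define u1 where "u1 = pm_image px Z1"
  define u2 where "u2 = pm_image px Z2"
  have uu: "u = u1 + u2" using S Z12 by (simp add: u1_def u2_def pm_image_add)
  have kZ1: "keys Z1 \<subseteq> zvars r s t" using S Z12(1) keys_add_nat[of Z1 Z2] by simp
  have ku2: "keys u2 \<subseteq> xvars r s" using u uu keys_add_nat[of u1 u2] by simp
  have cx: "cnt x = cnt u1" unfolding u1_def using Z12(2) by (metis cnt_px cnt_py)
  have baly: "bal r s t u (x + m) \<longleftrightarrow> bal r s t u2 m" for m
  proof -
    have "keys (x + m) \<subseteq> xvars r t \<longleftrightarrow> keys m \<subseteq> xvars r t" using x by (auto simp: keys_add_nat)
    moreover have "cnt u = cnt (x + m) \<longleftrightarrow> cnt u2 = cnt m" using cx uu by (simp add: cnt_add)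
    ultimately show ?thesis using u ku2 by (simp add: bal_def)
  qed
  define D where "D m = (if bal r s t u2 m then mono (sig r s t u (x + m)) - mono (Z1 + sig r s t u2 m)
      else (0 :: (nat \<times> nat \<times> nat, 'k) mpoly))" for m
  have eq: "phy u (x + m) = mono Z1 * phy u2 m + D m" for m
    by (simp add: phy_def D_def baly mono_mult)
  have DK: "D m \<in> K" for m
  proof (cases "bal r s t u2 m")
    case True
    note S2 = sig[OF True]
    have "mono (sig r s t u (x + m)) - mono (Z1 + sig r s t u2 m) \<in> K"
    proof (rule sig_congr')
      show "keys (Z1 + sig r s t u2 m) \<subseteq> zvars r s t" using kZ1 S2 by (simp add: keys_add_nat)
      show "pm_image py (Z1 + sig r s t u2 m) = x + m" using Z12 S2 by (simp add: pm_image_add)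
      show "pm_image px (Z1 + sig r s t u2 m) = u" using S2 uu by (simp add: pm_image_add u1_def)
    qed
    then show ?thesis using True by (simp add: D_def)
  next
    case False then show ?thesis using ideal_zero[OF K] by (simp add: D_def)
  qed
  have "linP (\<lambda>m. phy u (x + m)) b = mono Z1 * linP (phy u2) b + linP D b"
    by (simp add: eq linP_fadd linP_fmult)
  also have "\<dots> \<in> K"
  proof (rule ideal_add[OF K])
    have "linP (phy u2) b \<in> K" using b ku2 by (simp add: Ty_iff)
    then show "mono Z1 * linP (phy u2) b \<in> K" by (rule ideal_mult[OF K mono_Rz[OF kZ1]])
    show "linP D b \<in> K" by (rule linP_in_ideal[OF K DK])
  qed
  finally show ?thesis .
qed

lemma Tx_ideal: "is_ideal (polys_in (xvars r s)) Tx"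
  unfolding is_ideal_def
proof (intro conjI)
  show "Tx \<subseteq> polys_in (xvars r s)" using Tx_iff by blast
  show "0 \<in> Tx" using ideal_zero[OF K] by (simp add: Tx_iff)
  show "\<forall>a\<in>Tx. \<forall>b\<in>Tx. a + b \<in> Tx"
  proof (intro ballI)
    fix a b :: "(nat \<times> nat, 'k) mpoly" assume a: "a \<in> Tx" and b: "b \<in> Tx"
    have "a + b \<in> polys_in (xvars r s)" using a b by (intro polys_in_add) (simp_all add: Tx_iff)
    moreover have "linP (phx w) (a + b) \<in> K" if "keys w \<subseteq> xvars r t" for w
      using a b that by (simp add: Tx_iff linP_add ideal_add[OF K])
    ultimately show "a + b \<in> Tx" by (simp add: Tx_iff)
  qed
  show "\<forall>a\<in>polys_in (xvars r s). \<forall>b\<in>Tx. a * b \<in> Tx"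
  proof (intro ballI)
    fix a b :: "(nat \<times> nat, 'k) mpoly" assume a: "a \<in> polys_in (xvars r s)" and b: "b \<in> Tx"
    have "a * b \<in> polys_in (xvars r s)" using a b by (intro polys_in_mult) (simp_all add: Tx_iff)
    moreover have "linP (phx w) (a * b) \<in> K" if w: "keys w \<subseteq> xvars r t" for w
    proof -
      have "linP (phx w) (a * b) = (\<Sum>x\<in>keys a. single 0 (lookup a x) * linP (\<lambda>m. phx w (x + m)) b)"
        by (subst mult_expand) (simp add: linP_sum linP_shift)
      also have "\<dots> \<in> K"
      proof (rule ideal_sum[OF K], rule ideal_scal[OF K])
        fix x assume "x \<in> keys a"
        then have "keys x \<subseteq> xvars r s" using a by (simp add: polys_in_def)
        then show "linP (\<lambda>m. phx w (x + m)) b \<in> K" by (rule Tx_shift[OF _ b w])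
      qed
      finally show ?thesis .
    qed
    ultimately show "a * b \<in> Tx" by (simp add: Tx_iff)
  qed
qed

lemma Ty_ideal: "is_ideal (polys_in (xvars r t)) Ty"
  unfolding is_ideal_def
proof (intro conjI)
  show "Ty \<subseteq> polys_in (xvars r t)" using Ty_iff by blast
  show "0 \<in> Ty" using ideal_zero[OF K] by (simp add: Ty_iff)
  show "\<forall>a\<in>Ty. \<forall>b\<in>Ty. a + b \<in> Ty"
  proof (intro ballI)
    fix a b :: "(nat \<times> nat, 'k) mpoly" assume a: "a \<in> Ty" and b: "b \<in> Ty"
    have "a + b \<in> polys_in (xvars r t)" using a b by (intro polys_in_add) (simp_all add: Ty_iff)
    moreover have "linP (phy u) (a + b) \<in> K" if "keys u \<subseteq> xvars r s" for u
      using a b that by (simp add: Ty_iff linP_add ideal_add[OF K])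
    ultimately show "a + b \<in> Ty" by (simp add: Ty_iff)
  qed
  show "\<forall>a\<in>polys_in (xvars r t). \<forall>b\<in>Ty. a * b \<in> Ty"
  proof (intro ballI)
    fix a b :: "(nat \<times> nat, 'k) mpoly" assume a: "a \<in> polys_in (xvars r t)" and b: "b \<in> Ty"
    have "a * b \<in> polys_in (xvars r t)" using a b by (intro polys_in_mult) (simp_all add: Ty_iff)
    moreover have "linP (phy u) (a * b) \<in> K" if u: "keys u \<subseteq> xvars r s" for u
    proof -
      have "linP (phy u) (a * b) = (\<Sum>x\<in>keys a. single 0 (lookup a x) * linP (\<lambda>m. phy u (x + m)) b)"
        by (subst mult_expand) (simp add: linP_sum linP_shift)
      also have "\<dots> \<in> K"
      proof (rule ideal_sum[OF K], rule ideal_scal[OF K])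
        fix x assume "x \<in> keys a"
        then have "keys x \<subseteq> xvars r t" using a by (simp add: polys_in_def)
        then show "linP (\<lambda>m. phy u (x + m)) b \<in> K" by (rule Ty_shift[OF _ b u])
      qed
      finally show ?thesis .
    qed
    ultimately show "a * b \<in> Ty" by (simp add: Ty_iff)
  qed
qed

lemma Tx_mono: "mono u \<in> Tx \<Longrightarrow> bal r s t u w \<Longrightarrow> mono (sig r s t u w) \<in> K"
proof -
  assume "mono u \<in> Tx" "bal r s t u w"
  then have "linP (phx w) (mono u) \<in> K" by (simp add: Tx_iff bal_def)
  then show ?thesis using \<open>bal r s t u w\<close> by (simp add: mono_def phx_def)
qed

lemma Ty_mono: "mono w \<in> Ty \<Longrightarrow> bal r s t u w \<Longrightarrow> mono (sig r s t u w) \<in> K"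
proof -
  assume "mono w \<in> Ty" "bal r s t u w"
  then have "linP (phy u) (mono w) \<in> K" by (simp add: Ty_iff bal_def)
  then show ?thesis using \<open>bal r s t u w\<close> by (simp add: mono_def phy_def)
qed

end



lemma zkeys_from_images:
  assumes "keys (pm_image px Z) \<subseteq> xvars r s" "keys (pm_image py Z) \<subseteq> xvars r t"
  shows "keys Z \<subseteq> zvars r s t"
proof
  fix e assume e: "e \<in> keys Z"
  obtain i j k where eijk: "e = (i, j, k)" by (cases e) auto
  have "(i, j) \<in> xvars r s" using in_keys_pm_image[OF e, of px] assms(1) eijk by auto
  moreover have "(i, k) \<in> xvars r t" using in_keys_pm_image[OF e, of py] assms(2) eijk by auto
  ultimately show "e \<in> zvars r s t" using eijk by (simp add: xvars_iff zvars_iff)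
qed

lemma cnt_sum: "cnt (\<Sum>i\<in>A. f i) = (\<Sum>i\<in>A. cnt (f i))"
  by (simp add: cnt_def pm_image_sum)

lemma valid_rep_cnt:
  assumes "valid_rep f is js" "m \<in> keys f"
  shows "cnt m = (\<Sum>l<length is. single (is ! l) 1)"
proof -
  have "m = (\<Sum>l<length is. single (is ! l, js m ! l) 1)" using assms unfolding valid_rep_def by blast
  then have "cnt m = cnt (\<Sum>l<length is. single (is ! l, js m ! l) 1)" by simp
  also have "\<dots> = (\<Sum>l<length is. single (is ! l) 1)" by (simp add: cnt_sum)
  finally show ?thesis .
qed

context zctx
begin

lemma init_F_in_Tx:
  assumes fR: "f \<in> polys_in (xvars r s)" and vr: "valid_rep f is js"
    and hK: "\<And>k. k \<in> index_tuples t is \<Longrightarrow> init (pullback_weight \<omega>1 \<omega>2) (lift_x f is js k) \<in> K"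
  shows "init \<omega>1 f \<in> Tx"
proof -
  let ?C = "(\<Sum>l<length is. single (is ! l) 1) :: nat \<Rightarrow>\<^sub>0 nat"
  have iR: "init \<omega>1 f \<in> polys_in (xvars r s)" using fR by (rule init_in_polys)
  have ki: "keys (init \<omega>1 f) \<subseteq> keys f" by (auto simp: keys_init)
  have kmX: "keys m \<subseteq> xvars r s" if "m \<in> keys f" for m using fR that by (simp add: polys_in_def)
  have "linP (phx w) (init \<omega>1 f) \<in> K" if w: "keys w \<subseteq> xvars r t" for w
  proof (cases "cnt w = ?C")
    case False
    have "linP (phx w) (init \<omega>1 f) = linP (\<lambda>m. 0) (init \<omega>1 f)"
    proof (rule linP_cong)
      fix m assume "m \<in> keys (init \<omega>1 f)"
      then have "cnt m = ?C" using valid_rep_cnt[OF vr] ki by blast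
      then show "phx w m = 0" using False by (simp add: phx_def bal_def)
    qed
    also have "\<dots> = 0" by (simp add: linP_def)
    finally show ?thesis using ideal_zero[OF K] by simp
  next
    case True
    obtain k where k: "k \<in> index_tuples t is" "(\<Sum>l<length is. single (is ! l, k ! l) 1) = w"
      using k_ex[OF w True] by blast
    define Zm where "Zm m = (\<Sum>l<length is. single (is ! l, js m ! l, k ! l) (1::nat))" for m
    have pxZ: "pm_image px (Zm m) = m" if "m \<in> keys f" for m
    proof -
      have "pm_image px (Zm m) = (\<Sum>l<length is. single (is ! l, js m ! l) 1)"
        by (simp add: Zm_def pm_image_sum)
      also have "\<dots> = m" using vr that unfolding valid_rep_def by metis
      finally show ?thesis .
    qed
    have pyZ: "pm_image py (Zm m) = w" for m
      using k(2) by (simp add: Zm_def pm_image_sum)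
    have kZ: "keys (Zm m) \<subseteq> zvars r s t" if "m \<in> keys f" for m
      by (rule zkeys_from_images) (simp_all add: pxZ[OF that] pyZ kmX[OF that] w)
    have inj: "inj_on Zm (keys f)" by (metis inj_onI pxZ)
    have lf: "lift_x f is js k = (\<Sum>m\<in>keys f. single (Zm m) (lookup f m))"
      by (simp add: lift_x_def Zm_def)
    have il: "init (pullback_weight \<omega>1 \<omega>2) (lift_x f is js k) = (\<Sum>m\<in>keys (init \<omega>1 f). single (Zm m) (lookup f m))"
      unfolding lf by (rule init_map[OF inj]) (simp add: mweight_pullback pxZ pyZ)
    have "linP (phx w) (init \<omega>1 f) = (\<Sum>m\<in>keys (init \<omega>1 f). single 0 (lookup f m) * mono (sig r s t m w))"
    proof -
      have "linP (phx w) (init \<omega>1 f) = (\<Sum>m\<in>keys (init \<omega>1 f). single 0 (lookup (init \<omega>1 f) m) * phx w m)"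
        by (simp add: linP_def)
      also have "\<dots> = (\<Sum>m\<in>keys (init \<omega>1 f). single 0 (lookup f m) * mono (sig r s t m w))"
      proof (rule sum.cong[OF refl])
        fix m assume m: "m \<in> keys (init \<omega>1 f)"
        then have mf: "m \<in> keys f" using ki by blast
        have "bal r s t m w" using kmX[OF mf] w valid_rep_cnt[OF vr mf] True by (simp add: bal_def)
        moreover have "lookup (init \<omega>1 f) m = lookup f m" using m by (simp add: keys_init lookup_init)
        ultimately show "single 0 (lookup (init \<omega>1 f) m) * phx w m = single 0 (lookup f m) * mono (sig r s t m w)"
          by (simp add: phx_def)
      qed
      finally show ?thesis .
    qed
    also have "\<dots> = init (pullback_weight \<omega>1 \<omega>2) (lift_x f is js k)
        + (\<Sum>m\<in>keys (init \<omega>1 f). single 0 (lookup f m) * (mono (sig r s t m w) - mono (Zm m)))"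
      by (simp add: il right_diff_distrib sum_subtractf scal_mono)
    also have "\<dots> \<in> K"
    proof (rule ideal_add[OF K])
      show "init (pullback_weight \<omega>1 \<omega>2) (lift_x f is js k) \<in> K" using hK[OF k(1)] .
      show "(\<Sum>m\<in>keys (init \<omega>1 f). single 0 (lookup f m) * (mono (sig r s t m w) - mono (Zm m))) \<in> K"
      proof (rule ideal_sum[OF K], rule ideal_scal[OF K])
        fix m assume "m \<in> keys (init \<omega>1 f)"
        then have mf: "m \<in> keys f" using ki by blast
        show "mono (sig r s t m w) - mono (Zm m) \<in> K"
          by (rule sig_congr'[OF kZ[OF mf] pxZ[OF mf] pyZ])
      qed
    qed
    finally show ?thesis .
  qed
  then show ?thesis using iR by (simp add: Tx_iff)
qed

lemma init_G_in_Ty: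
  assumes gR: "g \<in> polys_in (xvars r t)" and vr: "valid_rep g is ks"
    and hK: "\<And>j. j \<in> index_tuples s is \<Longrightarrow> init (pullback_weight \<omega>1 \<omega>2) (lift_y g is ks j) \<in> K"
  shows "init \<omega>2 g \<in> Ty"
proof -
  let ?C = "(\<Sum>l<length is. single (is ! l) 1) :: nat \<Rightarrow>\<^sub>0 nat"
  have iR: "init \<omega>2 g \<in> polys_in (xvars r t)" using gR by (rule init_in_polys)
  have ki: "keys (init \<omega>2 g) \<subseteq> keys g" by (auto simp: keys_init)
  have kmY: "keys m \<subseteq> xvars r t" if "m \<in> keys g" for m using gR that by (simp add: polys_in_def)
  have "linP (phy u) (init \<omega>2 g) \<in> K" if u: "keys u \<subseteq> xvars r s" for u
  proof (cases "cnt u = ?C")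
    case False
    have "linP (phy u) (init \<omega>2 g) = linP (\<lambda>m. 0) (init \<omega>2 g)"
    proof (rule linP_cong)
      fix m assume "m \<in> keys (init \<omega>2 g)"
      then have "cnt m = ?C" using valid_rep_cnt[OF vr] ki by blast
      then show "phy u m = 0" using False by (simp add: phy_def bal_def)
    qed
    also have "\<dots> = 0" by (simp add: linP_def)
    finally show ?thesis using ideal_zero[OF K] by simp
  next
    case True
    obtain j where j: "j \<in> index_tuples s is" "(\<Sum>l<length is. single (is ! l, j ! l) 1) = u"
      using k_ex[OF u True] by blast
    define Zm where "Zm m = (\<Sum>l<length is. single (is ! l, j ! l, ks m ! l) (1::nat))" for m
    have pyZ: "pm_image py (Zm m) = m" if "m \<in> keys g" for m
    proof -
      have "pm_image py (Zm m) = (\<Sum>l<length is. single (is ! l, ks m ! l) 1)"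
        by (simp add: Zm_def pm_image_sum)
      also have "\<dots> = m" using vr that unfolding valid_rep_def by metis
      finally show ?thesis .
    qed
    have pxZ: "pm_image px (Zm m) = u" for m
      using j(2) by (simp add: Zm_def pm_image_sum)
    have kZ: "keys (Zm m) \<subseteq> zvars r s t" if "m \<in> keys g" for m
      by (rule zkeys_from_images) (simp_all add: pyZ[OF that] pxZ kmY[OF that] u)
    have inj: "inj_on Zm (keys g)" by (metis inj_onI pyZ)
    have lf: "lift_y g is ks j = (\<Sum>m\<in>keys g. single (Zm m) (lookup g m))"
      by (simp add: lift_y_def Zm_def)
    have il: "init (pullback_weight \<omega>1 \<omega>2) (lift_y g is ks j) = (\<Sum>m\<in>keys (init \<omega>2 g). single (Zm m) (lookup g m))"
      unfolding lf by (rule init_map[OF inj]) (simp add: mweight_pullback pxZ pyZ add.commute)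
    have "linP (phy u) (init \<omega>2 g) = (\<Sum>m\<in>keys (init \<omega>2 g). single 0 (lookup g m) * mono (sig r s t u m))"
    proof -
      have "linP (phy u) (init \<omega>2 g) = (\<Sum>m\<in>keys (init \<omega>2 g). single 0 (lookup (init \<omega>2 g) m) * phy u m)"
        by (simp add: linP_def)
      also have "\<dots> = (\<Sum>m\<in>keys (init \<omega>2 g). single 0 (lookup g m) * mono (sig r s t u m))"
      proof (rule sum.cong[OF refl])
        fix m assume m: "m \<in> keys (init \<omega>2 g)"
        then have mf: "m \<in> keys g" using ki by blast
        have "bal r s t u m" using kmY[OF mf] u valid_rep_cnt[OF vr mf] True by (simp add: bal_def)
        moreover have "lookup (init \<omega>2 g) m = lookup g m" using m by (simp add: keys_init lookup_init)
        ultimately show "single 0 (lookup (init \<omega>2 g) m) * phy u m = single 0 (lookup g m) * mono (sig r s t u m)"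
          by (simp add: phy_def)
      qed
      finally show ?thesis .
    qed
    also have "\<dots> = init (pullback_weight \<omega>1 \<omega>2) (lift_y g is ks j)
        + (\<Sum>m\<in>keys (init \<omega>2 g). single 0 (lookup g m) * (mono (sig r s t u m) - mono (Zm m)))"
      by (simp add: il right_diff_distrib sum_subtractf scal_mono)
    also have "\<dots> \<in> K"
    proof (rule ideal_add[OF K])
      show "init (pullback_weight \<omega>1 \<omega>2) (lift_y g is ks j) \<in> K" using hK[OF j(1)] .
      show "(\<Sum>m\<in>keys (init \<omega>2 g). single 0 (lookup g m) * (mono (sig r s t u m) - mono (Zm m))) \<in> K"
      proof (rule ideal_sum[OF K], rule ideal_scal[OF K])
        fix m assume "m \<in> keys (init \<omega>2 g)"
        then have mf: "m \<in> keys g" using ki by blast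
        show "mono (sig r s t u m) - mono (Zm m) \<in> K"
          by (rule sig_congr'[OF kZ[OF mf] pxZ pyZ[OF mf]])
      qed
    qed
    finally show ?thesis .
  qed
  then show ?thesis using iR by (simp add: Ty_iff)
qed

end



section \<open>Finiteness of graded pieces\<close>

lemma finite_xvars: "finite (xvars r s)"
proof -
  have "xvars r s \<subseteq> (\<Union>i\<in>{1..r}. {i} \<times> {1..s i})" by (auto simp: xvars_def)
  moreover have "finite (\<Union>i\<in>{1..r}. {i} \<times> {1..s i})" by auto
  ultimately show ?thesis by (rule finite_subset)
qed

lemma lookup_le_tdeg: "lookup m v \<le> tdeg m"
proof (cases "v \<in> keys m")
  case True
  then show ?thesis unfolding tdeg_def by (intro member_le_sum) auto
next
  case False then show ?thesis by (simp add: in_keys_iff)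
qed

lemma finite_bounded_monos:
  assumes X: "finite X"
  shows "finite {m :: 'v \<Rightarrow>\<^sub>0 nat. keys m \<subseteq> X \<and> tdeg m \<le> N}"
proof -
  let ?S = "{m :: 'v \<Rightarrow>\<^sub>0 nat. keys m \<subseteq> X \<and> tdeg m \<le> N}"
  let ?B = "{f :: 'v \<Rightarrow> nat. \<forall>x. (x \<in> X \<longrightarrow> f x \<in> {..N}) \<and> (x \<notin> X \<longrightarrow> f x = 0)}"
  have "inj_on lookup ?S" by (rule inj_onI) (rule poly_mapping_eqI, simp)
  moreover have "lookup ` ?S \<subseteq> ?B"
  proof
    fix f assume "f \<in> lookup ` ?S"
    then obtain m where m: "m \<in> ?S" "f = lookup m" by blast
    have "lookup m x \<le> N" for x using m(1) lookup_le_tdeg[of m x] by simp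
    moreover have "x \<notin> X \<Longrightarrow> lookup m x = 0" for x using m(1) by (auto simp: in_keys_iff)
    ultimately show "f \<in> ?B" using m(2) by simp
  qed
  moreover have "finite ?B" using X by (intro finite_set_of_finite_funs) auto
  ultimately show ?thesis by (meson finite_imageD finite_subset)
qed

lemma omega_tdeg:
  fixes a :: "nat \<Rightarrow> 'd::finite \<Rightarrow> int" and \<omega> :: "'d \<Rightarrow> rat"
  assumes omega: "\<forall>i\<in>{1..r}. (\<Sum>c\<in>UNIV. \<omega> c * of_int (a i c)) = 1"
    and km: "keys m \<subseteq> xvars r s"
  shows "(\<Sum>c\<in>UNIV. \<omega> c * of_int (mdeg a m c)) = of_nat (tdeg m)"
proof -
  have "(\<Sum>c\<in>UNIV. \<omega> c * of_int (mdeg a m c))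
      = (\<Sum>c\<in>UNIV. \<Sum>v\<in>keys m. of_nat (lookup m v) * (\<omega> c * of_int (a (fst v) c)))"
    by (simp add: mdeg_def sum_distrib_left mult_ac)
  also have "\<dots> = (\<Sum>v\<in>keys m. \<Sum>c\<in>UNIV. of_nat (lookup m v) * (\<omega> c * of_int (a (fst v) c)))"
    by (rule sum.swap)
  also have "\<dots> = (\<Sum>v\<in>keys m. of_nat (lookup m v) * (\<Sum>c\<in>UNIV. \<omega> c * of_int (a (fst v) c)))"
    by (simp add: sum_distrib_left)
  also have "\<dots> = (\<Sum>v\<in>keys m. of_nat (lookup m v))"
  proof (rule sum.cong[OF refl])
    fix v assume "v \<in> keys m"
    then have "fst v \<in> {1..r}" using km by (auto simp: xvars_def)
    then show "of_nat (lookup m v) * (\<Sum>c\<in>UNIV. \<omega> c * of_int (a (fst v) c)) = of_nat (lookup m v)"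
      using omega by simp
  qed
  also have "\<dots> = of_nat (tdeg m)" by (simp add: tdeg_def)
  finally show ?thesis .
qed

lemma fin_deg_xvars:
  fixes a :: "nat \<Rightarrow> 'd::finite \<Rightarrow> int" and \<omega> :: "'d \<Rightarrow> rat"
  assumes omega: "\<forall>i\<in>{1..r}. (\<Sum>c\<in>UNIV. \<omega> c * of_int (a i c)) = 1"
  shows "finite {m. keys m \<subseteq> xvars r s \<and> mdeg a m = D}"
proof -
  define N :: nat where "N = nat \<lfloor>(\<Sum>c\<in>UNIV. \<omega> c * of_int (D c))\<rfloor>"
  have "tdeg m \<le> N" if km: "keys m \<subseteq> xvars r s" and md: "mdeg a m = D" for m
  proof -
    have "(\<Sum>c\<in>UNIV. \<omega> c * of_int (D c)) = of_nat (tdeg m)" using omega_tdeg[OF omega km] md by simp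
    then show "tdeg m \<le> N" unfolding N_def by simp
  qed
  then have "{m. keys m \<subseteq> xvars r s \<and> mdeg a m = D} \<subseteq> {m. keys m \<subseteq> xvars r s \<and> tdeg m \<le> N}"
    by blast
  moreover have "finite {m. keys m \<subseteq> xvars r s \<and> tdeg m \<le> N}"
    by (rule finite_bounded_monos[OF finite_xvars])
  ultimately show ?thesis by (rule finite_subset)
qed

definition emb :: "(nat \<times> nat \<times> nat \<Rightarrow>\<^sub>0 nat) \<Rightarrow> ((nat \<times> nat) + (nat \<times> nat) \<Rightarrow>\<^sub>0 nat)" where
  "emb Z = pm_image Inl (pm_image px Z) + pm_image Inr (pm_image py Z)"

lemma phiB_eq: "phiB q = linP (\<lambda>Z. mono (emb Z)) q"
proof -
  have e: "(\<lambda>(i, j, k). Var (Inl (i, j)) * Var (Inr (i, k))) = (\<lambda>v. Var ((Inl \<circ> px) v) * Var ((Inr \<circ> py) v))"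
    by (auto simp: fun_eq_iff px_def py_def)
  show ?thesis
    unfolding phiB_def e subst_two
    by (simp add: linP_def scal_mono emb_def pm_image_comp comp_def)
qed

lemma xpart_emb[simp]: "xpart (emb Z) = pm_image px Z" by (simp add: emb_def xpart_add)
lemma ypart_emb[simp]: "ypart (emb Z) = pm_image py Z" by (simp add: emb_def ypart_add)

lemma mweight_emb: "mweight (case_sum \<omega>1 \<omega>2) (emb Z) = mweight (pullback_weight \<omega>1 \<omega>2) Z"
  by (simp add: mweight_split mweight_pullback)

lemma init_const_weight:
  assumes "\<And>m. m \<in> keys q \<Longrightarrow> mweight \<nu> m = c"
  shows "init \<nu> q = q"
proof (cases "q = 0")
  case True then show ?thesis by simp
next
  case False
  then obtain m where "m \<in> keys q" "mweight \<nu> m = maxw \<nu> q" using maxw_attained by blast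
  then have "maxw \<nu> q = c" using assms by simp
  then show ?thesis unfolding init_eq by (intro pfilter_all) (simp add: assms)
qed

lemma keys_sum_single_nat:
  "l < (n::nat) \<Longrightarrow> e l \<in> keys (\<Sum>l<n. single (e l) (1::nat))"
proof -
  assume l: "l < n"
  have A: "lookup (single (e l) (1::nat)) (e l) \<le> (\<Sum>l'<n. lookup (single (e l') (1::nat)) (e l))"
    using l by (intro member_le_sum) simp_all
  have A': "(1::nat) \<le> (\<Sum>l'<n. lookup (single (e l') (1::nat)) (e l))" using A by simp
  have "lookup (\<Sum>l'<n. single (e l') (1::nat)) (e l) \<noteq> 0"
    unfolding lookup_sum using A' by linarith
  then show ?thesis by (simp add: in_keys_iff)
qed

lemma keys_sum_single_nat_sub:
  "keys (\<Sum>l<(n::nat). single (e l) (1::nat)) \<subseteq> e ` {..<n}"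
proof
  fix x assume "x \<in> keys (\<Sum>l<n. single (e l) (1::nat))"
  then have "x \<in> (\<Union>l\<in>{..<n}. keys (single (e l) (1::nat)))"
    using keys_sum[of "\<lambda>l. single (e l) (1::nat)" "{..<n}"] by blast
  then show "x \<in> e ` {..<n}" by auto
qed



lemma linP_minus: "linP \<phi> (p - q) = linP \<phi> p - linP \<phi> q"
  using linP_add[of \<phi> "p - q" q] by simp

lemma sum_single0: "(\<Sum>x\<in>A. single 0 (f x)) = single 0 (\<Sum>x\<in>A. f x)"
  by (induction A rule: infinite_finite_induct) (simp_all add: single_add)

lemma phiB_sum: "phiB q = (\<Sum>Z\<in>keys q. single (emb Z) (lookup q Z))"
  by (simp add: phiB_eq linP_def scal_mono)

lemma keys_phiB: "keys (phiB q) \<subseteq> emb ` keys q"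
proof
  fix x assume "x \<in> keys (phiB q)"
  then have "x \<in> (\<Union>Z\<in>keys q. keys (single (emb Z) (lookup q Z)))"
    using keys_sum[of "\<lambda>Z. single (emb Z) (lookup q Z)" "keys q"] unfolding phiB_sum by blast
  then show "x \<in> emb ` keys q" by (auto split: if_splits)
qed

lemma lookup_phiB: "lookup (phiB q) M = (\<Sum>Z\<in>{Z \<in> keys q. emb Z = M}. lookup q Z)"
proof -
  have "lookup (phiB q) M = (\<Sum>Z\<in>keys q. if emb Z = M then lookup q Z else 0)"
    unfolding phiB_sum lookup_sum by (intro sum.cong) (auto simp: lookup_single when_def)
  also have "\<dots> = (\<Sum>Z\<in>{Z \<in> keys q. emb Z = M}. lookup q Z)"
    by (simp add: sum.inter_filter)
  finally show ?thesis .
qed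

lemma emb_eq_iff: "emb Z = emb Z' \<longleftrightarrow> pm_image px Z = pm_image px Z' \<and> pm_image py Z = pm_image py Z'"
  by (metis emb_def xpart_emb ypart_emb)

lemma subst_Inl_in:
  assumes "f \<in> polys_in V1"
  shows "subst (\<lambda>v. Var (Inl v)) f \<in> polys_in (Inl ` V1 \<union> Inr ` V2)"
  unfolding subst_one
proof (rule polys_in_sum, rule polys_in_single)
  fix m assume "m \<in> keys f"
  then have "keys m \<subseteq> V1" using assms by (simp add: polys_in_def)
  then show "keys (pm_image Inl m) \<subseteq> Inl ` V1 \<union> Inr ` V2" using keys_pm_image[of Inl m] by blast
qed

lemma subst_Inr_in:
  assumes "g \<in> polys_in V2"
  shows "subst (\<lambda>v. Var (Inr v)) g \<in> polys_in (Inl ` V1 \<union> Inr ` V2)"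
  unfolding subst_one
proof (rule polys_in_sum, rule polys_in_single)
  fix m assume "m \<in> keys g"
  then have "keys m \<subseteq> V2" using assms by (simp add: polys_in_def)
  then show "keys (pm_image Inr m) \<subseteq> Inl ` V1 \<union> Inr ` V2" using keys_pm_image[of Inr m] by blast
qed

lemma TFP_ideal_is_ideal:
  fixes I J :: "(nat \<times> nat, 'k::comm_ring_1) mpoly set"
  assumes I: "I \<subseteq> polys_in (xvars r s)" and J: "J \<subseteq> polys_in (xvars r t)"
  shows "is_ideal (polys_in (Inl ` xvars r s \<union> Inr ` xvars r t))
    (ideal_gen (polys_in (Inl ` xvars r s \<union> Inr ` xvars r t)) (subst (\<lambda>v. Var (Inl v)) ` I \<union> subst (\<lambda>v. Var (Inr v)) ` J))"
  by (rule ideal_gen_is_ideal) (use I J subst_Inl_in subst_Inr_in in blast)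

lemma liftx_in_TFP:
  fixes I J :: "(nat \<times> nat, 'k::comm_ring_1) mpoly set"
  assumes I: "I \<subseteq> polys_in (xvars r s)" and J: "J \<subseteq> polys_in (xvars r t)"
    and f: "f \<in> I" and vr: "valid_rep f is js" and k: "k \<in> index_tuples t is"
  shows "lift_x f is js k \<in> toric_fiber_product r s t I J"
proof -
  let ?R = "polys_in (Inl ` xvars r s \<union> Inr ` xvars r t) :: ((nat \<times> nat) + (nat \<times> nat), 'k) mpoly set"
  let ?Id = "ideal_gen ?R (subst (\<lambda>v. Var (Inl v)) ` I \<union> subst (\<lambda>v. Var (Inr v)) ` J)"
  have Id: "is_ideal ?R ?Id" by (rule TFP_ideal_is_ideal[OF I J])
  show ?thesis
  proof (cases "f = 0")
    case True
    then have "lift_x f is js k = 0" by (simp add: lift_x_def)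
    moreover have "phiB (0 :: (nat \<times> nat \<times> nat, 'k) mpoly) \<in> ?Id" using ideal_zero[OF Id] by (simp add: phiB_eq)
    ultimately show ?thesis by (simp add: toric_fiber_product_def)
  next
    case False
    then obtain m0 where m0: "m0 \<in> keys f" by (metis keys_eq_empty ex_in_conv)
    have fR: "f \<in> polys_in (xvars r s)" using f I by blast
    have kmX: "keys m \<subseteq> xvars r s" if "m \<in> keys f" for m using fR that by (simp add: polys_in_def)
    have m0e: "m0 = (\<Sum>l<length is. single (is ! l, js m0 ! l) 1)" using vr m0 unfolding valid_rep_def by blast
    have ir: "1 \<le> is ! l \<and> is ! l \<le> r" if "l < length is" for l
    proof -
      have "(is ! l, js m0 ! l) \<in> keys m0"
        using keys_sum_single_nat[OF that, of "\<lambda>l. (is ! l, js m0 ! l)"] m0e by simp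
      then show ?thesis using kmX[OF m0] by (auto simp: xvars_iff)
    qed
    define w where "w = (\<Sum>l<length is. single (is ! l, k ! l) (1::nat))"
    have kw: "keys w \<subseteq> xvars r t"
    proof
      fix x assume "x \<in> keys w"
      then obtain l where "l < length is" "x = (is ! l, k ! l)"
        using keys_sum_single_nat_sub[of "\<lambda>l. (is ! l, k ! l)" "length is"] unfolding w_def by blast
      then show "x \<in> xvars r t" using ir k by (auto simp: index_tuples_def xvars_iff)
    qed
    define Zm where "Zm m = (\<Sum>l<length is. single (is ! l, js m ! l, k ! l) (1::nat))" for m
    have pxZ: "pm_image px (Zm m) = m" if "m \<in> keys f" for m
    proof -
      have "pm_image px (Zm m) = (\<Sum>l<length is. single (is ! l, js m ! l) 1)"
        by (simp add: Zm_def pm_image_sum)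
      also have "\<dots> = m" using vr that unfolding valid_rep_def by metis
      finally show ?thesis .
    qed
    have pyZ: "pm_image py (Zm m) = w" for m by (simp add: Zm_def w_def pm_image_sum)
    have kZ: "keys (Zm m) \<subseteq> zvars r s t" if "m \<in> keys f" for m
      by (rule zkeys_from_images) (simp_all add: pxZ[OF that] pyZ kmX[OF that] kw)
    have lf: "lift_x f is js k = (\<Sum>m\<in>keys f. single (Zm m) (lookup f m))"
      by (simp add: lift_x_def Zm_def)
    have inR: "lift_x f is js k \<in> polys_in (zvars r s t)"
      unfolding lf by (intro polys_in_sum polys_in_single kZ)
    have "phiB (lift_x f is js k) = (\<Sum>m\<in>keys f. single 0 (lookup f m) * mono (emb (Zm m)))"
      by (simp add: lf phiB_eq linP_sum)
    also have "\<dots> = (\<Sum>m\<in>keys f. single (pm_image Inl m) (lookup f m) * mono (pm_image Inr w))"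
      by (intro sum.cong) (simp_all add: emb_def pxZ pyZ mono_def mult_single)
    also have "\<dots> = subst (\<lambda>v. Var (Inl v)) f * mono (pm_image Inr w)"
      by (simp add: subst_one sum_distrib_right)
    also have "\<dots> \<in> ?Id"
    proof (rule ideal_mult_right[OF Id])
      show "subst (\<lambda>v. Var (Inl v)) f \<in> ?Id" by (rule subsetD[OF ideal_gen_base]) (use f in blast)
      have "keys (pm_image Inr w) \<subseteq> Inl ` xvars r s \<union> Inr ` xvars r t"
        using keys_pm_image[of Inr w] kw by blast
      then show "mono (pm_image Inr w) \<in> ?R" by (rule polys_in_mono)
    qed
    finally show ?thesis using inR by (simp add: toric_fiber_product_def)
  qed
qed

lemma lifty_in_TFP:
  fixes I J :: "(nat \<times> nat, 'k::comm_ring_1) mpoly set"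
  assumes I: "I \<subseteq> polys_in (xvars r s)" and J: "J \<subseteq> polys_in (xvars r t)"
    and g: "g \<in> J" and vr: "valid_rep g is ks" and j: "j \<in> index_tuples s is"
  shows "lift_y g is ks j \<in> toric_fiber_product r s t I J"
proof -
  let ?R = "polys_in (Inl ` xvars r s \<union> Inr ` xvars r t) :: ((nat \<times> nat) + (nat \<times> nat), 'k) mpoly set"
  let ?Id = "ideal_gen ?R (subst (\<lambda>v. Var (Inl v)) ` I \<union> subst (\<lambda>v. Var (Inr v)) ` J)"
  have Id: "is_ideal ?R ?Id" by (rule TFP_ideal_is_ideal[OF I J])
  show ?thesis
  proof (cases "g = 0")
    case True
    then have "lift_y g is ks j = 0" by (simp add: lift_y_def)
    moreover have "phiB (0 :: (nat \<times> nat \<times> nat, 'k) mpoly) \<in> ?Id" using ideal_zero[OF Id] by (simp add: phiB_eq)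
    ultimately show ?thesis by (simp add: toric_fiber_product_def)
  next
    case False
    then obtain m0 where m0: "m0 \<in> keys g" by (metis keys_eq_empty ex_in_conv)
    have gR: "g \<in> polys_in (xvars r t)" using g J by blast
    have kmY: "keys m \<subseteq> xvars r t" if "m \<in> keys g" for m using gR that by (simp add: polys_in_def)
    have m0e: "m0 = (\<Sum>l<length is. single (is ! l, ks m0 ! l) 1)" using vr m0 unfolding valid_rep_def by blast
    have ir: "1 \<le> is ! l \<and> is ! l \<le> r" if "l < length is" for l
    proof -
      have "(is ! l, ks m0 ! l) \<in> keys m0"
        using keys_sum_single_nat[OF that, of "\<lambda>l. (is ! l, ks m0 ! l)"] m0e by simp
      then show ?thesis using kmY[OF m0] by (auto simp: xvars_iff)
    qed
    define u where "u = (\<Sum>l<length is. single (is ! l, j ! l) (1::nat))"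
    have ku: "keys u \<subseteq> xvars r s"
    proof
      fix x assume "x \<in> keys u"
      then obtain l where "l < length is" "x = (is ! l, j ! l)"
        using keys_sum_single_nat_sub[of "\<lambda>l. (is ! l, j ! l)" "length is"] unfolding u_def by blast
      then show "x \<in> xvars r s" using ir j by (auto simp: index_tuples_def xvars_iff)
    qed
    define Zm where "Zm m = (\<Sum>l<length is. single (is ! l, j ! l, ks m ! l) (1::nat))" for m
    have pyZ: "pm_image py (Zm m) = m" if "m \<in> keys g" for m
    proof -
      have "pm_image py (Zm m) = (\<Sum>l<length is. single (is ! l, ks m ! l) 1)"
        by (simp add: Zm_def pm_image_sum)
      also have "\<dots> = m" using vr that unfolding valid_rep_def by metis
      finally show ?thesis .
    qed
    have pxZ: "pm_image px (Zm m) = u" for m by (simp add: Zm_def u_def pm_image_sum)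
    have kZ: "keys (Zm m) \<subseteq> zvars r s t" if "m \<in> keys g" for m
      by (rule zkeys_from_images) (simp_all add: pyZ[OF that] pxZ kmY[OF that] ku)
    have lf: "lift_y g is ks j = (\<Sum>m\<in>keys g. single (Zm m) (lookup g m))"
      by (simp add: lift_y_def Zm_def)
    have inR: "lift_y g is ks j \<in> polys_in (zvars r s t)"
      unfolding lf by (intro polys_in_sum polys_in_single kZ)
    have "phiB (lift_y g is ks j) = (\<Sum>m\<in>keys g. single 0 (lookup g m) * mono (emb (Zm m)))"
      by (simp add: lf phiB_eq linP_sum)
    also have "\<dots> = (\<Sum>m\<in>keys g. mono (pm_image Inl u) * single (pm_image Inr m) (lookup g m))"
      by (intro sum.cong) (simp_all add: emb_def pxZ pyZ mono_def mult_single)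
    also have "\<dots> = mono (pm_image Inl u) * subst (\<lambda>v. Var (Inr v)) g"
      by (simp add: subst_one sum_distrib_left)
    also have "\<dots> \<in> ?Id"
    proof (rule ideal_mult[OF Id])
      show "subst (\<lambda>v. Var (Inr v)) g \<in> ?Id" by (rule subsetD[OF ideal_gen_base]) (use g in blast)
      have "keys (pm_image Inl u) \<subseteq> Inl ` xvars r s \<union> Inr ` xvars r t"
        using keys_pm_image[of Inl u] ku by blast
      then show "mono (pm_image Inl u) \<in> ?R" by (rule polys_in_mono)
    qed
    finally show ?thesis using inR by (simp add: toric_fiber_product_def)
  qed
qed

lemma quad_form:
  assumes "q \<in> QuadB r s t"
  shows "\<exists>i j1 j2 k1 k2. q = mono (single (i, j1, k2) 1 + single (i, j2, k1) 1) - mono (single (i, j1, k1) 1 + single (i, j2, k2) 1)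
     \<and> 1 \<le> i \<and> i \<le> r \<and> 1 \<le> j1 \<and> j1 < j2 \<and> j2 \<le> s i \<and> 1 \<le> k1 \<and> k1 < k2 \<and> k2 \<le> t i"
  using assms unfolding QuadB_def by (auto simp: Var_Var)

lemma quad_in_TFP:
  fixes I J :: "(nat \<times> nat, 'k::comm_ring_1) mpoly set"
  assumes I: "I \<subseteq> polys_in (xvars r s)" and J: "J \<subseteq> polys_in (xvars r t)"
    and q: "q \<in> (QuadB r s t :: (nat \<times> nat \<times> nat, 'k) mpoly set)"
  shows "q \<in> toric_fiber_product r s t I J \<and> init (pullback_weight \<omega>1 \<omega>2) q = q"
proof -
  let ?R = "polys_in (Inl ` xvars r s \<union> Inr ` xvars r t) :: ((nat \<times> nat) + (nat \<times> nat), 'k) mpoly set"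
  let ?Id = "ideal_gen ?R (subst (\<lambda>v. Var (Inl v)) ` I \<union> subst (\<lambda>v. Var (Inr v)) ` J)"
  have Id: "is_ideal ?R ?Id" by (rule TFP_ideal_is_ideal[OF I J])
  obtain i j1 j2 k1 k2 where qe: "q = mono (single (i, j1, k2) 1 + single (i, j2, k1) 1) - mono (single (i, j1, k1) 1 + single (i, j2, k2) 1)"
    and rg: "1 \<le> i" "i \<le> r" "1 \<le> j1" "j1 < j2" "j2 \<le> s i" "1 \<le> k1" "k1 < k2" "k2 \<le> t i"
    using quad_form[OF q] by blast
  define A where "A = single (i, j1, k2) 1 + single (i, j2, k1) (1::nat)"
  define B where "B = single (i, j1, k1) 1 + single (i, j2, k2) (1::nat)"
  have q': "q = mono A - mono B" using qe by (simp add: A_def B_def)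
  have px: "pm_image px A = pm_image px B" by (simp add: A_def B_def pm_image_add)
  have py: "pm_image py A = pm_image py B" by (simp add: A_def B_def pm_image_add add.commute)
  have eAB: "emb A = emb B" using px py by (simp add: emb_def)
  have kA: "keys A \<subseteq> zvars r s t" using rg by (auto simp: A_def keys_add_nat zvars_iff)
  have kB: "keys B \<subseteq> zvars r s t" using rg by (auto simp: B_def keys_add_nat zvars_iff)
  have inR: "q \<in> polys_in (zvars r s t)" unfolding q' using kA kB by (intro polys_in_minus polys_in_mono)
  have "phiB q = 0" unfolding q' phiB_eq linP_minus by (simp add: mono_def eAB)
  then have "phiB q \<in> ?Id" using ideal_zero[OF Id] by simp
  then have tf: "q \<in> toric_fiber_product r s t I J" using inR by (simp add: toric_fiber_product_def)
  have kq: "keys q \<subseteq> {A, B}"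
  proof
    fix x assume "x \<in> keys q"
    then have "lookup q x \<noteq> 0" by (simp add: in_keys_iff)
    then show "x \<in> {A, B}" unfolding q' by (auto simp: lookup_minus lookup_mono split: if_splits)
  qed
  have "init (pullback_weight \<omega>1 \<omega>2) q = q"
  proof (rule init_const_weight)
    fix m assume "m \<in> keys q"
    then have "m = A \<or> m = B" using kq by blast
    then show "mweight (pullback_weight \<omega>1 \<omega>2) m = mweight (pullback_weight \<omega>1 \<omega>2) A"
      using px py by (auto simp: mweight_pullback)
  qed
  then show ?thesis using tf by simp
qed



lemma finite_index_tuples: "finite (index_tuples t is)"
proof -
  define M where "M = (\<Sum>i\<in>set is. t i)"
  have "set k \<subseteq> {..M} \<and> length k = length is" if k: "k \<in> index_tuples t is" for k
  proof
    show "set k \<subseteq> {..M}"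
    proof
      fix x assume x: "x \<in> set k"
      then obtain l where l: "l < length k" "k ! l = x" by (auto simp: in_set_conv_nth)
      then have "x \<le> t (is ! l)" "l < length is" using k by (auto simp: index_tuples_def)
      moreover have "t (is ! l) \<le> M" unfolding M_def using \<open>l < length is\<close>
        by (intro member_le_sum) auto
      ultimately show "x \<in> {..M}" by simp
    qed
    show "length k = length is" using k by (simp add: index_tuples_def)
  qed
  then have "index_tuples t is \<subseteq> {k. set k \<subseteq> {..M} \<and> length k = length is}" by blast
  moreover have "finite {k. set k \<subseteq> {..M} \<and> length k = length is}"
    by (rule finite_lists_length_eq) simp
  ultimately show ?thesis by (rule finite_subset)
qed

lemma finite_LiftX: "finite F \<Longrightarrow> finite (LiftX t F rep)"
proof -
  assume F: "finite F"
  have "LiftX t F rep = (\<Union>f\<in>F. (\<lambda>k. lift_x f (fst (rep f)) (snd (rep f)) k) ` index_tuples t (fst (rep f)))"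
    by (auto simp: LiftX_def)
  then show ?thesis using F finite_index_tuples by simp
qed

lemma finite_LiftY: "finite G \<Longrightarrow> finite (LiftY s G rep)"
proof -
  assume G: "finite G"
  have "LiftY s G rep = (\<Union>g\<in>G. (\<lambda>j. lift_y g (fst (rep g)) (snd (rep g)) j) ` index_tuples s (fst (rep g)))"
    by (auto simp: LiftY_def)
  then show ?thesis using G finite_index_tuples by simp
qed

lemma finite_QuadB: "finite (QuadB r s t)"
proof -
  define S where "S = (\<Sum>i\<le>r. s i)"
  define T where "T = (\<Sum>i\<le>r. t i)"
  have sS: "s i \<le> S" if "i \<le> r" for i unfolding S_def using that by (intro member_le_sum) auto
  have tT: "t i \<le> T" if "i \<le> r" for i unfolding T_def using that by (intro member_le_sum) auto
  let ?f = "\<lambda>(i, j1, j2, k1, k2). Var (i, j1, k2) * Var (i, j2, k1) - Var (i, j1, k1) * Var (i, j2, k2)"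
  have "QuadB r s t \<subseteq> ?f ` ({..r} \<times> {..S} \<times> {..S} \<times> {..T} \<times> {..T})"
  proof
    fix q assume "q \<in> QuadB r s t"
    then obtain i j1 j2 k1 k2 where q: "q = Var (i, j1, k2) * Var (i, j2, k1) - Var (i, j1, k1) * Var (i, j2, k2)"
      and rg: "1 \<le> i" "i \<le> r" "1 \<le> j1" "j1 < j2" "j2 \<le> s i" "1 \<le> k1" "k1 < k2" "k2 \<le> t i"
      unfolding QuadB_def by blast
    have "(i, j1, j2, k1, k2) \<in> {..r} \<times> {..S} \<times> {..S} \<times> {..T} \<times> {..T}"
      using rg sS[of i] tT[of i] by auto
    then show "q \<in> ?f ` ({..r} \<times> {..S} \<times> {..S} \<times> {..T} \<times> {..T})"
      using q by (intro image_eqI[of _ _ "(i, j1, j2, k1, k2)"]) auto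
  qed
  moreover have "finite (?f ` ({..r} \<times> {..S} \<times> {..S} \<times> {..T} \<times> {..T}))" by simp
  ultimately show ?thesis by (rule finite_subset)
qed

lemma main_step:
  fixes I J :: "(nat \<times> nat, 'k::field) mpoly set"
    and N :: "(nat \<times> nat \<times> nat, 'k) mpoly set"
  assumes sX: "side (xvars r s) I \<omega>1 deg1" and sY: "side (xvars r t) J \<omega>2 deg2"
    and zc: "zctx r s t N"
    and TxI: "init_ideal (polys_in (xvars r s)) \<omega>1 I \<subseteq> zctx.Tx r s t N"
    and TyJ: "init_ideal (polys_in (xvars r t)) \<omega>2 J \<subseteq> zctx.Ty r s t N"
    and h: "h \<in> toric_fiber_product r s t I J"
  shows "init (pullback_weight \<omega>1 \<omega>2) h \<in> N"
proof -
  interpret X: side "xvars r s" I \<omega>1 deg1 by (rule sX)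
  interpret Y: side "xvars r t" J \<omega>2 deg2 by (rule sY)
  interpret T: two "xvars r s" I \<omega>1 deg1 "xvars r t" J \<omega>2 deg2 by (simp add: two_def sX sY)
  interpret Z: zctx r s t N by (rule zc)
  let ?\<nu> = "pullback_weight \<omega>1 \<omega>2"
  let ?\<mu> = "case_sum \<omega>1 \<omega>2"
  have hR: "h \<in> polys_in (zvars r s t)" and hP: "phiB h \<in> ideal_gen T.Rxy T.gens"
    using h by (simp_all add: toric_fiber_product_def)
  have kz: "keys Z \<subseteq> zvars r s t" if "Z \<in> keys h" for Z using hR that by (simp add: polys_in_def)
  show ?thesis
  proof (cases "h = 0")
    case True
    then show ?thesis using ideal_zero[OF Z.K] by simp
  next
    case hn0: False
    define g where "g = init ?\<nu> h"
    define W where "W = maxw ?\<nu> h"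
    have kg: "keys g = {Z \<in> keys h. mweight ?\<nu> Z = W}" by (simp add: g_def W_def keys_init)
    have lg: "lookup g Z = lookup h Z" if "Z \<in> keys g" for Z
    proof -
      have "mweight ?\<nu> Z = W" using that kg by simp
      then show ?thesis by (simp add: g_def W_def lookup_init)
    qed
    have kgh: "keys g \<subseteq> keys h" using kg by blast
    define E where "E Z = (pm_image px Z, pm_image py Z)" for Z
    define sg where "sg P = sig r s t (fst P) (snd P)" for P
    have A: "g - (\<Sum>Z\<in>keys g. single 0 (lookup g Z) * mono (sg (E Z))) \<in> N"
    proof -
      have "g - (\<Sum>Z\<in>keys g. single 0 (lookup g Z) * mono (sg (E Z)))
          = (\<Sum>Z\<in>keys g. single 0 (lookup g Z) * mono Z) - (\<Sum>Z\<in>keys g. single 0 (lookup g Z) * mono (sg (E Z)))"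
        by (simp add: poly_sum_scal_mono)
      also have "\<dots> = (\<Sum>Z\<in>keys g. single 0 (lookup g Z) * (- (mono (sg (E Z)) - mono Z)))"
        by (simp add: sum_subtractf right_diff_distrib)
      also have "\<dots> \<in> N"
      proof (rule ideal_sum[OF Z.K], rule ideal_scal[OF Z.K], rule ideal_uminus[OF Z.K])
        fix Z assume "Z \<in> keys g"
        then have "keys Z \<subseteq> zvars r s t" using kgh kz by blast
        then show "mono (sg (E Z)) - mono Z \<in> N" unfolding sg_def E_def by (simp add: Z.sig_congr)
      qed
      finally show ?thesis .
    qed
    define c where "c P = (\<Sum>Z\<in>{Z \<in> keys g. E Z = P}. lookup g Z)" for P
    have regroup: "(\<Sum>Z\<in>keys g. single 0 (lookup g Z) * mono (sg (E Z))) = (\<Sum>P\<in>E ` keys g. single 0 (c P) * mono (sg P))"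
    proof -
      have "(\<Sum>Z\<in>keys g. single 0 (lookup g Z) * mono (sg (E Z)))
          = (\<Sum>P\<in>E ` keys g. \<Sum>Z\<in>{Z \<in> keys g. E Z = P}. single 0 (lookup g Z) * mono (sg (E Z)))"
        by (rule sum.image_gen) simp
      also have "\<dots> = (\<Sum>P\<in>E ` keys g. \<Sum>Z\<in>{Z \<in> keys g. E Z = P}. single 0 (lookup g Z) * mono (sg P))"
        by (intro sum.cong) auto
      also have "\<dots> = (\<Sum>P\<in>E ` keys g. single 0 (c P) * mono (sg P))"
        by (simp add: c_def sum_single0 flip: sum_distrib_right)
      finally show ?thesis .
    qed
    have B: "single 0 (c P) * mono (sg P) \<in> N" if P: "P \<in> E ` keys g" for P
    proof (cases "c P = 0")
      case True then show ?thesis using ideal_zero[OF Z.K] by simp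
    next
      case cn0: False
      from P obtain Z0 where Z0: "Z0 \<in> keys g" "E Z0 = P" by blast
      have Z0h: "Z0 \<in> keys h" and wZ0: "mweight ?\<nu> Z0 = W" using Z0 kg by auto
      define M where "M = emb Z0"
      have eq_set: "{Z \<in> keys h. emb Z = M} = {Z \<in> keys g. E Z = P}"
      proof
        show "{Z \<in> keys h. emb Z = M} \<subseteq> {Z \<in> keys g. E Z = P}"
        proof
          fix Z assume "Z \<in> {Z \<in> keys h. emb Z = M}"
          then have Zh: "Z \<in> keys h" and e: "emb Z = emb Z0" by (auto simp: M_def)
          then have EZ: "E Z = P" using Z0(2) by (simp add: emb_eq_iff E_def)
          have "mweight ?\<nu> Z = mweight ?\<nu> Z0" using e by (simp add: emb_eq_iff mweight_pullback)
          then have "Z \<in> keys g" using Zh wZ0 kg by simp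
          then show "Z \<in> {Z \<in> keys g. E Z = P}" using EZ by simp
        qed
        show "{Z \<in> keys g. E Z = P} \<subseteq> {Z \<in> keys h. emb Z = M}"
          using kgh Z0(2) by (auto simp: M_def E_def emb_eq_iff)
      qed
      have lM: "lookup (phiB h) M = c P"
        unfolding lookup_phiB eq_set c_def using lg by (intro sum.cong) auto
      then have Mk: "M \<in> keys (phiB h)" using cn0 by (simp add: in_keys_iff)
      have wM: "mweight ?\<mu> M = W" using wZ0 by (simp add: M_def mweight_emb)
      have "maxw ?\<mu> (phiB h) = W"
      proof -
        have "maxw ?\<mu> (phiB h) = mweight ?\<mu> M"
        proof (rule maxw_eqI[OF Mk])
          fix M' assume "M' \<in> keys (phiB h)"
          then obtain Z where "Z \<in> keys h" "M' = emb Z" using keys_phiB by blast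
          then show "mweight ?\<mu> M' \<le> mweight ?\<mu> M"
            using maxw_ge[of Z h ?\<nu>] wM by (simp add: mweight_emb W_def)
        qed
        then show ?thesis using wM by simp
      qed
      then have MkI: "M \<in> keys (init ?\<mu> (phiB h))" using Mk wM by (simp add: keys_init)
      have nstd: "\<not> X.std (xpart M) \<or> \<not> Y.std (ypart M)" by (rule T.tensor[OF hP MkI])
      have Pe: "P = (pm_image px Z0, pm_image py Z0)" using Z0(2) by (simp add: E_def)
      have xM: "xpart M = fst P" and yM: "ypart M = snd P" by (simp_all add: M_def Pe)
      have bal: "bal r s t (fst P) (snd P)" using Pe bal_Z[OF kz[OF Z0h]] by simp
      have "mono (sg P) \<in> N"
      proof (cases "X.std (fst P)")
        case False
        then have "mono (fst P) \<in> X.inI" by (simp add: X.std_def)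
        then have "mono (fst P) \<in> Z.Tx" using TxI by blast
        then show ?thesis unfolding sg_def by (rule Z.Tx_mono[OF _ bal])
      next
        case True
        then have "\<not> Y.std (snd P)" using nstd xM yM by simp
        then have "mono (snd P) \<in> Y.inI" by (simp add: Y.std_def)
        then have "mono (snd P) \<in> Z.Ty" using TyJ by blast
        then show ?thesis unfolding sg_def by (rule Z.Ty_mono[OF _ bal])
      qed
      then show ?thesis by (rule ideal_scal[OF Z.K])
    qed
    have S: "(\<Sum>Z\<in>keys g. single 0 (lookup g Z) * mono (sg (E Z))) \<in> N"
      unfolding regroup by (rule ideal_sum[OF Z.K B])
    have "g = (g - (\<Sum>Z\<in>keys g. single 0 (lookup g Z) * mono (sg (E Z))))
        + (\<Sum>Z\<in>keys g. single 0 (lookup g Z) * mono (sg (E Z)))" by simp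
    also have "\<dots> \<in> N" by (rule ideal_add[OF Z.K A S])
    finally show ?thesis unfolding g_def .
  qed
qed



theorem theorem2p8:
  fixes r :: nat and s t :: "nat \<Rightarrow> nat"
    and a :: "nat \<Rightarrow> 'd::finite \<Rightarrow> int" and \<omega> :: "'d \<Rightarrow> rat"
    and I J F G :: "(nat \<times> nat, 'k::field) mpoly set"
    and \<omega>1 \<omega>2 :: "nat \<times> nat \<Rightarrow> real"
    and repF repG :: "(nat \<times> nat, 'k) mpoly \<Rightarrow> nat list \<times> ((nat \<times> nat \<Rightarrow>\<^sub>0 nat) \<Rightarrow> nat list)"
  assumes r_pos: "1 \<le> r"
    and s_pos: "\<forall>i\<in>{1..r}. 0 < s i" and t_pos: "\<forall>i\<in>{1..r}. 0 < t i"
    and omega: "\<forall>i\<in>{1..r}. (\<Sum>c\<in>UNIV. \<omega> c * of_int (a i c)) = 1"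
    and I_ideal: "is_ideal (polys_in (xvars r s)) I" and I_hom: "homogeneous_ideal a I"
    and J_ideal: "is_ideal (polys_in (xvars r t)) J" and J_hom: "homogeneous_ideal a J"
    and indep: "lin_indep r a"
    and F_gb: "groebner (polys_in (xvars r s)) \<omega>1 I F" and F_hom: "\<forall>f\<in>F. homogeneous a f"
    and G_gb: "groebner (polys_in (xvars r t)) \<omega>2 J G" and G_hom: "\<forall>g\<in>G. homogeneous a g"
    and repF_ok: "\<forall>f\<in>F. valid_rep f (fst (repF f)) (snd (repF f))"
    and repG_ok: "\<forall>g\<in>G. valid_rep g (fst (repG g)) (snd (repG g))"
  shows "pseudo_groebner (polys_in (zvars r s t)) (pullback_weight \<omega>1 \<omega>2)
           (toric_fiber_product r s t I J)
           (LiftX t F repF \<union> LiftY s G repG \<union> QuadB r s t)"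
proof -
  let ?Rx = "polys_in (xvars r s) :: (nat \<times> nat, 'k) mpoly set"
  let ?Ry = "polys_in (xvars r t) :: (nat \<times> nat, 'k) mpoly set"
  let ?Rz = "polys_in (zvars r s t) :: (nat \<times> nat \<times> nat, 'k) mpoly set"
  let ?\<nu> = "pullback_weight \<omega>1 \<omega>2"
  let ?TFP = "toric_fiber_product r s t I J"
  have finF: "finite F" and FI: "F \<subseteq> I" and FinI: "ideal_gen ?Rx (init \<omega>1 ` F) = init_ideal ?Rx \<omega>1 I"
    and monI: "monomial_ideal ?Rx (init_ideal ?Rx \<omega>1 I)"
    using F_gb by (simp_all add: groebner_def pseudo_groebner_def)
  have finG: "finite G" and GJ: "G \<subseteq> J" and GinJ: "ideal_gen ?Ry (init \<omega>2 ` G) = init_ideal ?Ry \<omega>2 J"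
    and monJ: "monomial_ideal ?Ry (init_ideal ?Ry \<omega>2 J)"
    using G_gb by (simp_all add: groebner_def pseudo_groebner_def)
  have IR: "I \<subseteq> ?Rx" using I_ideal by (simp add: is_ideal_def)
  have JR: "J \<subseteq> ?Ry" using J_ideal by (simp add: is_ideal_def)
  have sX: "side (xvars r s) I \<omega>1 (mdeg a)"
  proof
    show "is_ideal ?Rx I" by (rule I_ideal)
    show "monomial_ideal ?Rx (init_ideal ?Rx \<omega>1 I)" by (rule monI)
    show "pfilter (\<lambda>m. mdeg a m = D) f \<in> I" if "f \<in> I" for f D
      using I_hom that by (simp add: homogeneous_ideal_def)
    show "finite {m. keys m \<subseteq> xvars r s \<and> mdeg a m = D}" for D
      by (rule fin_deg_xvars[OF omega])
  qed
  have sY: "side (xvars r t) J \<omega>2 (mdeg a)"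
  proof
    show "is_ideal ?Ry J" by (rule J_ideal)
    show "monomial_ideal ?Ry (init_ideal ?Ry \<omega>2 J)" by (rule monJ)
    show "pfilter (\<lambda>m. mdeg a m = D) f \<in> J" if "f \<in> J" for f D
      using J_hom that by (simp add: homogeneous_ideal_def)
    show "finite {m. keys m \<subseteq> xvars r t \<and> mdeg a m = D}" for D
      by (rule fin_deg_xvars[OF omega])
  qed
  define Gens where "Gens = LiftX t F repF \<union> LiftY s G repG \<union> QuadB r s t"
  have LX: "lift_x f (fst (repF f)) (snd (repF f)) k \<in> Gens" if "f \<in> F" "k \<in> index_tuples t (fst (repF f))" for f k
    using that unfolding Gens_def LiftX_def by blast
  have LY: "lift_y g (fst (repG g)) (snd (repG g)) j \<in> Gens" if "g \<in> G" "j \<in> index_tuples s (fst (repG g))" for g j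
    using that unfolding Gens_def LiftY_def by blast
  have GT: "Gens \<subseteq> ?TFP"
  proof
    fix q assume "q \<in> Gens"
    then consider (x) f k where "f \<in> F" "k \<in> index_tuples t (fst (repF f))" "q = lift_x f (fst (repF f)) (snd (repF f)) k"
      | (y) g j where "g \<in> G" "j \<in> index_tuples s (fst (repG g))" "q = lift_y g (fst (repG g)) (snd (repG g)) j"
      | (q) "q \<in> QuadB r s t"
      unfolding Gens_def LiftX_def LiftY_def by blast
    then show "q \<in> ?TFP"
    proof cases
      case x
      then show ?thesis using liftx_in_TFP[OF IR JR, of f "fst (repF f)" "snd (repF f)" k] FI repF_ok by blast
    next
      case y
      then show ?thesis using lifty_in_TFP[OF IR JR, of g "fst (repG g)" "snd (repG g)" j] GJ repG_ok by blast
    next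
      case q
      then show ?thesis using quad_in_TFP[OF IR JR, of q] by blast
    qed
  qed
  have TR: "?TFP \<subseteq> ?Rz" by (auto simp: toric_fiber_product_def)
  define N where "N = ideal_gen ?Rz (init ?\<nu> ` Gens)"
  have initsR: "init ?\<nu> ` Gens \<subseteq> ?Rz" using GT TR init_in_polys by blast
  have NI: "is_ideal ?Rz N" unfolding N_def by (rule ideal_gen_is_ideal[OF initsR])
  have initN: "init ?\<nu> q \<in> N" if "q \<in> Gens" for q
    unfolding N_def using that ideal_gen_base[of "init ?\<nu> ` Gens" ?Rz] by blast
  have NQ: "QuadB r s t \<subseteq> N"
  proof
    fix q :: "(nat \<times> nat \<times> nat, 'k) mpoly" assume q: "q \<in> QuadB r s t"
    then have "init ?\<nu> q = q" using quad_in_TFP[OF IR JR, of q] by blast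
    moreover have "q \<in> Gens" using q by (simp add: Gens_def)
    ultimately show "q \<in> N" using initN by metis
  qed
  have zc: "zctx r s t N" by (rule zctx.intro[OF NI NQ])
  have TxI: "init_ideal ?Rx \<omega>1 I \<subseteq> zctx.Tx r s t N"
    unfolding FinI[symmetric]
  proof (rule ideal_gen_least[OF zctx.Tx_ideal[OF zc]], rule subsetI)
    fix p assume "p \<in> init \<omega>1 ` F"
    then obtain f where f: "f \<in> F" "p = init \<omega>1 f" by blast
    have "init \<omega>1 f \<in> zctx.Tx r s t N"
    proof (rule zctx.init_F_in_Tx[OF zc])
      show "f \<in> ?Rx" using f FI IR by blast
      show "valid_rep f (fst (repF f)) (snd (repF f))" using repF_ok f by blast
      fix k assume "k \<in> index_tuples t (fst (repF f))"
      then show "init ?\<nu> (lift_x f (fst (repF f)) (snd (repF f)) k) \<in> N" using LX[OF f(1)] initN by blast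
    qed
    then show "p \<in> zctx.Tx r s t N" using f by simp
  qed
  have TyJ: "init_ideal ?Ry \<omega>2 J \<subseteq> zctx.Ty r s t N"
    unfolding GinJ[symmetric]
  proof (rule ideal_gen_least[OF zctx.Ty_ideal[OF zc]], rule subsetI)
    fix p assume "p \<in> init \<omega>2 ` G"
    then obtain g where g: "g \<in> G" "p = init \<omega>2 g" by blast
    have "init \<omega>2 g \<in> zctx.Ty r s t N"
    proof (rule zctx.init_G_in_Ty[OF zc])
      show "g \<in> ?Ry" using g GJ JR by blast
      show "valid_rep g (fst (repG g)) (snd (repG g))" using repG_ok g by blast
      fix j assume "j \<in> index_tuples s (fst (repG g))"
      then show "init ?\<nu> (lift_y g (fst (repG g)) (snd (repG g)) j) \<in> N" using LY[OF g(1)] initN by blast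
    qed
    then show "p \<in> zctx.Ty r s t N" using g by simp
  qed
  have finGens: "finite Gens"
    unfolding Gens_def using finite_LiftX[OF finF] finite_LiftY[OF finG] finite_QuadB by blast
  have eq: "ideal_gen ?Rz (init ?\<nu> ` Gens) = init_ideal ?Rz ?\<nu> ?TFP"
  proof
    show "ideal_gen ?Rz (init ?\<nu> ` Gens) \<subseteq> init_ideal ?Rz ?\<nu> ?TFP"
      unfolding init_ideal_def by (rule ideal_gen_mono) (use GT in blast)
    show "init_ideal ?Rz ?\<nu> ?TFP \<subseteq> ideal_gen ?Rz (init ?\<nu> ` Gens)"
      unfolding init_ideal_def N_def[symmetric]
    proof (rule ideal_gen_least[OF NI], rule subsetI)
      fix p assume "p \<in> init ?\<nu> ` ?TFP"
      then obtain h where h: "h \<in> ?TFP" "p = init ?\<nu> h" by blast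
      show "p \<in> N" unfolding h(2) by (rule main_step[OF sX sY zc TxI TyJ h(1)])
    qed
  qed
  show ?thesis
    unfolding pseudo_groebner_def Gens_def[symmetric] using finGens GT eq by blast
qed


end
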